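(* Consider an imprecise hidden Markov model as in the context with fixed output sequence $o_{1:n}$, under the positivity assumption. Let $k\in\{1,\dots,n-1\}$ and $z_{k-1}\in\mathcal{X}_{k-1}$. Then the set of state sequences produced by the optimal tree construction (described in the context) from the candidate set $\mathrm{Mog}(\mathcal{X}_{k:n}\mid z_{k-1},o_{k:n})$ is exactly $\mathrm{opt}(\mathcal{X}_{k:n}\mid z_{k-1},o_{k:n})$.
   Context: Setting: $n\ge1$; $\mathcal{X}_0=\{x_0\}$ a singleton; finite non-empty $\mathcal{X}_1,\dots,\mathcal{X}_n$, $\mathcal{O}_1,\dots,\mathcal{O}_n$; $\mathcal{X}_{k:\ell}=\times_{r=k}^\ell\mathcal{X}_r$, similarly $\mathcal{O}_{k:\ell}$; $\oplus$ denotes concatenation of sequences. Coherent lower previsions $\underline{P}$ satisfy $\underline{P}(f)\ge\min f$, $\underline{P}(\lambda f)=\lambda\underline{P}(f)$ ($\lambda\ge0$), $\underline{P}(f+g)\ge\underline{P}(f)+\underline{P}(g)$; $\overline{P}(f)=-\underline{P}(-f)$; $\underline{P}(A)=\underline{P}(\mathbb{I}_A)$. Local models: coherent $\underline{Q}_k(\cdot\mid z_{k-1})$ on gambles on $\mathcal{X}_k$ and $\underline{S}_k(\cdot\mid z_k)$ on gambles on $\mathcal{O}_k$. Joint models: $\underline{E}_n(\cdot\mid z_n):=\underline{S}_n(\cdot\mid z_n)$; for $k<n$, $\underline{E}_k(\cdot\mid X_k)$ is the conditionally independent natural extension of $\underline{S}_k(\cdot\mid X_k)$ and $\underline{P}_{k+1}(\cdot\mid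 X_k)$ (pointwise smallest separately coherent conditional lower prevision on gambles on $\mathcal{X}_{k+1:n}\times\mathcal{O}_{k:n}$ jointly coherent with and extending both, such that given $X_k$, $O_k$ and $(X_{k+1:n},O_{k+1:n})$ are mutually epistemically irrelevant); $\underline{P}_k(f\mid z_{k-1}):=\underline{Q}_k\big(\sum_{z_k}\mathbb{I}_{\{z_k\}}\underline{E}_k(f(z_k,\cdot)\mid z_k)\mid z_{k-1}\big)$. Positivity assumption: $\overline{Q}_k(\{z_k\}\mid z_{k-1})>0$, $\overline{S}_k(\{o_k\}\mid z_k)>0$ for all arguments. $\mathrm{opt}(\mathcal{X}_{k:n}\mid z_{k-1},o_{k:n})$ is the set of $\hat{x}_{k:n}$ with $\underline{P}_k(\mathbb{I}_{o_{k:n}}[\mathbb{I}_{x_{k:n}}-\mathbb{I}_{\hat{x}_{k:n}}]\mid z_{k-1})\le0$ for all $x_{k:n}\in\mathcal{X}_{k:n}$. Auxiliary quantities (for the fixed $o_{1:n}$): for $z_{k:n}\in\mathcal{X}_{k:n}$, $\alpha_k(z_{k:n}):=\overline{S}_k(\{o_k\}\mid z_k)\prod_{i=k+1}^n\overline{S}_i(\{o_i\}\mid z_i)\overline{Q}_i(\{z_i\}\mid z_{i-1})$ and $\beta_k(z_{k:n})$ the same with lower instead of upper previsions; $\alpha^{\max}_k(x_k):=\max\{\alpha_k(z_{k:n}):z_k=x_k\}$, $\beta^{\max}_k(x_k):=\max\{\beta_k(z_{k:n}):z_k=x_k\}$; threshold $\tau_k(x_k,\hat{x}_k\mid z_{k-1}):=\min\{a\ge0:\underline{Q}_k(\mathbb{I}_{\{x_k\}}-a\mathbb{I}_{\{\hat{x}_k\}}\mid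 z_{k-1})\le0\}$; $\alpha^{\mathrm{opt}}_k(\hat{x}_k\mid z_{k-1}):=\max_{x_k\neq\hat{x}_k}\beta^{\max}_k(x_k)\tau_k(x_k,\hat{x}_k\mid z_{k-1})$, and recursively for $s\in\{k+1,\dots,n\}$, $\alpha^{\mathrm{opt}}_k(z_{k:s}\mid z_{k-1}):=\alpha^{\mathrm{opt}}_k(z_{k:s-1}\mid z_{k-1})/\big(\overline{S}_{s-1}(\{o_{s-1}\}\mid z_{s-1})\overline{Q}_s(\{z_s\}\mid z_{s-1})\big)$, with $\alpha^{\mathrm{opt}}_k(z_{k:k}\mid z_{k-1}):=\alpha^{\mathrm{opt}}_k(z_k\mid z_{k-1})$. Let $\mathrm{Pos}_k(z_{k-1}):=\{z_k\in\mathcal{X}_k:\underline{Q}_k(\{z_k\}\mid z_{k-1})>0\text{ and }\underline{S}_k(\{o_k\}\mid z_k)>0\}$, and for $k<n$ define the candidate set $\mathrm{Mog}(\mathcal{X}_{k:n}\mid z_{k-1},o_{k:n}):=\bigcup_{z_k\in\mathrm{Pos}_k(z_{k-1})}z_k\oplus\mathrm{opt}(\mathcal{X}_{k+1:n}\mid z_k,o_{k+1:n})\ \cup\ \bigcup_{z_k\notin\mathrm{Pos}_k(z_{k-1})}z_k\oplus\mathcal{X}_{k+1:n}$. Optimal tree construction (for fixed $k<n$, $z_{k-1}$): first keep the states $\hat{x}_k\in\mathcal{X}_k$ with $\alpha^{\max}_k(\hat{x}_k)\ge\alpha^{\mathrm{opt}}_k(\hat{x}_k\mid z_{k-1})$.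 Then for $s=k+1,\dots,n$ in turn, for every kept prefix $\hat{x}_{k:s-1}$, keep the extensions $\hat{x}_{k:s-1}\oplus x_s$ ($x_s\in\mathcal{X}_s$) such that some element of $\mathrm{Mog}(\mathcal{X}_{k:n}\mid z_{k-1},o_{k:n})$ begins with $\hat{x}_{k:s-1}\oplus x_s$ and $\alpha^{\max}_s(x_s)\ge\alpha^{\mathrm{opt}}_k(\hat{x}_{k:s-1}\oplus x_s\mid z_{k-1})$. The output is the set of kept sequences of length $n-k+1$. *)

theory Defs
  imports Main "HOL-Library.Indicator_Function"
begin

text \<open>Gambles are real-valued functions; a lower prevision on gambles on a finite
carrier A is a functional on functions, whose values only matter on A.\<close>

definition coherent_lp :: "'a set \<Rightarrow> (('a \<Rightarrow> real) \<Rightarrow> real) \<Rightarrow> bool" where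
  "coherent_lp A P \<longleftrightarrow>
     (\<forall>f. P f \<ge> (INF x\<in>A. f x)) \<and>
     (\<forall>(l::real) f. l \<ge> 0 \<longrightarrow> P (\<lambda>x. l * f x) = l * P f) \<and>
     (\<forall>f g. P (\<lambda>x. f x + g x) \<ge> P f + P g)"

definition upper :: "(('a \<Rightarrow> real) \<Rightarrow> real) \<Rightarrow> ('a \<Rightarrow> real) \<Rightarrow> real" where
  "upper P f = - P (\<lambda>x. - f x)"

text \<open>Walley's (joint) coherence of finitely many separately specified conditional
lower previsions, all defined on all gambles on a finite space.  Each conditional
lower prevision is given by its partition (a set of cells) and the map
B, f |-> P(f|B).\<close>

definition gain :: "('w set \<Rightarrow> ('w \<Rightarrow> real) \<Rightarrow> real) \<Rightarrow> 'w set \<Rightarrow> ('w \<Rightarrow> real) \<Rightarrow> 'w \<Rightarrow> real" where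
  "gain P B f w = indicator B w * (f w - P B f)"

definition walley_coherent ::
  "('w set set \<times> ('w set \<Rightarrow> ('w \<Rightarrow> real) \<Rightarrow> real)) list \<Rightarrow> bool" where
  "walley_coherent L \<longleftrightarrow>
    (\<forall>(fs :: nat \<Rightarrow> 'w \<Rightarrow> real) j0 f0 B0. j0 < length L \<longrightarrow> B0 \<in> fst (L ! j0) \<longrightarrow>
       (\<exists>w \<in> B0 \<union> (\<Union>j<length L. \<Union>{B \<in> fst (L ! j). \<exists>v\<in>B. fs j v \<noteq> 0}).
          (\<Sum>j<length L. \<Sum>B\<in>fst (L ! j). gain (snd (L ! j)) B (fs j) w)
            - gain (snd (L ! j0)) B0 f0 w \<ge> 0))"

definition cells :: "'w set \<Rightarrow> ('w \<Rightarrow> 'k) \<Rightarrow> 'w set set" where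
  "cells \<Omega> key = (\<lambda>w. {v \<in> \<Omega>. key v = key w}) ` \<Omega>"

text \<open>An imprecise HMM: length n, state spaces X_k (X_0 = {x0}), output spaces O_k,
local transition models Q_k(.|z_{k-1}) and emission models S_k(.|z_k).\<close>

record ('x, 'o) ihmm =
  len :: nat
  st  :: "nat \<Rightarrow> 'x set"
  out :: "nat \<Rightarrow> 'o set"
  Qm  :: "nat \<Rightarrow> 'x \<Rightarrow> ('x \<Rightarrow> real) \<Rightarrow> real"
  Sm  :: "nat \<Rightarrow> 'x \<Rightarrow> ('o \<Rightarrow> real) \<Rightarrow> real"

text \<open>Sequences z_{k:n} as lists of length n-k+1 (index i holds the (k+i)-th entry).\<close>
definition xseq :: "('x,'o) ihmm \<Rightarrow> nat \<Rightarrow> 'x list set" where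
  "xseq M k = {xs. length xs = Suc (len M) - k \<and> (\<forall>i<length xs. xs ! i \<in> st M (k + i))}"

definition oseq :: "('x,'o) ihmm \<Rightarrow> nat \<Rightarrow> 'o list set" where
  "oseq M k = {os. length os = Suc (len M) - k \<and> (\<forall>i<length os. os ! i \<in> out M (k + i))}"

definition Omega :: "('x,'o) ihmm \<Rightarrow> nat \<Rightarrow> ('x list \<times> 'o list) set" where
  "Omega M k = xseq M k \<times> oseq M k"

text \<open>Candidates for E_k(.|X_k) (k < n), given P_{k+1}(.|X_k) as P1.  A conditional
lower prevision E(.|X_k) is represented by E z f for z in X_k and gambles f on
X_{k:n} x O_{k:n} (only the values on the cell X_k = z matter, by separate coherence).
Conditions: separate coherence; extension of S_k(.|X_k) and P_{k+1}(.|X_k);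
Walley-joint coherence with S_k(.|X_k, X_{k+1:n}, O_{k+1:n}) := S_k(.|X_k) and
P_{k+1}(.|X_k, O_k) := P_{k+1}(.|X_k) (mutual epistemic irrelevance given X_k).\<close>

definition ine_cand ::
  "('x,'o) ihmm \<Rightarrow> nat \<Rightarrow> ('x \<Rightarrow> ('x list \<times> 'o list \<Rightarrow> real) \<Rightarrow> real)
     \<Rightarrow> ('x \<Rightarrow> ('x list \<times> 'o list \<Rightarrow> real) \<Rightarrow> real) \<Rightarrow> bool" where
  "ine_cand M k P1 E \<longleftrightarrow>
     (\<forall>z\<in>st M k. coherent_lp {w \<in> Omega M k. hd (fst w) = z} (E z)) \<and>
     (\<forall>z\<in>st M k. \<forall>h. E z (\<lambda>w. h (hd (snd w))) = Sm M k z h) \<and>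
     (\<forall>z\<in>st M k. \<forall>h. E z (\<lambda>w. h (tl (fst w), tl (snd w))) = P1 z h) \<and>
     walley_coherent
       [ (cells (Omega M k) (\<lambda>w. hd (fst w)),
           \<lambda>B f. E (hd (fst (SOME w. w \<in> B))) f),
         (cells (Omega M k) (\<lambda>w. (hd (fst w), tl (fst w), tl (snd w))),
           \<lambda>B f. (let w = SOME w. w \<in> B in
                   Sm M k (hd (fst w)) (\<lambda>u. f (fst w, u # tl (snd w))))),
         (cells (Omega M k) (\<lambda>w. (hd (fst w), hd (snd w))),
           \<lambda>B f. (let w = SOME w. w \<in> B in
                   P1 (hd (fst w)) (\<lambda>v. f (hd (fst w) # fst v, hd (snd w) # snd v)))) ]"

text \<open>E_k(.|X_k): E_n = S_n; for k < n the conditionally independent natural extension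
(pointwise smallest candidate) of S_k(.|X_k) and P_{k+1}(.|X_k), where
P_{k+1}(f|z_k) = Q_{k+1}(E_{k+1}(f|.)|z_k).\<close>

function Efun :: "('x,'o) ihmm \<Rightarrow> nat \<Rightarrow> 'x \<Rightarrow> ('x list \<times> 'o list \<Rightarrow> real) \<Rightarrow> real" where
  "Efun M k = (if len M \<le> k then (\<lambda>z f. Sm M (len M) z (\<lambda>u. f ([z], [u])))
     else (\<lambda>z f. Inf {E z f | E. ine_cand M k
              (\<lambda>z' g. Qm M (Suc k) z' (\<lambda>y. Efun M (Suc k) y g)) E}))"
  by pat_completeness auto
termination by (relation "measure (\<lambda>(M, k). len M - k)") auto

definition Pk :: "('x,'o) ihmm \<Rightarrow> nat \<Rightarrow> 'x \<Rightarrow> ('x list \<times> 'o list \<Rightarrow> real) \<Rightarrow> real" where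
  "Pk M k z f = Qm M k z (\<lambda>y. Efun M k y f)"

text \<open>ob k is the fixed observed output o_k; ovec ob k n is o_{k:n}.\<close>
definition ovec :: "('x,'o) ihmm \<Rightarrow> (nat \<Rightarrow> 'o) \<Rightarrow> nat \<Rightarrow> 'o list" where
  "ovec M ob k = map ob [k..<Suc (len M)]"

definition opt :: "('x,'o) ihmm \<Rightarrow> (nat \<Rightarrow> 'o) \<Rightarrow> nat \<Rightarrow> 'x \<Rightarrow> 'x list set" where
  "opt M ob k z = {xh \<in> xseq M k. \<forall>x \<in> xseq M k.
      Pk M k z (\<lambda>w. indicator {ovec M ob k} (snd w) *
                      (indicator {x} (fst w) - indicator {xh} (fst w))) \<le> 0}"

text \<open>alpha_k(z_{k:n}) and beta_k(z_{k:n}); zs ! (i - k) is z_i.\<close>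
definition alpha :: "('x,'o) ihmm \<Rightarrow> (nat \<Rightarrow> 'o) \<Rightarrow> nat \<Rightarrow> 'x list \<Rightarrow> real" where
  "alpha M ob k zs = upper (Sm M k (zs ! 0)) (indicator {ob k}) *
     (\<Prod>i\<in>{Suc k..len M}. upper (Sm M i (zs ! (i - k))) (indicator {ob i}) *
                          upper (Qm M i (zs ! (i - k - 1))) (indicator {zs ! (i - k)}))"

definition beta :: "('x,'o) ihmm \<Rightarrow> (nat \<Rightarrow> 'o) \<Rightarrow> nat \<Rightarrow> 'x list \<Rightarrow> real" where
  "beta M ob k zs = Sm M k (zs ! 0) (indicator {ob k}) *
     (\<Prod>i\<in>{Suc k..len M}. Sm M i (zs ! (i - k)) (indicator {ob i}) *
                          Qm M i (zs ! (i - k - 1)) (indicator {zs ! (i - k)}))"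

definition amax :: "('x,'o) ihmm \<Rightarrow> (nat \<Rightarrow> 'o) \<Rightarrow> nat \<Rightarrow> 'x \<Rightarrow> real" where
  "amax M ob k x = Max {alpha M ob k zs | zs. zs \<in> xseq M k \<and> hd zs = x}"

definition bmax :: "('x,'o) ihmm \<Rightarrow> (nat \<Rightarrow> 'o) \<Rightarrow> nat \<Rightarrow> 'x \<Rightarrow> real" where
  "bmax M ob k x = Max {beta M ob k zs | zs. zs \<in> xseq M k \<and> hd zs = x}"

text \<open>Threshold tau_k(x_k, xh_k | z_{k-1}) (the min of a closed set, written as Inf).\<close>
definition tau :: "('x,'o) ihmm \<Rightarrow> nat \<Rightarrow> 'x \<Rightarrow> 'x \<Rightarrow> 'x \<Rightarrow> real" where
  "tau M k z x xh = Inf {a. a \<ge> 0 \<and>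
      Qm M k z (\<lambda>y. indicator {x} y - a * indicator {xh} y) \<le> 0}"

text \<open>alpha^opt_k(xh_k|z_{k-1}); the max over the empty set (|X_k| = 1) is taken to be 0
(all candidates are nonnegative, so inserting 0 changes nothing otherwise).\<close>
definition aopt1 :: "('x,'o) ihmm \<Rightarrow> (nat \<Rightarrow> 'o) \<Rightarrow> nat \<Rightarrow> 'x \<Rightarrow> 'x \<Rightarrow> real" where
  "aopt1 M ob k z xh = Max (insert 0
      {bmax M ob k x * tau M k z x xh | x. x \<in> st M k \<and> x \<noteq> xh})"

text \<open>alpha^opt_k(z_{k:s}|z_{k-1}) for a list zs = z_{k:s} (s = k + length zs - 1),
the recursion unfolded: divide by the factors for s' = k+1, ..., s.\<close>
definition aopt :: "('x,'o) ihmm \<Rightarrow> (nat \<Rightarrow> 'o) \<Rightarrow> nat \<Rightarrow> 'x \<Rightarrow> 'x list \<Rightarrow> real" where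
  "aopt M ob k z zs = aopt1 M ob k z (hd zs) /
     (\<Prod>s\<in>{Suc k..<k + length zs}.
        upper (Sm M (s - 1) (zs ! (s - 1 - k))) (indicator {ob (s - 1)}) *
        upper (Qm M s (zs ! (s - 1 - k))) (indicator {zs ! (s - k)}))"

definition Pos :: "('x,'o) ihmm \<Rightarrow> (nat \<Rightarrow> 'o) \<Rightarrow> nat \<Rightarrow> 'x \<Rightarrow> 'x set" where
  "Pos M ob k z = {zk \<in> st M k. Qm M k z (indicator {zk}) > 0 \<and>
                               Sm M k zk (indicator {ob k}) > 0}"

definition Mog :: "('x,'o) ihmm \<Rightarrow> (nat \<Rightarrow> 'o) \<Rightarrow> nat \<Rightarrow> 'x \<Rightarrow> 'x list set" where
  "Mog M ob k z =
     {zk # r | zk r. zk \<in> Pos M ob k z \<and> r \<in> opt M ob (Suc k) zk} \<union>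
     {zk # r | zk r. zk \<in> st M k - Pos M ob k z \<and> r \<in> xseq M (Suc k)}"

text \<open>The optimal tree construction: kept M ob k z j is the set of kept prefixes
xh_{k:k+j}.\<close>
primrec kept :: "('x,'o) ihmm \<Rightarrow> (nat \<Rightarrow> 'o) \<Rightarrow> nat \<Rightarrow> 'x \<Rightarrow> nat \<Rightarrow> 'x list set" where
  "kept M ob k z 0 = {[xh] | xh. xh \<in> st M k \<and> amax M ob k xh \<ge> aopt M ob k z [xh]}"
| "kept M ob k z (Suc j) =
     {p @ [x] | p x. p \<in> kept M ob k z j \<and> x \<in> st M (k + Suc j) \<and>
        (\<exists>m \<in> Mog M ob k z. take (length (p @ [x])) m = p @ [x]) \<and>
        amax M ob (k + Suc j) x \<ge> aopt M ob k z (p @ [x])}"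

definition tree_out :: "('x,'o) ihmm \<Rightarrow> (nat \<Rightarrow> 'o) \<Rightarrow> nat \<Rightarrow> 'x \<Rightarrow> 'x list set" where
  "tree_out M ob k z = kept M ob k z (len M - k)"

end

theory Submission
  imports Defs
begin

lemma cohD:
  assumes "coherent_lp A P"
  shows "P f \<ge> (INF x\<in>A. f x)" "l \<ge> 0 \<Longrightarrow> P (\<lambda>x. l * f x) = l * P f"
    "P (\<lambda>x. f x + g x) \<ge> P f + P g"
  using assms unfolding coherent_lp_def by auto

lemma coh_zero:
  assumes "coherent_lp A P" shows "P (\<lambda>x. 0) = 0"
  using cohD(2)[OF assms, of 0 "\<lambda>x. 0"] by simp

lemma coh_ge:
  assumes "coherent_lp A P" "A \<noteq> {}" "\<And>x. x \<in> A \<Longrightarrow> c \<le> f x"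
  shows "c \<le> P f"
proof -
  have "c \<le> (INF x\<in>A. f x)" using assms(2,3) by (intro cINF_greatest) auto
  also have "\<dots> \<le> P f" using cohD(1)[OF assms(1)] .
  finally show ?thesis .
qed

lemma coh_cong:
  assumes "coherent_lp A P" "A \<noteq> {}" "\<And>x. x \<in> A \<Longrightarrow> f x = g x"
  shows "P f = P g"
proof -
  have a: "P f \<le> P g" if h: "\<And>x. x \<in> A \<Longrightarrow> f x = g x" for f g
  proof -
    have "P (\<lambda>x. f x + (g x - f x)) \<ge> P f + P (\<lambda>x. g x - f x)" using cohD(3)[OF assms(1)] .
    moreover have "0 \<le> P (\<lambda>x. g x - f x)" using h by (intro coh_ge[OF assms(1,2)]) auto
    ultimately show ?thesis by simp
  qed
  show ?thesis using a[of f g] a[of g f] assms(3) by force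
qed

lemma coh_mono:
  assumes "coherent_lp A P" "A \<noteq> {}" "\<And>x. x \<in> A \<Longrightarrow> f x \<le> g x"
  shows "P f \<le> P g"
proof -
  have "P (\<lambda>x. f x + (g x - f x)) \<ge> P f + P (\<lambda>x. g x - f x)" using cohD(3)[OF assms(1)] .
  moreover have "0 \<le> P (\<lambda>x. g x - f x)" using assms(3) by (intro coh_ge[OF assms(1,2)]) auto
  ultimately show ?thesis by simp
qed

lemma coh_upper_ge:
  assumes "coherent_lp A P" shows "P f \<le> upper P f"
proof -
  have "P (\<lambda>x. f x + - f x) \<ge> P f + P (\<lambda>x. - f x)" using cohD(3)[OF assms] .
  then show ?thesis using coh_zero[OF assms] unfolding upper_def by simp
qed

lemma coh_const:
  assumes "coherent_lp A P" "A \<noteq> {}" shows "P (\<lambda>x. c) = c"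
proof -
  have "c \<le> P (\<lambda>x. c)" by (rule coh_ge[OF assms]) auto
  moreover have "- c \<le> P (\<lambda>x. - c)" by (rule coh_ge[OF assms]) auto
  moreover have "P (\<lambda>x. c) \<le> upper P (\<lambda>x. c)" by (rule coh_upper_ge[OF assms(1)])
  ultimately show ?thesis unfolding upper_def by simp
qed

lemma coh_neg_scale:
  assumes "coherent_lp A P" "c \<le> 0"
  shows "P (\<lambda>x. c * f x) = c * upper P f"
proof -
  have "P (\<lambda>x. c * f x) = P (\<lambda>x. (- c) * (- f x))" by simp
  also have "\<dots> = (- c) * P (\<lambda>x. - f x)" using cohD(2)[OF assms(1), of "- c" "\<lambda>x. - f x"] assms(2) by simp
  finally show ?thesis unfolding upper_def by simp
qed

lemma coh_pos_scale:
  assumes "coherent_lp A P" "0 \<le> c"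
  shows "P (\<lambda>x. c * f x) = c * P f"
  using cohD(2)[OF assms(1) assms(2)] .

lemma coh_le:
  assumes "coherent_lp A P" "A \<noteq> {}" "\<And>x. x \<in> A \<Longrightarrow> f x \<le> c"
  shows "P f \<le> c"
proof -
  have "P f \<le> P (\<lambda>x. c)" by (rule coh_mono[OF assms(1,2)]) (use assms(3) in auto)
  then show ?thesis using coh_const[OF assms(1,2)] by simp
qed

lemma coh_upper_le:
  assumes "coherent_lp A P" "A \<noteq> {}" "\<And>x. x \<in> A \<Longrightarrow> f x \<le> c"
  shows "upper P f \<le> c"
  unfolding upper_def using coh_ge[OF assms(1,2), of "-c" "\<lambda>x. - f x"] assms(3) by force

lemma coh_upper_nonneg:
  assumes "coherent_lp A P" "A \<noteq> {}" "\<And>x. x \<in> A \<Longrightarrow> 0 \<le> f x"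
  shows "0 \<le> upper P f"
proof -
  have "0 \<le> P f" by (rule coh_ge[OF assms])
  then show ?thesis using coh_upper_ge[OF assms(1), of f] by linarith
qed

lemma coh_nonneg:
  assumes "coherent_lp A P" "A \<noteq> {}" "\<And>x. x \<in> A \<Longrightarrow> 0 \<le> f x"
  shows "0 \<le> P f"
  using coh_ge[OF assms] .

definition lin :: "'a set \<Rightarrow> ('a \<Rightarrow> real) \<Rightarrow> ('a \<Rightarrow> real) \<Rightarrow> real" where
  "lin A p f = (\<Sum>a\<in>A. p a * f a)"

definition domin :: "'a set \<Rightarrow> (('a \<Rightarrow> real) \<Rightarrow> real) \<Rightarrow> ('a \<Rightarrow> real) \<Rightarrow> bool" where
  "domin A P p \<longleftrightarrow> (\<forall>f. P f \<le> lin A p f)"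

lemma sum_ind_delta:
  assumes "finite A"
  shows "(\<Sum>a\<in>A. r a * indicator {a} x) = (if x \<in> A then r x else (0::real))"
proof -
  have "(\<Sum>a\<in>A. r a * indicator {a} x) = (\<Sum>a\<in>A. if a = x then r a else 0)"
    by (rule sum.cong) (auto simp: indicator_def)
  also have "\<dots> = (if x \<in> A then r x else 0)" using assms by (simp add: sum.delta')
  finally show ?thesis .
qed

lemma upper_sub:
  assumes "coherent_lp A P"
  shows "upper P (\<lambda>x. f x + g x) \<le> upper P f + upper P g"
  using cohD(3)[OF assms, of "\<lambda>x. - f x" "\<lambda>x. - g x"] unfolding upper_def by simp

lemma upper_pos:
  assumes "coherent_lp A P" "0 \<le> l"
  shows "upper P (\<lambda>x. l * f x) = l * upper P f"
  using cohD(2)[OF assms(1), of l "\<lambda>x. - f x"] assms(2) unfolding upper_def by simp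

lemma upper_cong:
  assumes "coherent_lp A P" "A \<noteq> {}" "\<And>x. x \<in> A \<Longrightarrow> f x = g x"
  shows "upper P f = upper P g"
  unfolding upper_def using coh_cong[OF assms(1,2), of "\<lambda>x. - f x" "\<lambda>x. - g x"] assms(3) by simp

lemma hahn_banach_step:
  fixes P :: "('a \<Rightarrow> real) \<Rightarrow> real" and f0 :: "'a \<Rightarrow> real"
  assumes coh: "coherent_lp A P" and fin: "finite G"
  shows "\<exists>q. \<forall>t r. t * P f0 + (\<Sum>a\<in>G. r a * q a)
            \<le> upper P (\<lambda>x. t * f0 x + (\<Sum>a\<in>G. r a * indicator {a} x))"
  using fin
proof (induction G rule: finite_induct)
  case empty
  show ?case
  proof (intro exI allI)
    fix t r
    show "t * P f0 + (\<Sum>a\<in>{}. r a * (0::real)) \<le> upper P (\<lambda>x. t * f0 x + (\<Sum>a\<in>{}. r a * indicator {a} x))"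
    proof (cases "t \<ge> 0")
      case True
      then show ?thesis using upper_pos[OF coh True, of f0] coh_upper_ge[OF coh, of f0]
        by (simp add: mult_left_mono)
    next
      case False
      then have "upper P (\<lambda>x. t * f0 x) = t * P f0"
        using cohD(2)[OF coh, of "- t" f0] unfolding upper_def by simp
      then show ?thesis by simp
    qed
  qed
next
  case (insert a G)
  from insert.IH obtain q where q: "\<And>t r. t * P f0 + (\<Sum>a\<in>G. r a * q a)
            \<le> upper P (\<lambda>x. t * f0 x + (\<Sum>a\<in>G. r a * indicator {a} x))" by blast
  define ell where "ell t r = t * P f0 + (\<Sum>a\<in>G. r a * q a)" for t r
  define vec where "vec t r = (\<lambda>x. t * f0 x + (\<Sum>a\<in>G. r a * indicator {a} x))" for t r
  define S1 where "S1 = {ell t r - upper P (\<lambda>x. vec t r x - indicator {a} x) | t r. True}"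
  define S2 where "S2 = {upper P (\<lambda>x. vec t r x + indicator {a} x) - ell t r | t r. True}"
  have ell_add: "ell (t1 + t2) (\<lambda>b. r1 b + r2 b) = ell t1 r1 + ell t2 r2" for t1 t2 r1 r2
    unfolding ell_def by (simp add: algebra_simps sum.distrib)
  have vec_add: "vec (t1 + t2) (\<lambda>b. r1 b + r2 b) = (\<lambda>x. vec t1 r1 x + vec t2 r2 x)" for t1 t2 r1 r2
    unfolding vec_def by (auto simp: algebra_simps sum.distrib)
  have ell_sc: "ell (s * t) (\<lambda>b. s * r b) = s * ell t r" for s t r
    unfolding ell_def by (simp add: algebra_simps sum_distrib_left)
  have vec_sc: "vec (s * t) (\<lambda>b. s * r b) = (\<lambda>x. s * vec t r x)" for s t r
    unfolding vec_def by (auto simp: algebra_simps sum_distrib_left)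
  have key: "x \<le> y" if hx: "x \<in> S1" and hy: "y \<in> S2" for x y
  proof -
    obtain t1 r1 where x: "x = ell t1 r1 - upper P (\<lambda>x. vec t1 r1 x - indicator {a} x)"
      using hx unfolding S1_def by blast
    obtain t2 r2 where y: "y = upper P (\<lambda>x. vec t2 r2 x + indicator {a} x) - ell t2 r2"
      using hy unfolding S2_def by blast
    have "ell t1 r1 + ell t2 r2 \<le> upper P (vec (t1 + t2) (\<lambda>b. r1 b + r2 b))"
      using q[of "t1 + t2" "\<lambda>b. r1 b + r2 b"] ell_add unfolding ell_def vec_def by simp
    also have "\<dots> = upper P (\<lambda>x. (vec t1 r1 x - indicator {a} x) + (vec t2 r2 x + indicator {a} x))"
      unfolding vec_add by simp
    also have "\<dots> \<le> upper P (\<lambda>x. vec t1 r1 x - indicator {a} x) + upper P (\<lambda>x. vec t2 r2 x + indicator {a} x)"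
      by (rule upper_sub[OF coh])
    finally show ?thesis using x y by simp
  qed
  have S1ne: "S1 \<noteq> {}" and S2ne: "S2 \<noteq> {}" unfolding S1_def S2_def by auto
  have bdd: "bdd_above S1" using S2ne key by (meson bdd_above_def equals0I)
  define c where "c = Sup S1"
  have c1: "x \<le> c" if "x \<in> S1" for x using cSup_upper[OF that bdd] c_def by simp
  have c2: "c \<le> y" if "y \<in> S2" for y using cSup_least[OF S1ne] key that c_def by blast
  show ?case
  proof (intro exI allI)
    fix t :: real and r :: "'a \<Rightarrow> real"
    let ?s = "r a"
    have sumq: "(\<Sum>b\<in>insert a G. r b * (q(a := c)) b) = ?s * c + (\<Sum>b\<in>G. r b * q b)"
      using insert.hyps by (auto intro!: sum.cong)
    have sumi: "(\<lambda>x. t * f0 x + (\<Sum>b\<in>insert a G. r b * indicator {b} x)) = (\<lambda>x. vec t r x + ?s * indicator {a} x)"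
      using insert.hyps unfolding vec_def by (auto simp: algebra_simps)
    have "ell t r + ?s * c \<le> upper P (\<lambda>x. vec t r x + ?s * indicator {a} x)"
    proof (cases "?s = 0")
      case True
      then show ?thesis using q[of t r] unfolding ell_def vec_def by simp
    next
      case False
      show ?thesis
      proof (cases "?s > 0")
        case True
        let ?t = "t / ?s" and ?r = "\<lambda>b. r b / ?s"
        have h1: "c \<le> upper P (\<lambda>x. vec ?t ?r x + indicator {a} x) - ell ?t ?r"
          by (rule c2) (auto simp: S2_def)
        have h2: "?s * ell ?t ?r = ell t r" using ell_sc[of ?s ?t ?r] True by simp
        have h3: "?s * upper P (\<lambda>x. vec ?t ?r x + indicator {a} x)
              = upper P (\<lambda>x. ?s * (vec ?t ?r x + indicator {a} x))"
          using upper_pos[OF coh, of ?s] True by simp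
        have h4: "(\<lambda>x. ?s * (vec ?t ?r x + indicator {a} x)) = (\<lambda>x. vec t r x + ?s * indicator {a} x)"
          using vec_sc[of ?s ?t ?r] True by (auto simp: algebra_simps fun_eq_iff)
        have "?s * c \<le> ?s * (upper P (\<lambda>x. vec ?t ?r x + indicator {a} x) - ell ?t ?r)"
          using h1 True by (simp add: mult_left_mono)
        then show ?thesis using h2 h3 h4 by (simp add: algebra_simps)
      next
        case False2: False
        then have neg: "?s < 0" using False by simp
        let ?u = "- ?s"
        let ?t = "t / ?u" and ?r = "\<lambda>b. r b / ?u"
        have h1: "ell ?t ?r - upper P (\<lambda>x. vec ?t ?r x - indicator {a} x) \<le> c"
          by (rule c1) (auto simp: S1_def)
        have h2: "?u * ell ?t ?r = ell t r" using ell_sc[of ?u ?t ?r] neg by simp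
        have h3: "?u * upper P (\<lambda>x. vec ?t ?r x - indicator {a} x)
              = upper P (\<lambda>x. ?u * (vec ?t ?r x - indicator {a} x))"
          using upper_pos[OF coh, of ?u] neg by simp
        have h4: "(\<lambda>x. ?u * (vec ?t ?r x - indicator {a} x)) = (\<lambda>x. vec t r x + ?s * indicator {a} x)"
          using vec_sc[of ?u ?t ?r] neg by (auto simp: algebra_simps fun_eq_iff)
        have "?u * (ell ?t ?r - upper P (\<lambda>x. vec ?t ?r x - indicator {a} x)) \<le> ?u * c"
          using h1 neg by (simp add: mult_left_mono)
        then show ?thesis using h2 h3 h4 by (simp add: algebra_simps)
      qed
    qed
    then show "t * P f0 + (\<Sum>b\<in>insert a G. r b * (q(a := c)) b)
       \<le> upper P (\<lambda>x. t * f0 x + (\<Sum>b\<in>insert a G. r b * indicator {b} x))"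
      unfolding sumq sumi ell_def by (simp add: algebra_simps)
  qed
qed

lemma hahn_banach:
  assumes coh: "coherent_lp A P" and fin: "finite A" and ne: "A \<noteq> {}"
  shows "\<exists>p. domin A P p \<and> lin A p f0 = P f0"
proof -
  obtain q where q: "\<And>t r. t * P f0 + (\<Sum>a\<in>A. r a * q a)
            \<le> upper P (\<lambda>x. t * f0 x + (\<Sum>a\<in>A. r a * indicator {a} x))"
    using hahn_banach_step[OF coh fin, of f0] by blast
  have U: "upper P (\<lambda>x. t * f0 x + (\<Sum>a\<in>A. r a * indicator {a} x)) = upper P g"
    if "\<And>x. x \<in> A \<Longrightarrow> t * f0 x + r x = g x" for t r g
    by (rule upper_cong[OF coh ne]) (use that fin in \<open>simp add: sum_ind_delta\<close>)
  have dom: "domin A P q" unfolding domin_def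
  proof
    fix f
    have "0 * P f0 + (\<Sum>a\<in>A. (- f a) * q a) \<le> upper P (\<lambda>x. - f x)"
      using q[of 0 "\<lambda>a. - f a"] U[of 0 "\<lambda>a. - f a" "\<lambda>x. - f x"] by simp
    then show "P f \<le> lin A q f" unfolding upper_def lin_def by (simp add: sum_negf mult.commute)
  qed
  have "1 * P f0 + (\<Sum>a\<in>A. (- f0 a) * q a) \<le> upper P (\<lambda>x. 0)"
    using q[of 1 "\<lambda>a. - f0 a"] U[of 1 "\<lambda>a. - f0 a" "\<lambda>x. 0"] by simp
  moreover have "(-1) * P f0 + (\<Sum>a\<in>A. f0 a * q a) \<le> upper P (\<lambda>x. 0)"
    using q[of "-1" f0] U[of "-1" f0 "\<lambda>x. 0"] by simp
  moreover have "upper P (\<lambda>x. 0) = 0" using coh_zero[OF coh] unfolding upper_def by simp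
  ultimately have "lin A q f0 = P f0" unfolding lin_def by (simp add: sum_negf mult.commute)
  with dom show ?thesis by blast
qed

lemma domin_nonneg:
  assumes "domin A P p" "coherent_lp A P" "A \<noteq> {}" "finite A" "a \<in> A"
  shows "0 \<le> p a"
proof -
  have "P (indicator {a}) \<le> lin A p (indicator {a})" using assms(1) unfolding domin_def by blast
  also have "\<dots> = (\<Sum>aa\<in>A. if aa = a then p aa else 0)" unfolding lin_def
    by (rule sum.cong) (auto simp: indicator_def)
  also have "\<dots> = p a" using assms(4,5) by (simp add: sum.delta')
  finally show ?thesis using coh_nonneg[OF assms(2,3), of "indicator {a}"] by simp
qed

lemma domin_sum1:
  assumes "domin A P p" "coherent_lp A P" "A \<noteq> {}"
  shows "(\<Sum>a\<in>A. p a) = 1"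
proof -
  have "P (\<lambda>x. 1) \<le> lin A p (\<lambda>x. 1)" "P (\<lambda>x. -1) \<le> lin A p (\<lambda>x. -1)"
    using assms(1) unfolding domin_def by blast+
  then show ?thesis using coh_const[OF assms(2,3), of 1] coh_const[OF assms(2,3), of "-1"]
    unfolding lin_def by (simp add: sum_negf)
qed

lemma domin_upper:
  assumes "domin A P p"
  shows "lin A p f \<le> upper P f"
proof -
  have "P (\<lambda>x. - f x) \<le> lin A p (\<lambda>x. - f x)" using assms unfolding domin_def by blast
  then show ?thesis unfolding upper_def lin_def by (simp add: sum_negf)
qed

lemma walley_by_weights:
  fixes L :: "('w set set \<times> ('w set \<Rightarrow> ('w \<Rightarrow> real) \<Rightarrow> real)) list" and \<Omega> :: "'w set"
  assumes fin\<Omega>: "finite \<Omega>"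
    and cellsub: "\<And>j B. j < length L \<Longrightarrow> B \<in> fst (L ! j) \<Longrightarrow> B \<subseteq> \<Omega> \<and> B \<noteq> {}"
    and finc: "\<And>j. j < length L \<Longrightarrow> finite (fst (L ! j))"
    and zero: "\<And>j B f. j < length L \<Longrightarrow> B \<in> fst (L ! j) \<Longrightarrow> (\<forall>v\<in>B. f v = 0) \<Longrightarrow> snd (L ! j) B f = 0"
    and weights: "\<And>j0 B0 f0 \<delta>. j0 < length L \<Longrightarrow> B0 \<in> fst (L ! j0) \<Longrightarrow> \<delta> > 0 \<Longrightarrow>
       \<exists>m. (\<forall>j<length L. \<forall>B\<in>fst (L ! j). \<forall>f. 0 \<le> (\<Sum>w\<in>\<Omega>. m w * gain (snd (L ! j)) B f w)) \<and>
           (\<forall>w. 0 \<le> m w) \<and>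
           (\<Sum>w\<in>\<Omega>. m w * gain (snd (L ! j0)) B0 f0 w) \<le> \<delta> * (\<Sum>w\<in>B0. m w) \<and>
           0 < (\<Sum>w\<in>B0. m w)"
  shows "walley_coherent L"
  unfolding walley_coherent_def
proof (intro allI impI)
  fix fs :: "nat \<Rightarrow> 'w \<Rightarrow> real" and j0 f0 B0
  assume j0: "j0 < length L" and B0: "B0 \<in> fst (L ! j0)"
  define U where "U = (\<Union>j<length L. \<Union>{B \<in> fst (L ! j). \<exists>v\<in>B. fs j v \<noteq> 0})"
  define H where "H w = (\<Sum>j<length L. \<Sum>B\<in>fst (L ! j). gain (snd (L ! j)) B (fs j) w)
            - gain (snd (L ! j0)) B0 f0 w" for w
  show "\<exists>w\<in>B0 \<union> (\<Union>j<length L. \<Union>{B \<in> fst (L ! j). \<exists>v\<in>B. fs j v \<noteq> 0}).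
          (\<Sum>j<length L. \<Sum>B\<in>fst (L ! j). gain (snd (L ! j)) B (fs j) w)
            - gain (snd (L ! j0)) B0 f0 w \<ge> 0"
  proof (rule ccontr)
    assume "\<not> ?thesis"
    then have neg: "\<And>w. w \<in> B0 \<union> U \<Longrightarrow> H w < 0" unfolding U_def H_def by force
    have B0sub: "B0 \<subseteq> \<Omega>" and B0ne: "B0 \<noteq> {}" using cellsub[OF j0 B0] by auto
    have finB0: "finite B0" using B0sub fin\<Omega> finite_subset by blast
    define \<eta> where "\<eta> = Min ((\<lambda>w. - H w) ` B0)"
    have eta_pos: "\<eta> > 0" unfolding \<eta>_def using finB0 B0ne neg by (subst Min_gr_iff) auto
    have eta_le: "H w \<le> - \<eta>" if "w \<in> B0" for w
      unfolding \<eta>_def using finB0 that by (smt (verit) Min_le finite_imageI image_eqI)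
    have H0: "H w = 0" if "w \<notin> B0 \<union> U" for w
    proof -
      have "gain (snd (L ! j)) B (fs j) w = 0" if "j < length L" "B \<in> fst (L ! j)" for j B
      proof (cases "w \<in> B")
        case True
        then have "\<forall>v\<in>B. fs j v = 0" using \<open>w \<notin> B0 \<union> U\<close> that unfolding U_def by blast
        then show ?thesis using zero[OF that] True unfolding gain_def by simp
      qed (simp add: gain_def)
      moreover have "gain (snd (L ! j0)) B0 f0 w = 0" using that unfolding gain_def by simp
      ultimately show ?thesis unfolding H_def by simp
    qed
    obtain m where m1: "\<And>j B f. j<length L \<Longrightarrow> B\<in>fst (L ! j) \<Longrightarrow> 0 \<le> (\<Sum>w\<in>\<Omega>. m w * gain (snd (L ! j)) B f w)"
      and m0: "\<And>w. 0 \<le> m w"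
      and m2: "(\<Sum>w\<in>\<Omega>. m w * gain (snd (L ! j0)) B0 f0 w) \<le> (\<eta>/2) * (\<Sum>w\<in>B0. m w)"
      and m3: "0 < (\<Sum>w\<in>B0. m w)"
      using weights[OF j0 B0, of "\<eta>/2" f0] eta_pos by auto
    have "(\<Sum>w\<in>\<Omega>. m w * H w) = (\<Sum>j<length L. \<Sum>B\<in>fst (L ! j). \<Sum>w\<in>\<Omega>. m w * gain (snd (L ! j)) B (fs j) w)
          - (\<Sum>w\<in>\<Omega>. m w * gain (snd (L ! j0)) B0 f0 w)"
      unfolding H_def by (simp add: right_diff_distrib sum_subtractf sum_distrib_left sum.swap[of _ \<Omega>])
    also have "\<dots> \<ge> 0 - (\<eta>/2) * (\<Sum>w\<in>B0. m w)"
    proof (rule diff_mono[OF _ m2])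
      show "0 \<le> (\<Sum>j<length L. \<Sum>B\<in>fst (L ! j). \<Sum>w\<in>\<Omega>. m w * gain (snd (L ! j)) B (fs j) w)"
        apply (rule sum_nonneg) apply (rule sum_nonneg) using m1 by auto
    qed
    finally have lo: "(\<Sum>w\<in>\<Omega>. m w * H w) \<ge> - (\<eta>/2) * (\<Sum>w\<in>B0. m w)" by simp
    have "(\<Sum>w\<in>\<Omega>. m w * H w) = (\<Sum>w\<in>B0. m w * H w) + (\<Sum>w\<in>\<Omega> - B0. m w * H w)"
      using fin\<Omega> B0sub by (metis (no_types, lifting) sum.subset_diff add.commute)
    also have "(\<Sum>w\<in>\<Omega> - B0. m w * H w) \<le> 0"
    proof (rule sum_nonpos)
      fix w assume "w \<in> \<Omega> - B0"
      then have "H w \<le> 0" using neg[of w] H0[of w] by (cases "w \<in> U") auto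
      then show "m w * H w \<le> 0" using m0[of w] by (simp add: mult_nonneg_nonpos)
    qed
    also have "(\<Sum>w\<in>B0. m w * H w) \<le> (\<Sum>w\<in>B0. m w * (- \<eta>))"
      using eta_le m0 by (intro sum_mono mult_left_mono) auto
    finally have "(\<Sum>w\<in>\<Omega>. m w * H w) \<le> - \<eta> * (\<Sum>w\<in>B0. m w)"
      by (simp add: sum_negf sum_distrib_left[symmetric] mult.commute)
    with lo have "- (\<eta> / 2) * (\<Sum>w\<in>B0. m w) \<le> - \<eta> * (\<Sum>w\<in>B0. m w)" by linarith
    moreover have "0 < (\<eta> / 2) * (\<Sum>w\<in>B0. m w)" using m3 eta_pos by simp
    ultimately show False by (simp add: algebra_simps)
  qed
qed

lemma inf_scale:
  fixes g :: "'a \<Rightarrow> real"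
  assumes "K \<noteq> {}" "bdd_below (g ` K)" "0 \<le> l"
  shows "Inf ((\<lambda>x. l * g x) ` K) = l * Inf (g ` K)"
proof (cases "l = 0")
  case True
  then show ?thesis using assms(1) by simp
next
  case False
  then have l: "l > 0" using assms(3) by simp
  show ?thesis
  proof (rule antisym)
    have "l * Inf (g ` K) \<le> l * g x" if "x \<in> K" for x
      using cInf_lower[OF imageI[OF that] assms(2)] l by simp
    then show "l * Inf (g ` K) \<le> Inf ((\<lambda>x. l * g x) ` K)"
      using assms(1) by (intro cInf_greatest) auto
  next
    have bdd: "bdd_below ((\<lambda>x. l * g x) ` K)"
    proof -
      obtain c where "\<forall>x\<in>K. c \<le> g x" using assms(2) by (auto simp: bdd_below_def)
      then have "\<forall>x\<in>K. l * c \<le> l * g x" using l by simp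
      then show ?thesis by (auto simp: bdd_below_def)
    qed
    have "Inf ((\<lambda>x. l * g x) ` K) / l \<le> g x" if "x \<in> K" for x
      using cInf_lower[OF imageI[OF that] bdd] l by (simp add: divide_le_eq mult.commute)
    then have "Inf ((\<lambda>x. l * g x) ` K) / l \<le> Inf (g ` K)"
      using assms(1) by (intro cInf_greatest) auto
    then show "Inf ((\<lambda>x. l * g x) ` K) \<le> l * Inf (g ` K)" using l by (simp add: divide_le_eq mult.commute)
  qed
qed

lemma inf_coherent:
  assumes K: "K \<noteq> {}" and coh: "\<And>P. P \<in> K \<Longrightarrow> coherent_lp C P" and C: "C \<noteq> {}" "finite C"
  shows "coherent_lp C (\<lambda>f. Inf ((\<lambda>P. P f) ` K))"
proof -
  have lb: "(INF x\<in>C. f x) \<le> P f" if "P \<in> K" for P f using cohD(1)[OF coh[OF that]] .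
  have bdd: "bdd_below ((\<lambda>P. P f) ` K)" for f using lb by (auto simp: bdd_below_def)
  show ?thesis unfolding coherent_lp_def
  proof (intro conjI allI impI)
    fix f show "(INF x\<in>C. f x) \<le> Inf ((\<lambda>P. P f) ` K)" using K lb by (intro cInf_greatest) auto
  next
    fix l :: real and f assume l: "0 \<le> l"
    have "(\<lambda>P. P (\<lambda>x. l * f x)) ` K = (\<lambda>P. l * P f) ` K"
      using cohD(2)[OF coh l] by (auto intro!: image_cong)
    then show "Inf ((\<lambda>P. P (\<lambda>x. l * f x)) ` K) = l * Inf ((\<lambda>P. P f) ` K)"
      using inf_scale[OF K bdd l] by simp
  next
    fix f g
    have "Inf ((\<lambda>P. P f) ` K) + Inf ((\<lambda>P. P g) ` K) \<le> P (\<lambda>x. f x + g x)" if "P \<in> K" for P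
      using cInf_lower[OF imageI[OF that] bdd, of f] cInf_lower[OF imageI[OF that] bdd, of g]
        cohD(3)[OF coh[OF that], of f g] by linarith
    then show "Inf ((\<lambda>P. P f) ` K) + Inf ((\<lambda>P. P g) ` K) \<le> Inf ((\<lambda>P. P (\<lambda>x. f x + g x)) ` K)"
      using K by (intro cInf_greatest) auto
  qed
qed

locale ctx =
  fixes M :: "('x, 'o) ihmm" and ob :: "nat \<Rightarrow> 'o"
  assumes n_pos: "len M \<ge> 1"
    and finX: "\<forall>i\<in>{1..len M}. finite (st M i) \<and> st M i \<noteq> {}"
    and finO: "\<forall>i\<in>{1..len M}. finite (out M i) \<and> out M i \<noteq> {}"
    and obs: "\<forall>i\<in>{1..len M}. ob i \<in> out M i"
    and cohQ: "\<forall>i\<in>{1..len M}. \<forall>y\<in>st M (i - 1). coherent_lp (st M i) (Qm M i y)"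
    and cohS: "\<forall>i\<in>{1..len M}. \<forall>y\<in>st M i. coherent_lp (out M i) (Sm M i y)"
    and posQ: "\<forall>i\<in>{1..len M}. \<forall>y\<in>st M (i - 1). \<forall>x\<in>st M i.
                 upper (Qm M i y) (indicator {x}) > 0"
    and posS: "\<forall>i\<in>{1..len M}. \<forall>y\<in>st M i. \<forall>u\<in>out M i.
                 upper (Sm M i y) (indicator {u}) > 0"
begin

abbreviation "n \<equiv> len M"

lemma stF: "1 \<le> i \<Longrightarrow> i \<le> n \<Longrightarrow> finite (st M i)" using finX by auto
lemma stN: "1 \<le> i \<Longrightarrow> i \<le> n \<Longrightarrow> st M i \<noteq> {}" using finX by auto
lemma outF: "1 \<le> i \<Longrightarrow> i \<le> n \<Longrightarrow> finite (out M i)" using finO by auto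
lemma outN: "1 \<le> i \<Longrightarrow> i \<le> n \<Longrightarrow> out M i \<noteq> {}" using finO by auto
lemma obI: "1 \<le> i \<Longrightarrow> i \<le> n \<Longrightarrow> ob i \<in> out M i" using obs by auto
lemma cohQ': "1 \<le> i \<Longrightarrow> i \<le> n \<Longrightarrow> y \<in> st M (i - 1) \<Longrightarrow> coherent_lp (st M i) (Qm M i y)"
  using cohQ by auto
lemma cohS': "1 \<le> i \<Longrightarrow> i \<le> n \<Longrightarrow> y \<in> st M i \<Longrightarrow> coherent_lp (out M i) (Sm M i y)"
  using cohS by auto
lemma posQ': "1 \<le> i \<Longrightarrow> i \<le> n \<Longrightarrow> y \<in> st M (i - 1) \<Longrightarrow> x \<in> st M i \<Longrightarrow> upper (Qm M i y) (indicator {x}) > 0"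
  using posQ by auto
lemma posS': "1 \<le> i \<Longrightarrow> i \<le> n \<Longrightarrow> y \<in> st M i \<Longrightarrow> u \<in> out M i \<Longrightarrow> upper (Sm M i y) (indicator {u}) > 0"
  using posS by auto

lemma xseq_Cons:
  assumes "j < n"
  shows "x # xs \<in> xseq M j \<longleftrightarrow> x \<in> st M j \<and> xs \<in> xseq M (Suc j)"
proof -
  have l: "Suc (length xs) = Suc n - j \<longleftrightarrow> length xs = Suc n - Suc j" using assms by auto
  have i: "(\<forall>i<Suc (length xs). (x # xs) ! i \<in> st M (j + i)) \<longleftrightarrow>
        x \<in> st M j \<and> (\<forall>i<length xs. xs ! i \<in> st M (Suc j + i))"
    by (auto simp: less_Suc_eq_0_disj)
  show ?thesis unfolding xseq_def using l i by auto
qed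

lemma oseq_Cons:
  assumes "j < n"
  shows "u # os \<in> oseq M j \<longleftrightarrow> u \<in> out M j \<and> os \<in> oseq M (Suc j)"
proof -
  have l: "Suc (length os) = Suc n - j \<longleftrightarrow> length os = Suc n - Suc j" using assms by auto
  have i: "(\<forall>i<Suc (length os). (u # os) ! i \<in> out M (j + i)) \<longleftrightarrow>
        u \<in> out M j \<and> (\<forall>i<length os. os ! i \<in> out M (Suc j + i))"
    by (auto simp: less_Suc_eq_0_disj)
  show ?thesis unfolding oseq_def using l i by auto
qed

lemma xseq_len: "xs \<in> xseq M j \<Longrightarrow> length xs = Suc n - j" unfolding xseq_def by auto
lemma oseq_len: "os \<in> oseq M j \<Longrightarrow> length os = Suc n - j" unfolding oseq_def by auto

lemma xseq_ne: "xs \<in> xseq M j \<Longrightarrow> j \<le> n \<Longrightarrow> xs \<noteq> []" using xseq_len by fastforce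
lemma oseq_ne: "os \<in> oseq M j \<Longrightarrow> j \<le> n \<Longrightarrow> os \<noteq> []" using oseq_len by fastforce

lemma xseq_last: "xs \<in> xseq M n \<longleftrightarrow> (\<exists>x. xs = [x] \<and> x \<in> st M n)"
proof
  assume "xs \<in> xseq M n"
  then show "\<exists>x. xs = [x] \<and> x \<in> st M n" unfolding xseq_def
    by (cases xs) auto
qed (auto simp: xseq_def)

lemma oseq_last: "os \<in> oseq M n \<longleftrightarrow> (\<exists>u. os = [u] \<and> u \<in> out M n)"
proof
  assume "os \<in> oseq M n"
  then show "\<exists>u. os = [u] \<and> u \<in> out M n" unfolding oseq_def
    by (cases os) auto
qed (auto simp: oseq_def)

lemma xseq_finite: "1 \<le> j \<Longrightarrow> finite (xseq M j)"
proof -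
  assume j: "1 \<le> j"
  have "xseq M j \<subseteq> {xs. set xs \<subseteq> (\<Union>i\<in>{1..n}. st M i) \<and> length xs = Suc n - j}"
  proof
    fix xs assume xs: "xs \<in> xseq M j"
    have "set xs \<subseteq> (\<Union>i\<in>{1..n}. st M i)"
    proof
      fix x assume "x \<in> set xs"
      then obtain i where "i < length xs" "xs ! i = x" by (auto simp: in_set_conv_nth)
      then show "x \<in> (\<Union>i\<in>{1..n}. st M i)" using xs j unfolding xseq_def
        by (intro UN_I[of "j + i"]) auto
    qed
    then show "xs \<in> {xs. set xs \<subseteq> (\<Union>i\<in>{1..n}. st M i) \<and> length xs = Suc n - j}"
      using xseq_len[OF xs] by simp
  qed
  moreover have "finite {xs. set xs \<subseteq> (\<Union>i\<in>{1..n}. st M i) \<and> length xs = Suc n - j}"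
    by (rule finite_lists_length_eq) (use stF in auto)
  ultimately show ?thesis by (rule finite_subset)
qed

lemma oseq_finite: "1 \<le> j \<Longrightarrow> finite (oseq M j)"
proof -
  assume j: "1 \<le> j"
  have "oseq M j \<subseteq> {xs. set xs \<subseteq> (\<Union>i\<in>{1..n}. out M i) \<and> length xs = Suc n - j}"
  proof
    fix xs assume xs: "xs \<in> oseq M j"
    have "set xs \<subseteq> (\<Union>i\<in>{1..n}. out M i)"
    proof
      fix x assume "x \<in> set xs"
      then obtain i where "i < length xs" "xs ! i = x" by (auto simp: in_set_conv_nth)
      then show "x \<in> (\<Union>i\<in>{1..n}. out M i)" using xs j unfolding oseq_def
        by (intro UN_I[of "j + i"]) auto
    qed
    then show "xs \<in> {xs. set xs \<subseteq> (\<Union>i\<in>{1..n}. out M i) \<and> length xs = Suc n - j}"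
      using oseq_len[OF xs] by simp
  qed
  moreover have "finite {xs. set xs \<subseteq> (\<Union>i\<in>{1..n}. out M i) \<and> length xs = Suc n - j}"
    by (rule finite_lists_length_eq) (use outF in auto)
  ultimately show ?thesis by (rule finite_subset)
qed

lemma xseq_nonempty: "1 \<le> j \<Longrightarrow> j \<le> n \<Longrightarrow> x \<in> st M j \<Longrightarrow> \<exists>xs. x # xs \<in> xseq M j"
proof (induction "n - j" arbitrary: j x)
  case 0
  then have "j = n" by simp
  then show ?case using 0 xseq_last by auto
next
  case (Suc d)
  then have j: "j < n" by simp
  obtain y where y: "y \<in> st M (Suc j)" using stN[of "Suc j"] j by auto
  have d: "d = n - Suc j" using Suc.hyps(2) by simp
  obtain ys where "y # ys \<in> xseq M (Suc j)" using Suc.hyps(1)[OF d _ _ y] j by auto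
  then show ?case using xseq_Cons[OF j] Suc.prems by blast
qed

lemma oseq_nonempty: "1 \<le> j \<Longrightarrow> j \<le> n \<Longrightarrow> \<exists>os. os \<in> oseq M j"
proof (induction "n - j" arbitrary: j)
  case 0
  then have "j = n" by simp
  then show ?case using 0 oseq_last outN[of n] by auto
next
  case (Suc d)
  then have j: "j < n" by simp
  obtain u where u: "u \<in> out M j" using outN[of j] j Suc.prems by auto
  have d: "d = n - Suc j" using Suc.hyps(2) by simp
  obtain os where "os \<in> oseq M (Suc j)" using Suc.hyps(1)[OF d] j by auto
  then show ?case using oseq_Cons[OF j] u by blast
qed

lemma Omega_finite: "1 \<le> j \<Longrightarrow> finite (Omega M j)"
  unfolding Omega_def using xseq_finite oseq_finite by auto

lemma Omega_mem_step:
  assumes "j < n"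
  shows "w \<in> Omega M j \<longleftrightarrow> fst w \<noteq> [] \<and> snd w \<noteq> [] \<and> hd (fst w) \<in> st M j \<and> hd (snd w) \<in> out M j
          \<and> (tl (fst w), tl (snd w)) \<in> Omega M (Suc j)"
proof -
  obtain a b where w: "w = (a, b)" by force
  show ?thesis
  proof (cases a)
    case Nil
    then show ?thesis using w xseq_ne[of "[]" j] assms unfolding Omega_def by auto
  next
    case (Cons x xs)
    show ?thesis
    proof (cases b)
      case Nil
      then show ?thesis using w oseq_ne[of "[]" j] assms unfolding Omega_def by auto
    next
      case (Cons u os)
      then show ?thesis using w \<open>a = x # xs\<close> xseq_Cons[OF assms] oseq_Cons[OF assms]
        unfolding Omega_def by auto
    qed
  qed
qed

lemma Omega_Cons:
  assumes "j < n"
  shows "(x # a, u # b) \<in> Omega M j \<longleftrightarrow> x \<in> st M j \<and> u \<in> out M j \<and> (a, b) \<in> Omega M (Suc j)"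
  using Omega_mem_step[OF assms, of "(x # a, u # b)"] by simp

lemma Omega_last: "w \<in> Omega M n \<longleftrightarrow> (\<exists>x u. w = ([x], [u]) \<and> x \<in> st M n \<and> u \<in> out M n)"
  unfolding Omega_def using xseq_last oseq_last by auto

definition cellset :: "nat \<Rightarrow> 'x \<Rightarrow> ('x list \<times> 'o list) set" where
  "cellset j y = {w \<in> Omega M j. hd (fst w) = y}"

lemma cellset_ne: "1 \<le> j \<Longrightarrow> j \<le> n \<Longrightarrow> y \<in> st M j \<Longrightarrow> cellset j y \<noteq> {}"
proof -
  assume a: "1 \<le> j" "j \<le> n" "y \<in> st M j"
  obtain xs where "y # xs \<in> xseq M j" using xseq_nonempty a by blast
  moreover obtain os where "os \<in> oseq M j" using oseq_nonempty a by blast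
  ultimately show ?thesis unfolding cellset_def Omega_def by force
qed

lemma cellset_finite: "1 \<le> j \<Longrightarrow> finite (cellset j y)"
  unfolding cellset_def using Omega_finite by auto

lemma sum_cell:
  assumes j: "1 \<le> j" "j < n" and z: "z \<in> st M j"
  shows "(\<Sum>w\<in>Omega M j. if hd (fst w) = z then G w else 0)
       = (\<Sum>u\<in>out M j. \<Sum>v\<in>Omega M (Suc j). G (z # fst v, u # snd v))"
proof -
  let ?h = "\<lambda>(u, v). (z # fst v, u # snd v)"
  have eq: "{w \<in> Omega M j. hd (fst w) = z} = ?h ` (out M j \<times> Omega M (Suc j))"
  proof
    show "{w \<in> Omega M j. hd (fst w) = z} \<subseteq> ?h ` (out M j \<times> Omega M (Suc j))"
    proof
      fix w assume "w \<in> {w \<in> Omega M j. hd (fst w) = z}"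
      then have w: "w \<in> Omega M j" "hd (fst w) = z" by auto
      then have *: "fst w \<noteq> []" "snd w \<noteq> []" "hd (snd w) \<in> out M j" "(tl (fst w), tl (snd w)) \<in> Omega M (Suc j)"
        using Omega_mem_step[OF j(2)] by auto
      have "w = ?h (hd (snd w), (tl (fst w), tl (snd w)))" using * w(2) by (cases w) auto
      then show "w \<in> ?h ` (out M j \<times> Omega M (Suc j))" using * by blast
    qed
  next
    show "?h ` (out M j \<times> Omega M (Suc j)) \<subseteq> {w \<in> Omega M j. hd (fst w) = z}"
      using Omega_Cons[OF j(2)] z by auto
  qed
  have inj: "inj_on ?h (out M j \<times> Omega M (Suc j))" by (auto simp: inj_on_def)
  have "(\<Sum>w\<in>Omega M j. if hd (fst w) = z then G w else 0) = (\<Sum>w\<in>{w \<in> Omega M j. hd (fst w) = z}. G w)"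
    using Omega_finite[OF j(1)] by (simp add: sum.inter_filter)
  also have "\<dots> = (\<Sum>x\<in>out M j \<times> Omega M (Suc j). G (?h x))"
    unfolding eq by (rule sum.reindex[OF inj, unfolded comp_def])
  also have "\<dots> = (\<Sum>x\<in>out M j \<times> Omega M (Suc j). case x of (u, v) \<Rightarrow> G (z # fst v, u # snd v))"
    by (rule sum.cong) (auto split: prod.splits)
  also have "\<dots> = (\<Sum>u\<in>out M j. \<Sum>v\<in>Omega M (Suc j). G (z # fst v, u # snd v))"
    by (simp add: sum.cartesian_product)
  finally show ?thesis .
qed

end

declare Efun.simps[simp del]

context ctx
begin

lemma Efun_last: "Efun M n y f = Sm M n y (\<lambda>u. f ([y], [u]))"
  by (subst Efun.simps) simp

lemma Efun_step: "j < n \<Longrightarrow> Efun M j y f = Inf {E y f | E. ine_cand M j (Pk M (Suc j)) E}"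
proof -
  assume j: "j < n"
  have eq: "(\<lambda>z' g. Qm M (Suc j) z' (\<lambda>y. Efun M (Suc j) y g)) = Pk M (Suc j)"
    by (intro ext) (simp add: Pk_def)
  show ?thesis using j by (subst Efun.simps) (simp add: eq)
qed

definition good :: "nat \<Rightarrow> bool" where
  "good j \<longleftrightarrow> (\<forall>y\<in>st M j. coherent_lp (cellset j y) (Efun M j y)) \<and>
     (\<forall>y\<in>st M j. \<forall>v\<in>cellset j y. Efun M j y (\<lambda>w. - indicator {v} w) < 0)"

lemma INF_le_fin:
  fixes f :: "'a \<Rightarrow> real"
  shows "finite A \<Longrightarrow> x \<in> A \<Longrightarrow> (INF y\<in>A. f y) \<le> f x"
  by (rule cINF_lower) (auto intro: bdd_below_finite)

lemma good_last: "good n"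
  unfolding good_def
proof (intro conjI ballI)
  fix y assume y: "y \<in> st M n"
  have n1: "1 \<le> n" using n_pos .
  have S: "coherent_lp (out M n) (Sm M n y)" using cohS'[OF n1 le_refl y] .
  have cell: "cellset n y = {([y], [u]) | u. u \<in> out M n}"
    unfolding cellset_def using Omega_last y by auto
  show "coherent_lp (cellset n y) (Efun M n y)"
    unfolding coherent_lp_def Efun_last
  proof (intro conjI allI impI)
    fix f :: "'x list \<times> 'o list \<Rightarrow> real"
    show "(INF x\<in>cellset n y. f x) \<le> Sm M n y (\<lambda>u. f ([y], [u]))"
      using cellset_finite[OF n1, of y] by (intro coh_ge[OF S outN[OF n1 le_refl]]) (auto intro!: INF_le_fin simp: cell)
  next
    fix l :: real and f :: "'x list \<times> 'o list \<Rightarrow> real" assume "0 \<le> l"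
    then show "Sm M n y (\<lambda>u. l * f ([y], [u])) = l * Sm M n y (\<lambda>u. f ([y], [u]))"
      using cohD(2)[OF S] by simp
  next
    fix f g :: "'x list \<times> 'o list \<Rightarrow> real"
    show "Sm M n y (\<lambda>u. f ([y], [u])) + Sm M n y (\<lambda>u. g ([y], [u])) \<le> Sm M n y (\<lambda>u. f ([y], [u]) + g ([y], [u]))"
      using cohD(3)[OF S] by simp
  qed
  fix v assume "v \<in> cellset n y"
  then obtain u0 where v: "v = ([y], [u0])" "u0 \<in> out M n" unfolding cell by auto
  have "(\<lambda>u. - indicator {v} ([y], [u])) = (\<lambda>u. (-1::real) * indicator {u0} u)"
    using v by (auto simp: indicator_def fun_eq_iff)
  then have "Efun M n y (\<lambda>w. - indicator {v} w) = (-1) * upper (Sm M n y) (indicator {u0})"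
    unfolding Efun_last using coh_neg_scale[OF S, of "-1" "indicator {u0}"] by simp
  then show "Efun M n y (\<lambda>w. - indicator {v} w) < 0" using posS'[OF n1 le_refl y v(2)] by simp
qed

lemma Pk_coherent:
  assumes j: "1 \<le> j" "j \<le> n" and g: "good j" and y: "y \<in> st M (j - 1)"
  shows "coherent_lp (Omega M j) (Pk M j y)"
proof -
  have Q: "coherent_lp (st M j) (Qm M j y)" using cohQ'[OF j y] .
  have E: "coherent_lp (cellset j y') (Efun M j y')" if "y' \<in> st M j" for y'
    using g that unfolding good_def by blast
  have cn: "cellset j y' \<noteq> {}" if "y' \<in> st M j" for y' using cellset_ne j that by blast
  show ?thesis unfolding coherent_lp_def Pk_def
  proof (intro conjI allI impI)
    fix f :: "'x list \<times> 'o list \<Rightarrow> real"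
    show "(INF x\<in>Omega M j. f x) \<le> Qm M j y (\<lambda>y. Efun M j y f)"
    proof (rule coh_ge[OF Q stN[OF j]])
      fix y' assume y': "y' \<in> st M j"
      show "(INF x\<in>Omega M j. f x) \<le> Efun M j y' f"
        by (rule coh_ge[OF E[OF y'] cn[OF y']]) (auto intro!: INF_le_fin Omega_finite j simp: cellset_def)
    qed
  next
    fix l :: real and f :: "'x list \<times> 'o list \<Rightarrow> real" assume l: "0 \<le> l"
    have "Qm M j y (\<lambda>y. Efun M j y (\<lambda>x. l * f x)) = Qm M j y (\<lambda>y. l * Efun M j y f)"
      using cohD(2)[OF E l] by (intro coh_cong[OF Q stN[OF j]]) auto
    then show "Qm M j y (\<lambda>y. Efun M j y (\<lambda>x. l * f x)) = l * Qm M j y (\<lambda>y. Efun M j y f)"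
      using cohD(2)[OF Q l] by simp
  next
    fix f g :: "'x list \<times> 'o list \<Rightarrow> real"
    have "Qm M j y (\<lambda>y. Efun M j y f + Efun M j y g) \<le> Qm M j y (\<lambda>y. Efun M j y (\<lambda>x. f x + g x))"
      using cohD(3)[OF E] by (intro coh_mono[OF Q stN[OF j]]) auto
    then show "Qm M j y (\<lambda>y. Efun M j y f) + Qm M j y (\<lambda>y. Efun M j y g) \<le> Qm M j y (\<lambda>y. Efun M j y (\<lambda>x. f x + g x))"
      using cohD(3)[OF Q] by (meson order_trans)
  qed
qed

lemma Efun_cell_zero:
  assumes j: "1 \<le> j" "j \<le> n" and g: "good j" and y: "y \<in> st M j"
    and z: "\<And>w. w \<in> cellset j y \<Longrightarrow> f w = 0"
  shows "Efun M j y f = 0"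
proof -
  have E: "coherent_lp (cellset j y) (Efun M j y)" using g y unfolding good_def by blast
  have "Efun M j y f = Efun M j y (\<lambda>w. 0)" by (rule coh_cong[OF E cellset_ne[OF j y]]) (use z in auto)
  then show ?thesis using coh_zero[OF E] by simp
qed

lemma Pk_pos:
  assumes j: "1 \<le> j" "j \<le> n" and g: "good j" and y: "y \<in> st M (j - 1)" and v: "v \<in> Omega M j"
  shows "Pk M j y (\<lambda>w. - indicator {v} w) < 0"
proof -
  have Q: "coherent_lp (st M j) (Qm M j y)" using cohQ'[OF j y] .
  define x where "x = hd (fst v)"
  have vx: "v \<in> cellset j x" using v unfolding cellset_def x_def by simp
  have fv: "fst v \<in> xseq M j" using v unfolding Omega_def by auto
  then have "fst v \<noteq> []" using xseq_ne j by blast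
  then have x: "x \<in> st M j" using fv unfolding x_def xseq_def by (auto simp: hd_conv_nth)
  define e where "e = Efun M j x (\<lambda>w. - indicator {v} w)"
  have e: "e < 0" using g x vx unfolding good_def e_def by blast
  have "Efun M j y' (\<lambda>w. - indicator {v} w) = e * indicator {x} y'" if "y' \<in> st M j" for y'
  proof (cases "y' = x")
    case False
    have "Efun M j y' (\<lambda>w. - indicator {v} w) = 0"
      by (rule Efun_cell_zero[OF j g that]) (use vx False in \<open>auto simp: cellset_def indicator_def\<close>)
    then show ?thesis using False by simp
  qed (simp add: e_def)
  then have "Pk M j y (\<lambda>w. - indicator {v} w) = Qm M j y (\<lambda>y'. e * indicator {x} y')"
    unfolding Pk_def by (intro coh_cong[OF Q stN[OF j]]) auto
  also have "\<dots> = e * upper (Qm M j y) (indicator {x})" using coh_neg_scale[OF Q, of e] e by simp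
  finally show ?thesis using posQ'[OF j y x] e by (simp add: mult_neg_pos)
qed

end

context ctx
begin

definition spv :: "nat \<Rightarrow> 'x \<Rightarrow> ('o \<Rightarrow> real) \<Rightarrow> ('x list \<times> 'o list \<Rightarrow> real) \<Rightarrow> ('x list \<times> 'o list \<Rightarrow> real) \<Rightarrow> real" where
  "spv j y s p f = (\<Sum>u\<in>out M j. \<Sum>v\<in>Omega M (Suc j). s u * p v * f (y # fst v, u # snd v))"

definition DS :: "nat \<Rightarrow> 'x \<Rightarrow> ('o \<Rightarrow> real) set" where
  "DS j y = {s. domin (out M j) (Sm M j y) s}"

definition DP :: "nat \<Rightarrow> 'x \<Rightarrow> ('x list \<times> 'o list \<Rightarrow> real) set" where
  "DP j y = {p. domin (Omega M (Suc j)) (Pk M (Suc j) y) p}"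

definition SPK :: "nat \<Rightarrow> 'x \<Rightarrow> (('x list \<times> 'o list \<Rightarrow> real) \<Rightarrow> real) set" where
  "SPK j y = {spv j y s p | s p. s \<in> DS j y \<and> p \<in> DP j y}"

definition SP :: "nat \<Rightarrow> 'x \<Rightarrow> ('x list \<times> 'o list \<Rightarrow> real) \<Rightarrow> real" where
  "SP j y f = Inf ((\<lambda>\<phi>. \<phi> f) ` SPK j y)"

lemma lin_neg_ind: "finite A \<Longrightarrow> a \<in> A \<Longrightarrow> lin A p (\<lambda>x. - indicator {a} x) = - p a"
proof -
  assume a: "finite A" "a \<in> A"
  have "lin A p (\<lambda>x. - indicator {a} x) = (\<Sum>x\<in>A. if x = a then - p x else 0)"
    unfolding lin_def by (rule sum.cong) (auto simp: indicator_def)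
  then show ?thesis using a by (simp add: sum.delta')
qed

lemma sum_delta_pt:
  fixes X :: "'a \<Rightarrow> real"
  shows "finite A \<Longrightarrow> a \<in> A \<Longrightarrow> (\<Sum>v\<in>A. if v = a then X v else 0) = X a"
  by (simp add: sum.delta')

end

locale lvl = ctx M ob for M :: "('x, 'o) ihmm" and ob :: "nat \<Rightarrow> 'o" +
  fixes j assumes jj: "1 \<le> j" "j < len M" and gs: "good (Suc j)"
begin

lemma j1: "1 \<le> Suc j" "Suc j \<le> n" using jj by auto

lemma P1coh: "y \<in> st M j \<Longrightarrow> coherent_lp (Omega M (Suc j)) (Pk M (Suc j) y)"
  using Pk_coherent[OF j1 gs, of y] by simp

lemma P1pos: "y \<in> st M j \<Longrightarrow> v \<in> Omega M (Suc j) \<Longrightarrow> Pk M (Suc j) y (\<lambda>w. - indicator {v} w) < 0"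
  using Pk_pos[OF j1 gs, of y v] by simp

lemma OmF: "finite (Omega M (Suc j))" using Omega_finite j1 by blast
lemma OmN: "Omega M (Suc j) \<noteq> {}"
proof -
  obtain x where "x \<in> st M (Suc j)" using stN[OF j1] by blast
  then have "cellset (Suc j) x \<noteq> {}" using cellset_ne[OF j1] by blast
  then show ?thesis unfolding cellset_def by blast
qed
lemma oF: "finite (out M j)" using outF jj by simp
lemma oN: "out M j \<noteq> {}" using outN jj by simp
lemma Scoh: "y \<in> st M j \<Longrightarrow> coherent_lp (out M j) (Sm M j y)" using cohS' jj by simp

lemma DS_props:
  assumes "y \<in> st M j" "s \<in> DS j y"
  shows "\<And>u. u \<in> out M j \<Longrightarrow> 0 \<le> s u" "(\<Sum>u\<in>out M j. s u) = 1" "\<And>h. Sm M j y h \<le> lin (out M j) s h"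
  using domin_nonneg[of "out M j" "Sm M j y" s] domin_sum1[of "out M j" "Sm M j y" s]
    assms Scoh[OF assms(1)] oF oN unfolding DS_def domin_def by auto

lemma DP_props:
  assumes "y \<in> st M j" "p \<in> DP j y"
  shows "\<And>v. v \<in> Omega M (Suc j) \<Longrightarrow> 0 \<le> p v" "(\<Sum>v\<in>Omega M (Suc j). p v) = 1"
    "\<And>h. Pk M (Suc j) y h \<le> lin (Omega M (Suc j)) p h"
  using domin_nonneg[of "Omega M (Suc j)" "Pk M (Suc j) y" p] domin_sum1[of "Omega M (Suc j)" "Pk M (Suc j) y" p]
    assms P1coh[OF assms(1)] OmF OmN unfolding DP_def domin_def by auto

lemma DS_ex: "y \<in> st M j \<Longrightarrow> \<exists>s\<in>DS j y. lin (out M j) s h = Sm M j y h"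
  using hahn_banach[OF Scoh oF oN] unfolding DS_def by blast

lemma DP_ex: "y \<in> st M j \<Longrightarrow> \<exists>p\<in>DP j y. lin (Omega M (Suc j)) p h = Pk M (Suc j) y h"
  using hahn_banach[OF P1coh OmF OmN] unfolding DP_def by blast

lemma sp_const:
  assumes "y \<in> st M j" "s \<in> DS j y" "p \<in> DP j y"
  shows "(\<Sum>u\<in>out M j. \<Sum>v\<in>Omega M (Suc j). s u * p v * c) = c"
proof -
  have "(\<Sum>u\<in>out M j. \<Sum>v\<in>Omega M (Suc j). s u * p v * c) = (\<Sum>u\<in>out M j. s u * c * (\<Sum>v\<in>Omega M (Suc j). p v))"
    by (simp add: sum_distrib_left mult_ac)
  also have "\<dots> = c" using DS_props(2)[OF assms(1,2)] DP_props(2)[OF assms(1,3)]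
    by (simp add: sum_distrib_right[symmetric])
  finally show ?thesis .
qed

lemma spv_coh:
  assumes y: "y \<in> st M j" and s: "s \<in> DS j y" and p: "p \<in> DP j y"
  shows "coherent_lp (cellset j y) (spv j y s p)"
  unfolding coherent_lp_def
proof (intro conjI allI impI)
  fix f :: "'x list \<times> 'o list \<Rightarrow> real"
  let ?c = "INF x\<in>cellset j y. f x"
  have "(\<Sum>u\<in>out M j. \<Sum>v\<in>Omega M (Suc j). s u * p v * ?c) \<le> spv j y s p f"
    unfolding spv_def
  proof (intro sum_mono mult_left_mono)
    fix u v assume u: "u \<in> out M j" and v: "v \<in> Omega M (Suc j)"
    have "(y # fst v, u # snd v) \<in> cellset j y" using Omega_Cons[OF jj(2)] u v y by (simp add: cellset_def)
    then show "?c \<le> f (y # fst v, u # snd v)" by (rule INF_le_fin[OF cellset_finite[OF jj(1)]])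
    show "0 \<le> s u * p v" using DS_props(1)[OF y s u] DP_props(1)[OF y p v] by simp
  qed
  then show "?c \<le> spv j y s p f" using sp_const[OF y s p] by simp
next
  fix l :: real and f :: "'x list \<times> 'o list \<Rightarrow> real"
  show "spv j y s p (\<lambda>x. l * f x) = l * spv j y s p f" unfolding spv_def
    by (simp add: sum_distrib_left mult_ac)
next
  fix f g :: "'x list \<times> 'o list \<Rightarrow> real"
  show "spv j y s p f + spv j y s p g \<le> spv j y s p (\<lambda>x. f x + g x)" unfolding spv_def
    by (simp add: sum.distrib distrib_left)
qed

lemma SPK_ne: "y \<in> st M j \<Longrightarrow> SPK j y \<noteq> {}"
  using DS_ex[of y "\<lambda>_. 0"] DP_ex[of y "\<lambda>_. 0"] unfolding SPK_def by blast

lemma SP_coh: "y \<in> st M j \<Longrightarrow> coherent_lp (cellset j y) (SP j y)"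
proof -
  assume y: "y \<in> st M j"
  have "coherent_lp (cellset j y) (\<lambda>f. Inf ((\<lambda>\<phi>. \<phi> f) ` SPK j y))"
    by (rule inf_coherent[OF SPK_ne[OF y] _ cellset_ne[OF jj(1) less_imp_le[OF jj(2)] y] cellset_finite[OF jj(1)]])
      (auto simp: SPK_def intro: spv_coh y)
  then show ?thesis unfolding SP_def[abs_def] .
qed

lemma SP_bdd: "y \<in> st M j \<Longrightarrow> bdd_below ((\<lambda>\<phi>. \<phi> f) ` SPK j y)"
proof -
  assume y: "y \<in> st M j"
  have "(INF x\<in>cellset j y. f x) \<le> \<phi> f" if "\<phi> \<in> SPK j y" for \<phi>
    using that cohD(1)[OF spv_coh[OF y]] unfolding SPK_def by auto
  then show ?thesis by (auto simp: bdd_below_def)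
qed

lemma SP_le: "y \<in> st M j \<Longrightarrow> s \<in> DS j y \<Longrightarrow> p \<in> DP j y \<Longrightarrow> SP j y f \<le> spv j y s p f"
  unfolding SP_def by (rule cInf_lower[OF _ SP_bdd]) (auto simp: SPK_def)

lemma SP_ge: "y \<in> st M j \<Longrightarrow> (\<And>s p. s \<in> DS j y \<Longrightarrow> p \<in> DP j y \<Longrightarrow> c \<le> spv j y s p f) \<Longrightarrow> c \<le> SP j y f"
proof -
  assume y: "y \<in> st M j" and h: "\<And>s p. s \<in> DS j y \<Longrightarrow> p \<in> DP j y \<Longrightarrow> c \<le> spv j y s p f"
  have "(\<lambda>\<phi>. \<phi> f) ` SPK j y \<noteq> {}" using SPK_ne[OF y] by simp
  then show ?thesis unfolding SP_def by (rule cInf_greatest) (use h in \<open>auto simp: SPK_def\<close>)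
qed

lemma SP_approx:
  assumes "y \<in> st M j" "\<delta> > 0"
  shows "\<exists>s\<in>DS j y. \<exists>p\<in>DP j y. spv j y s p f < SP j y f + \<delta>"
proof -
  have "Inf ((\<lambda>\<phi>. \<phi> f) ` SPK j y) < SP j y f + \<delta>" using assms(2) unfolding SP_def by simp
  then obtain x where "x \<in> (\<lambda>\<phi>. \<phi> f) ` SPK j y" "x < SP j y f + \<delta>"
    using cInf_lessD[of "(\<lambda>\<phi>. \<phi> f) ` SPK j y"] SPK_ne[OF assms(1)] by blast
  then show ?thesis unfolding SPK_def by auto
qed

lemma spv_hd:
  assumes "y \<in> st M j" "s \<in> DS j y" "p \<in> DP j y"
  shows "spv j y s p (\<lambda>w. h (hd (snd w))) = lin (out M j) s h"
proof -
  have "spv j y s p (\<lambda>w. h (hd (snd w))) = (\<Sum>u\<in>out M j. s u * h u * (\<Sum>v\<in>Omega M (Suc j). p v))"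
    unfolding spv_def by (simp add: sum_distrib_left mult_ac)
  then show ?thesis using DP_props(2)[OF assms(1,3)] unfolding lin_def by simp
qed

lemma spv_tl:
  assumes "y \<in> st M j" "s \<in> DS j y" "p \<in> DP j y"
  shows "spv j y s p (\<lambda>w. h (tl (fst w), tl (snd w))) = lin (Omega M (Suc j)) p h"
proof -
  have "spv j y s p (\<lambda>w. h (tl (fst w), tl (snd w))) = (\<Sum>u\<in>out M j. s u * (\<Sum>v\<in>Omega M (Suc j). p v * h v))"
    unfolding spv_def by (simp add: sum_distrib_left mult_ac)
  also have "\<dots> = (\<Sum>u\<in>out M j. s u) * (\<Sum>v\<in>Omega M (Suc j). p v * h v)" by (simp add: sum_distrib_right)
  finally show ?thesis using DS_props(2)[OF assms(1,2)] unfolding lin_def by simp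
qed

lemma spv_prod:
  assumes "y \<in> st M j" "s \<in> DS j y" "p \<in> DP j y" "o' \<in> out M j"
  shows "spv j y s p (\<lambda>w. indicator {o'} (hd (snd w)) * g (tl (fst w), tl (snd w))) = s o' * lin (Omega M (Suc j)) p g"
proof -
  have "spv j y s p (\<lambda>w. indicator {o'} (hd (snd w)) * g (tl (fst w), tl (snd w)))
      = (\<Sum>u\<in>out M j. (if u = o' then s u * (\<Sum>v\<in>Omega M (Suc j). p v * g v) else 0))"
    unfolding spv_def by (rule sum.cong) (auto simp: sum_distrib_left mult_ac indicator_def)
  then show ?thesis using assms(4) oF unfolding lin_def by (simp add: sum.delta')
qed

lemma SP_hd: "y \<in> st M j \<Longrightarrow> SP j y (\<lambda>w. h (hd (snd w))) = Sm M j y h"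
proof (rule antisym)
  assume y: "y \<in> st M j"
  obtain s where s: "s \<in> DS j y" "lin (out M j) s h = Sm M j y h" using DS_ex[OF y] by blast
  obtain p where p: "p \<in> DP j y" using DP_ex[OF y] by blast
  show "SP j y (\<lambda>w. h (hd (snd w))) \<le> Sm M j y h"
    using SP_le[OF y s(1) p, of "\<lambda>w. h (hd (snd w))"] spv_hd[OF y s(1) p] s(2) by simp
  show "Sm M j y h \<le> SP j y (\<lambda>w. h (hd (snd w)))"
    by (rule SP_ge[OF y]) (simp add: spv_hd[OF y] DS_props(3)[OF y])
qed

lemma SP_tl: "y \<in> st M j \<Longrightarrow> SP j y (\<lambda>w. h (tl (fst w), tl (snd w))) = Pk M (Suc j) y h"
proof (rule antisym)
  assume y: "y \<in> st M j"
  obtain p where p: "p \<in> DP j y" "lin (Omega M (Suc j)) p h = Pk M (Suc j) y h" using DP_ex[OF y] by blast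
  obtain s where s: "s \<in> DS j y" using DS_ex[OF y] by blast
  show "SP j y (\<lambda>w. h (tl (fst w), tl (snd w))) \<le> Pk M (Suc j) y h"
    using SP_le[OF y s p(1), of "\<lambda>w. h (tl (fst w), tl (snd w))"] spv_tl[OF y s p(1)] p(2) by simp
  show "Pk M (Suc j) y h \<le> SP j y (\<lambda>w. h (tl (fst w), tl (snd w)))"
    by (rule SP_ge[OF y]) (simp add: spv_tl[OF y] DP_props(3)[OF y])
qed

end

lemma cells_memE:
  assumes "B \<in> cells \<Omega> key"
  obtains w0 where "w0 \<in> \<Omega>" "B = {v \<in> \<Omega>. key v = key w0}"
  using assms unfolding cells_def by blast

lemma some_mem: "w0 \<in> B \<Longrightarrow> (SOME w. w \<in> B) \<in> B" by (rule someI)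

context lvl
begin

definition wt :: "'x \<Rightarrow> ('o \<Rightarrow> real) \<Rightarrow> ('x list \<times> 'o list \<Rightarrow> real) \<Rightarrow> 'x list \<times> 'o list \<Rightarrow> real" where
  "wt z s p w = (if w \<in> Omega M j \<and> hd (fst w) = z then s (hd (snd w)) * p (tl (fst w), tl (snd w)) else 0)"

lemma sum_wt:
  assumes z: "z \<in> st M j"
  shows "(\<Sum>w\<in>Omega M j. wt z s p w * G w) = (\<Sum>u\<in>out M j. \<Sum>v\<in>Omega M (Suc j). s u * p v * G (z # fst v, u # snd v))"
proof -
  have "(\<Sum>w\<in>Omega M j. wt z s p w * G w) =
      (\<Sum>w\<in>Omega M j. if hd (fst w) = z then s (hd (snd w)) * p (tl (fst w), tl (snd w)) * G w else 0)"
    unfolding wt_def by (rule sum.cong) auto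
  also have "\<dots> = (\<Sum>u\<in>out M j. \<Sum>v\<in>Omega M (Suc j). s u * p v * G (z # fst v, u # snd v))"
    by (subst sum_cell[OF jj z]) simp
  finally show ?thesis .
qed

lemma wt_nonneg:
  assumes "z \<in> st M j" "s \<in> DS j z" "p \<in> DP j z"
  shows "0 \<le> wt z s p w"
proof (cases "w \<in> Omega M j \<and> hd (fst w) = z")
  case True
  then have "hd (snd w) \<in> out M j" "(tl (fst w), tl (snd w)) \<in> Omega M (Suc j)"
    using Omega_mem_step[OF jj(2)] by auto
  then show ?thesis using True DS_props(1)[OF assms(1,2)] DP_props(1)[OF assms(1,3)] unfolding wt_def by simp
qed (auto simp: wt_def)

lemma pt_in: "z \<in> st M j \<Longrightarrow> u \<in> out M j \<Longrightarrow> v \<in> Omega M (Suc j) \<Longrightarrow> (z # fst v, u # snd v) \<in> Omega M j"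
  using Omega_Cons[OF jj(2), of z "fst v" u "snd v"] by simp

lemma sum_wt_mass:
  assumes z: "z \<in> st M j" and B: "B \<subseteq> Omega M j"
  shows "(\<Sum>w\<in>B. wt z s p w) = (\<Sum>w\<in>Omega M j. wt z s p w * indicator B w)"
proof -
  have "(\<Sum>w\<in>Omega M j. wt z s p w * indicator B w) = (\<Sum>w\<in>Omega M j \<inter> B. wt z s p w)"
    using Omega_finite[OF jj(1)] by (simp add: sum.inter_restrict indicator_def if_distrib cong: if_cong)
  then show ?thesis using B by (simp add: Int_absorb1)
qed

lemma gain0_sum:
  assumes z: "z \<in> st M j" and s: "s \<in> DS j z" and p: "p \<in> DP j z" and w0: "w0 \<in> Omega M j"
    and B: "B = {v \<in> Omega M j. hd (fst v) = hd (fst w0)}"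
  shows "(\<Sum>w\<in>Omega M j. wt z s p w * gain (\<lambda>B f. SP j (hd (fst (SOME w. w \<in> B))) f) B f w)
     = (if z = hd (fst w0) then spv j z s p f - SP j z f else 0)"
    (is "?L = ?R")
proof -
  let ?x = "hd (fst w0)"
  have r: "hd (fst (SOME w. w \<in> B)) = ?x" using some_mem[of w0 B] w0 B by auto
  have "?L = (\<Sum>u\<in>out M j. \<Sum>v\<in>Omega M (Suc j). s u * p v * (if z = ?x then f (z # fst v, u # snd v) - SP j z f else 0))"
    unfolding sum_wt[OF z] gain_def r
    by (intro sum.cong refl) (auto simp: B indicator_def pt_in[OF z])
  also have "\<dots> = ?R"
  proof (cases "z = ?x")
    case True
    have "(\<Sum>u\<in>out M j. \<Sum>v\<in>Omega M (Suc j). s u * p v * (f (z # fst v, u # snd v) - SP j z f))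
        = spv j z s p f - (\<Sum>u\<in>out M j. \<Sum>v\<in>Omega M (Suc j). s u * p v * SP j z f)"
      unfolding spv_def by (simp add: right_diff_distrib sum_subtractf)
    then show ?thesis using True sp_const[OF z s p] by simp
  qed simp
  finally show ?thesis .
qed

lemma gain1_sum:
  assumes z: "z \<in> st M j" and s: "s \<in> DS j z" and p: "p \<in> DP j z" and w0: "w0 \<in> Omega M j"
    and B: "B = {v \<in> Omega M j. (hd (fst v), tl (fst v), tl (snd v)) = (hd (fst w0), tl (fst w0), tl (snd w0))}"
  shows "(\<Sum>w\<in>Omega M j. wt z s p w * gain (\<lambda>B f. let w = SOME w. w \<in> B in
                   Sm M j (hd (fst w)) (\<lambda>u. f (fst w, u # tl (snd w)))) B f w)
     = (if z = hd (fst w0) then p (tl (fst w0), tl (snd w0)) *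
          (lin (out M j) s (\<lambda>u. f (fst w0, u # tl (snd w0))) - Sm M j z (\<lambda>u. f (fst w0, u # tl (snd w0)))) else 0)"
    (is "?L = ?R")
proof -
  let ?x = "hd (fst w0)" and ?a = "tl (fst w0)" and ?b = "tl (snd w0)"
  define r where "r = (SOME w. w \<in> B)"
  have rB: "r \<in> B" using some_mem[of w0 B] w0 B unfolding r_def by auto
  have w0s: "fst w0 \<noteq> []" "(?a, ?b) \<in> Omega M (Suc j)" using w0 Omega_mem_step[OF jj(2)] by auto
  have rs: "fst r \<noteq> []" using rB B Omega_mem_step[OF jj(2)] by auto
  have k: "hd (fst r) = hd (fst w0)" "tl (fst r) = tl (fst w0)" using rB B by auto
  have fr: "fst r = fst w0" using k rs w0s(1) by (metis list.collapse)
  have sr: "tl (snd r) = ?b" using rB B by auto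
  define h where "h = (\<lambda>u. f (fst w0, u # ?b))"
  obtain x0 a0 where fw0: "fst w0 = x0 # a0" using w0s(1) by (cases "fst w0") auto
  have mem: "(z # fst v, u # snd v) \<in> B \<longleftrightarrow> z = ?x \<and> v = (?a, ?b)"
    if "u \<in> out M j" "v \<in> Omega M (Suc j)" for u v
    using pt_in[OF z that] unfolding B by (cases v) auto
  have "?L = (\<Sum>u\<in>out M j. \<Sum>v\<in>Omega M (Suc j). if v = (?a, ?b) then
         (if z = ?x then s u * p v * (f (z # fst v, u # snd v) - Sm M j ?x h) else 0) else 0)"
    unfolding sum_wt[OF z] gain_def Let_def r_def[symmetric] fr sr h_def
    by (intro sum.cong refl) (auto simp: mem indicator_def)
  also have "\<dots> = (\<Sum>u\<in>out M j. if z = ?x then s u * p (?a, ?b) * (h u - Sm M j ?x h) else 0)"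
    using OmF w0s(2) unfolding h_def fw0 by (intro sum.cong refl) (simp add: sum.delta')
  also have "\<dots> = ?R"
  proof (cases "z = ?x")
    case True
    have "(\<Sum>u\<in>out M j. s u * p (?a, ?b) * (h u - Sm M j ?x h)) =
       (\<Sum>u\<in>out M j. p (?a, ?b) * (s u * h u) - p (?a, ?b) * Sm M j ?x h * s u)"
      by (intro sum.cong refl) (simp add: algebra_simps)
    also have "\<dots> = p (?a, ?b) * (\<Sum>u\<in>out M j. s u * h u) - (p (?a, ?b) * Sm M j ?x h) * (\<Sum>u\<in>out M j. s u)"
      by (simp add: sum_subtractf sum_distrib_left)
    also have "\<dots> = p (?a, ?b) * (lin (out M j) s h - (\<Sum>u\<in>out M j. s u) * Sm M j ?x h)"
      unfolding lin_def by (simp add: algebra_simps)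
    also have "\<dots> = p (?a, ?b) * (lin (out M j) s h - Sm M j ?x h)" using DS_props(2)[OF z s] by simp
    finally have e: "(\<Sum>u\<in>out M j. s u * p (?a, ?b) * (h u - Sm M j ?x h)) = p (?a, ?b) * (lin (out M j) s h - Sm M j ?x h)" .
    have R: "?R = p (?a, ?b) * (lin (out M j) s h - Sm M j ?x h)" unfolding h_def using True by simp
    show ?thesis unfolding R using True e by simp
  qed simp
  finally show ?thesis .
qed

lemma gain2_sum:
  assumes z: "z \<in> st M j" and s: "s \<in> DS j z" and p: "p \<in> DP j z" and w0: "w0 \<in> Omega M j"
    and B: "B = {v \<in> Omega M j. (hd (fst v), hd (snd v)) = (hd (fst w0), hd (snd w0))}"
  shows "(\<Sum>w\<in>Omega M j. wt z s p w * gain (\<lambda>B f. let w = SOME w. w \<in> B in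
                   Pk M (Suc j) (hd (fst w)) (\<lambda>v. f (hd (fst w) # fst v, hd (snd w) # snd v))) B f w)
     = (if z = hd (fst w0) then s (hd (snd w0)) *
          (lin (Omega M (Suc j)) p (\<lambda>v. f (z # fst v, hd (snd w0) # snd v))
           - Pk M (Suc j) z (\<lambda>v. f (z # fst v, hd (snd w0) # snd v))) else 0)"
    (is "?L = ?R")
proof -
  let ?x = "hd (fst w0)" and ?o = "hd (snd w0)"
  define r where "r = (SOME w. w \<in> B)"
  have rB: "r \<in> B" using some_mem[of w0 B] w0 B unfolding r_def by auto
  have hr: "hd (fst r) = ?x" "hd (snd r) = ?o" using rB B by auto
  have o: "?o \<in> out M j" using w0 Omega_mem_step[OF jj(2)] by auto
  define g where "g = (\<lambda>v. f (?x # fst v, ?o # snd v))"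
  have "?L = (\<Sum>u\<in>out M j. if u = ?o then
         (if z = ?x then (\<Sum>v\<in>Omega M (Suc j). s u * p v * (f (z # fst v, u # snd v) - Pk M (Suc j) ?x g)) else 0) else 0)"
    unfolding sum_wt[OF z] gain_def Let_def r_def[symmetric] hr g_def
    by (intro sum.cong refl) (auto simp: B indicator_def pt_in[OF z])
  also have "\<dots> = (if z = ?x then (\<Sum>v\<in>Omega M (Suc j). s ?o * p v * (g v - Pk M (Suc j) ?x g)) else 0)"
    using oF o unfolding g_def by (simp add: sum.delta')
  also have "\<dots> = ?R"
  proof (cases "z = ?x")
    case True
    have "(\<Sum>v\<in>Omega M (Suc j). s ?o * p v * (g v - Pk M (Suc j) ?x g)) =
       (\<Sum>v\<in>Omega M (Suc j). s ?o * (p v * g v) - s ?o * Pk M (Suc j) ?x g * p v)"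
      by (intro sum.cong refl) (simp add: algebra_simps)
    also have "\<dots> = s ?o * (\<Sum>v\<in>Omega M (Suc j). p v * g v) - (s ?o * Pk M (Suc j) ?x g) * (\<Sum>v\<in>Omega M (Suc j). p v)"
      by (simp add: sum_subtractf sum_distrib_left)
    also have "\<dots> = s ?o * (lin (Omega M (Suc j)) p g - (\<Sum>v\<in>Omega M (Suc j). p v) * Pk M (Suc j) ?x g)"
      unfolding lin_def by (simp add: algebra_simps)
    also have "\<dots> = s ?o * (lin (Omega M (Suc j)) p g - Pk M (Suc j) ?x g)" using DP_props(2)[OF z p] by simp
    finally have e: "(\<Sum>v\<in>Omega M (Suc j). s ?o * p v * (g v - Pk M (Suc j) ?x g)) = s ?o * (lin (Omega M (Suc j)) p g - Pk M (Suc j) ?x g)" .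
    have R: "?R = s ?o * (lin (Omega M (Suc j)) p g - Pk M (Suc j) ?x g)" unfolding g_def using True by simp
    show ?thesis unfolding R using True e by simp
  qed simp
  finally show ?thesis .
qed

end

lemma cells_sub: "B \<in> cells \<Omega> key \<Longrightarrow> B \<subseteq> \<Omega> \<and> B \<noteq> {}"
  unfolding cells_def by auto

lemma cells_fin: "finite \<Omega> \<Longrightarrow> finite (cells \<Omega> key)"
  unfolding cells_def by simp

context lvl
begin

abbreviation "L1 \<equiv> (cells (Omega M j) (\<lambda>w. hd (fst w)), \<lambda>B f. SP j (hd (fst (SOME w. w \<in> B))) f)"
abbreviation "L2 \<equiv> (cells (Omega M j) (\<lambda>w. (hd (fst w), tl (fst w), tl (snd w))),
           \<lambda>B f. (let w = SOME w. w \<in> B in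
                   Sm M j (hd (fst w)) (\<lambda>u. f (fst w, u # tl (snd w)))))"
abbreviation "L3 \<equiv> (cells (Omega M j) (\<lambda>w. (hd (fst w), hd (snd w))),
           \<lambda>B f. (let w = SOME w. w \<in> B in
                   Pk M (Suc j) (hd (fst w)) (\<lambda>v. f (hd (fst w) # fst v, hd (snd w) # snd v))))"

lemma idx3: "i < length [a, b, c] \<Longrightarrow> i = 0 \<or> i = Suc 0 \<or> i = Suc (Suc 0)" by auto

lemma w0_st: "w0 \<in> Omega M j \<Longrightarrow> hd (fst w0) \<in> st M j"
  using Omega_mem_step[OF jj(2)] by auto

lemma w0_o: "w0 \<in> Omega M j \<Longrightarrow> hd (snd w0) \<in> out M j"
  using Omega_mem_step[OF jj(2)] by auto

lemma w0_tl: "w0 \<in> Omega M j \<Longrightarrow> (tl (fst w0), tl (snd w0)) \<in> Omega M (Suc j)"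
  using Omega_mem_step[OF jj(2)] by auto

lemma gains_nonneg:
  assumes z: "z \<in> st M j" and s: "s \<in> DS j z" and p: "p \<in> DP j z"
    and i: "i < length [L1, L2, L3]" and B: "B \<in> fst ([L1, L2, L3] ! i)"
  shows "0 \<le> (\<Sum>w\<in>Omega M j. wt z s p w * gain (snd ([L1, L2, L3] ! i)) B f w)"
proof -
  consider "i = 0" | "i = Suc 0" | "i = Suc (Suc 0)" using idx3[OF i] by blast
  then show ?thesis
  proof cases
    case 1
    then obtain w0 where w0: "w0 \<in> Omega M j" "B = {v \<in> Omega M j. hd (fst v) = hd (fst w0)}"
      using B by (auto elim: cells_memE)
    show ?thesis using 1 gain0_sum[OF z s p w0, of f] SP_le[OF z s p, of f] by (cases "z = hd (fst w0)") auto
  next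
    case 2
    then obtain w0 where w0: "w0 \<in> Omega M j" "B = {v \<in> Omega M j. (hd (fst v), tl (fst v), tl (snd v)) = (hd (fst w0), tl (fst w0), tl (snd w0))}"
      using B by (auto elim: cells_memE)
    have "0 \<le> p (tl (fst w0), tl (snd w0))" using DP_props(1)[OF z p w0_tl[OF w0(1)]] .
    moreover have "Sm M j z (\<lambda>u. f (fst w0, u # tl (snd w0))) \<le> lin (out M j) s (\<lambda>u. f (fst w0, u # tl (snd w0)))"
      using DS_props(3)[OF z s] .
    ultimately have "0 \<le> (if z = hd (fst w0) then p (tl (fst w0), tl (snd w0)) *
          (lin (out M j) s (\<lambda>u. f (fst w0, u # tl (snd w0))) - Sm M j z (\<lambda>u. f (fst w0, u # tl (snd w0)))) else 0)"
      by (cases "z = hd (fst w0)") (auto intro!: mult_nonneg_nonneg)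
    then show ?thesis using 2 gain1_sum[OF z s p w0, of f] by simp
  next
    case 3
    then obtain w0 where w0: "w0 \<in> Omega M j" "B = {v \<in> Omega M j. (hd (fst v), hd (snd v)) = (hd (fst w0), hd (snd w0))}"
      using B by (auto elim: cells_memE)
    have "0 \<le> s (hd (snd w0))" using DS_props(1)[OF z s w0_o[OF w0(1)]] .
    moreover have "Pk M (Suc j) z (\<lambda>v. f (z # fst v, hd (snd w0) # snd v)) \<le> lin (Omega M (Suc j)) p (\<lambda>v. f (z # fst v, hd (snd w0) # snd v))"
      using DP_props(3)[OF z p] .
    ultimately have "0 \<le> (if z = hd (fst w0) then s (hd (snd w0)) *
          (lin (Omega M (Suc j)) p (\<lambda>v. f (z # fst v, hd (snd w0) # snd v))
           - Pk M (Suc j) z (\<lambda>v. f (z # fst v, hd (snd w0) # snd v))) else 0)"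
      by (cases "z = hd (fst w0)") (auto intro!: mult_nonneg_nonneg)
    then show ?thesis using 3 gain2_sum[OF z s p w0, of f] by simp
  qed
qed

lemma mass0:
  assumes z: "z \<in> st M j" and s: "s \<in> DS j z" and p: "p \<in> DP j z"
  shows "(\<Sum>w\<in>{v \<in> Omega M j. hd (fst v) = z}. wt z s p w) = 1"
proof -
  have "(\<Sum>w\<in>{v \<in> Omega M j. hd (fst v) = z}. wt z s p w)
     = (\<Sum>w\<in>Omega M j. wt z s p w * indicator {v \<in> Omega M j. hd (fst v) = z} w)"
    by (rule sum_wt_mass[OF z]) auto
  also have "\<dots> = (\<Sum>u\<in>out M j. \<Sum>v\<in>Omega M (Suc j). s u * p v * 1)"
    unfolding sum_wt[OF z] by (intro sum.cong refl) (simp add: indicator_def pt_in[OF z])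
  also have "\<dots> = 1" using sp_const[OF z s p] .
  finally show ?thesis .
qed

lemma mass1:
  assumes z: "z \<in> st M j" and s: "s \<in> DS j z" and p: "p \<in> DP j z" and ab: "(a, b) \<in> Omega M (Suc j)"
  shows "(\<Sum>w\<in>{v \<in> Omega M j. (hd (fst v), tl (fst v), tl (snd v)) = (z, a, b)}. wt z s p w) = p (a, b)"
proof -
  let ?B = "{v \<in> Omega M j. (hd (fst v), tl (fst v), tl (snd v)) = (z, a, b)}"
  have "(\<Sum>w\<in>?B. wt z s p w) = (\<Sum>w\<in>Omega M j. wt z s p w * indicator ?B w)"
    by (rule sum_wt_mass[OF z]) auto
  also have "\<dots> = (\<Sum>u\<in>out M j. \<Sum>v\<in>Omega M (Suc j). if v = (a, b) then s u * p v else 0)"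
    unfolding sum_wt[OF z] by (intro sum.cong refl) (auto simp: indicator_def pt_in[OF z])
  also have "\<dots> = (\<Sum>u\<in>out M j. s u * p (a, b))" using OmF ab by (simp add: sum.delta')
  also have "\<dots> = p (a, b)" using DS_props(2)[OF z s] by (simp add: sum_distrib_right[symmetric])
  finally show ?thesis .
qed

lemma mass2:
  assumes z: "z \<in> st M j" and s: "s \<in> DS j z" and p: "p \<in> DP j z" and o: "o' \<in> out M j"
  shows "(\<Sum>w\<in>{v \<in> Omega M j. (hd (fst v), hd (snd v)) = (z, o')}. wt z s p w) = s o'"
proof -
  let ?B = "{v \<in> Omega M j. (hd (fst v), hd (snd v)) = (z, o')}"
  have "(\<Sum>w\<in>?B. wt z s p w) = (\<Sum>w\<in>Omega M j. wt z s p w * indicator ?B w)"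
    by (rule sum_wt_mass[OF z]) auto
  also have "\<dots> = (\<Sum>u\<in>out M j. if u = o' then (\<Sum>v\<in>Omega M (Suc j). s u * p v) else 0)"
    unfolding sum_wt[OF z] by (intro sum.cong refl) (auto simp: indicator_def pt_in[OF z])
  also have "\<dots> = (\<Sum>v\<in>Omega M (Suc j). s o' * p v)" using oF o by (simp add: sum.delta')
  also have "\<dots> = s o'" using DP_props(2)[OF z p] by (simp add: sum_distrib_left[symmetric])
  finally show ?thesis .
qed

lemma SP_walley: "walley_coherent [L1, L2, L3]"
proof (rule walley_by_weights[where \<Omega> = "Omega M j"])
  show "finite (Omega M j)" using Omega_finite[OF jj(1)] .
next
  fix i B assume i: "i < length [L1, L2, L3]" and B: "B \<in> fst ([L1, L2, L3] ! i)"
  have "B \<in> cells (Omega M j) (\<lambda>w. hd (fst w)) \<or> B \<in> cells (Omega M j) (\<lambda>w. (hd (fst w), tl (fst w), tl (snd w)))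
     \<or> B \<in> cells (Omega M j) (\<lambda>w. (hd (fst w), hd (snd w)))" using idx3[OF i] B by auto
  then show "B \<subseteq> Omega M j \<and> B \<noteq> {}" unfolding cells_def by auto
next
  fix i assume i: "i < length [L1, L2, L3]"
  then show "finite (fst ([L1, L2, L3] ! i))" using idx3[OF i] Omega_finite[OF jj(1)] unfolding cells_def by auto
next
  fix i B and f :: "'x list \<times> 'o list \<Rightarrow> real" assume i: "i < length [L1, L2, L3]" and B: "B \<in> fst ([L1, L2, L3] ! i)"
    and f0: "\<forall>v\<in>B. f v = 0"
  consider "i = 0" | "i = Suc 0" | "i = Suc (Suc 0)" using idx3[OF i] by blast
  then show "snd ([L1, L2, L3] ! i) B f = 0"
  proof cases
    case 1
    then obtain w0 where w0: "w0 \<in> Omega M j" "B = {v \<in> Omega M j. hd (fst v) = hd (fst w0)}"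
      using B by (auto elim: cells_memE)
    define x where "x = hd (fst w0)"
    have x: "x \<in> st M j" using w0_st[OF w0(1)] x_def by simp
    have r: "hd (fst (SOME w. w \<in> B)) = x" using some_mem[of w0 B] w0 x_def by auto
    have c: "coherent_lp (cellset j x) (SP j x)" using SP_coh[OF x] .
    have "SP j x f = SP j x (\<lambda>w. 0)"
      by (rule coh_cong[OF c cellset_ne[OF jj(1) less_imp_le[OF jj(2)] x]]) (use f0 w0 x_def in \<open>auto simp: cellset_def\<close>)
    then show ?thesis using 1 r coh_zero[OF c] by simp
  next
    case 2
    define r where "r = (SOME w. w \<in> B)"
    obtain w0 where w0: "w0 \<in> Omega M j" "B = {v \<in> Omega M j. (hd (fst v), tl (fst v), tl (snd v)) = (hd (fst w0), tl (fst w0), tl (snd w0))}"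
      using B 2 by (auto elim: cells_memE)
    have rB: "r \<in> B" using some_mem[of w0 B] w0 unfolding r_def by auto
    then have r\<Omega>: "r \<in> Omega M j" using w0 by auto
    have x: "hd (fst r) \<in> st M j" using w0_st[OF r\<Omega>] .
    have rs: "fst r \<noteq> []" using r\<Omega> Omega_mem_step[OF jj(2)] by auto
    have "(fst r, u # tl (snd r)) \<in> B" if u: "u \<in> out M j" for u
    proof -
      have "(fst r, u # tl (snd r)) \<in> Omega M j"
        using Omega_mem_step[OF jj(2), of "(fst r, u # tl (snd r))"] Omega_mem_step[OF jj(2), of r] r\<Omega> u by auto
      then show ?thesis using rB w0(2) by auto
    qed
    then have "Sm M j (hd (fst r)) (\<lambda>u. f (fst r, u # tl (snd r))) = Sm M j (hd (fst r)) (\<lambda>u. 0)"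
      using f0 by (intro coh_cong[OF Scoh[OF x] oN]) auto
    then show ?thesis using 2 coh_zero[OF Scoh[OF x]] unfolding r_def by (simp add: Let_def)
  next
    case 3
    define r where "r = (SOME w. w \<in> B)"
    obtain w0 where w0: "w0 \<in> Omega M j" "B = {v \<in> Omega M j. (hd (fst v), hd (snd v)) = (hd (fst w0), hd (snd w0))}"
      using B 3 by (auto elim: cells_memE)
    have rB: "r \<in> B" using some_mem[of w0 B] w0 unfolding r_def by auto
    then have r\<Omega>: "r \<in> Omega M j" using w0 by auto
    have x: "hd (fst r) \<in> st M j" using w0_st[OF r\<Omega>] .
    have "(hd (fst r) # fst v, hd (snd r) # snd v) \<in> B" if v: "v \<in> Omega M (Suc j)" for v
    proof -
      have "(hd (fst r) # fst v, hd (snd r) # snd v) \<in> Omega M j"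
        using pt_in[OF x w0_o[OF r\<Omega>] v] .
      then show ?thesis using rB w0(2) by auto
    qed
    then have "Pk M (Suc j) (hd (fst r)) (\<lambda>v. f (hd (fst r) # fst v, hd (snd r) # snd v)) = Pk M (Suc j) (hd (fst r)) (\<lambda>v. 0)"
      using f0 by (intro coh_cong[OF P1coh[OF x] OmN]) auto
    then show ?thesis using 3 coh_zero[OF P1coh[OF x]] unfolding r_def by (simp add: Let_def)
  qed
next
  fix i0 B0 and f0 :: "'x list \<times> 'o list \<Rightarrow> real" and \<delta> :: real assume i0: "i0 < length [L1, L2, L3]" and B0: "B0 \<in> fst ([L1, L2, L3] ! i0)"
    and \<delta>: "\<delta> > 0"
  consider "i0 = 0" | "i0 = Suc 0" | "i0 = Suc (Suc 0)" using idx3[OF i0] by blast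
  then show "\<exists>m. (\<forall>i<length [L1, L2, L3]. \<forall>B\<in>fst ([L1, L2, L3] ! i). \<forall>f. 0 \<le> (\<Sum>w\<in>Omega M j. m w * gain (snd ([L1, L2, L3] ! i)) B f w)) \<and>
           (\<forall>w. 0 \<le> m w) \<and>
           (\<Sum>w\<in>Omega M j. m w * gain (snd ([L1, L2, L3] ! i0)) B0 f0 w) \<le> \<delta> * (\<Sum>w\<in>B0. m w) \<and>
           0 < (\<Sum>w\<in>B0. m w)"
  proof cases
    case 1
    then obtain w0 where w0: "w0 \<in> Omega M j" "B0 = {v \<in> Omega M j. hd (fst v) = hd (fst w0)}"
      using B0 by (auto elim: cells_memE)
    define z where "z = hd (fst w0)"
    have z: "z \<in> st M j" using w0_st[OF w0(1)] z_def by simp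
    obtain s p where s: "s \<in> DS j z" and p: "p \<in> DP j z" and lt: "spv j z s p f0 < SP j z f0 + \<delta>"
      using SP_approx[OF z \<delta>] by blast
    show ?thesis
    proof (intro exI conjI allI ballI impI)
      show "0 \<le> (\<Sum>w\<in>Omega M j. wt z s p w * gain (snd ([L1, L2, L3] ! i)) B f w)"
        if "i < length [L1, L2, L3]" "B \<in> fst ([L1, L2, L3] ! i)" for i B f
        using gains_nonneg[OF z s p that] .
      show "0 \<le> wt z s p w" for w using wt_nonneg[OF z s p] .
      have m: "(\<Sum>w\<in>B0. wt z s p w) = 1" using mass0[OF z s p] w0(2) z_def by simp
      show "0 < (\<Sum>w\<in>B0. wt z s p w)" using m by simp
      show "(\<Sum>w\<in>Omega M j. wt z s p w * gain (snd ([L1, L2, L3] ! i0)) B0 f0 w) \<le> \<delta> * (\<Sum>w\<in>B0. wt z s p w)"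
        using 1 gain0_sum[OF z s p w0, of f0] m lt z_def by simp
    qed
  next
    case 2
    then obtain w0 where w0: "w0 \<in> Omega M j" "B0 = {v \<in> Omega M j. (hd (fst v), tl (fst v), tl (snd v)) = (hd (fst w0), tl (fst w0), tl (snd w0))}"
      using B0 by (auto elim: cells_memE)
    define z where "z = hd (fst w0)"
    define a where "a = tl (fst w0)"
    define b where "b = tl (snd w0)"
    have z: "z \<in> st M j" using w0_st[OF w0(1)] z_def by simp
    have ab: "(a, b) \<in> Omega M (Suc j)" using w0_tl[OF w0(1)] a_def b_def by simp
    obtain s where s: "s \<in> DS j z" and sh: "lin (out M j) s (\<lambda>u. f0 (fst w0, u # tl (snd w0))) = Sm M j z (\<lambda>u. f0 (fst w0, u # tl (snd w0)))"
      using DS_ex[OF z] by blast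
    obtain p where p: "p \<in> DP j z" and ph: "lin (Omega M (Suc j)) p (\<lambda>w. - indicator {(a, b)} w) = Pk M (Suc j) z (\<lambda>w. - indicator {(a, b)} w)"
      using DP_ex[OF z] by blast
    have ppos: "p (a, b) > 0" using ph P1pos[OF z ab] lin_neg_ind[OF OmF ab, of p] by simp
    show ?thesis
    proof (intro exI conjI allI ballI impI)
      show "0 \<le> (\<Sum>w\<in>Omega M j. wt z s p w * gain (snd ([L1, L2, L3] ! i)) B f w)"
        if "i < length [L1, L2, L3]" "B \<in> fst ([L1, L2, L3] ! i)" for i B f
        using gains_nonneg[OF z s p that] .
      show "0 \<le> wt z s p w" for w using wt_nonneg[OF z s p] .
      have m: "(\<Sum>w\<in>B0. wt z s p w) = p (a, b)" using mass1[OF z s p ab] w0(2) z_def a_def b_def by simp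
      show "0 < (\<Sum>w\<in>B0. wt z s p w)" using m ppos by simp
      show "(\<Sum>w\<in>Omega M j. wt z s p w * gain (snd ([L1, L2, L3] ! i0)) B0 f0 w) \<le> \<delta> * (\<Sum>w\<in>B0. wt z s p w)"
        using 2 gain1_sum[OF z s p w0, of f0] m ppos \<delta> sh z_def by simp
    qed
  next
    case 3
    then obtain w0 where w0: "w0 \<in> Omega M j" "B0 = {v \<in> Omega M j. (hd (fst v), hd (snd v)) = (hd (fst w0), hd (snd w0))}"
      using B0 by (auto elim: cells_memE)
    define z where "z = hd (fst w0)"
    define o' where "o' = hd (snd w0)"
    have z: "z \<in> st M j" using w0_st[OF w0(1)] z_def by simp
    have o: "o' \<in> out M j" using w0_o[OF w0(1)] o'_def by simp
    obtain p where p: "p \<in> DP j z" and ph: "lin (Omega M (Suc j)) p (\<lambda>v. f0 (z # fst v, o' # snd v)) = Pk M (Suc j) z (\<lambda>v. f0 (z # fst v, o' # snd v))"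
      using DP_ex[OF z] by blast
    obtain s where s: "s \<in> DS j z" and sh: "lin (out M j) s (\<lambda>w. - indicator {o'} w) = Sm M j z (\<lambda>w. - indicator {o'} w)"
      using DS_ex[OF z] by blast
    have "Sm M j z (\<lambda>w. - indicator {o'} w) < 0"
      using posS'[OF jj(1) less_imp_le[OF jj(2)] z o] unfolding upper_def by simp
    then have spos: "s o' > 0" using sh lin_neg_ind[OF oF o, of s] by simp
    show ?thesis
    proof (intro exI conjI allI ballI impI)
      show "0 \<le> (\<Sum>w\<in>Omega M j. wt z s p w * gain (snd ([L1, L2, L3] ! i)) B f w)"
        if "i < length [L1, L2, L3]" "B \<in> fst ([L1, L2, L3] ! i)" for i B f
        using gains_nonneg[OF z s p that] .
      show "0 \<le> wt z s p w" for w using wt_nonneg[OF z s p] .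
      have m: "(\<Sum>w\<in>B0. wt z s p w) = s o'" using mass2[OF z s p o] w0(2) z_def o'_def by simp
      show "0 < (\<Sum>w\<in>B0. wt z s p w)" using m spos by simp
      show "(\<Sum>w\<in>Omega M j. wt z s p w * gain (snd ([L1, L2, L3] ! i0)) B0 f0 w) \<le> \<delta> * (\<Sum>w\<in>B0. wt z s p w)"
        using 3 gain2_sum[OF z s p w0, of f0] m spos \<delta> ph z_def o'_def by simp
    qed
  qed
qed

lemma SP_cand: "ine_cand M j (Pk M (Suc j)) (SP j)"
  unfolding ine_cand_def
proof (intro conjI ballI allI)
  fix z assume z: "z \<in> st M j"
  show "coherent_lp {w \<in> Omega M j. hd (fst w) = z} (SP j z)" using SP_coh[OF z] unfolding cellset_def .
  fix h :: "'o \<Rightarrow> real"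
  show "SP j z (\<lambda>w. h (hd (snd w))) = Sm M j z h" using SP_hd[OF z] .
next
  fix z h assume z: "z \<in> st M j"
  show "SP j z (\<lambda>w. h (tl (fst w), tl (snd w))) = Pk M (Suc j) z h" using SP_tl[OF z] .
next
  show "walley_coherent [L1, L2, L3]" by (rule SP_walley)
qed

end

lemma cell_sum:
  assumes fin: "finite \<Omega>" and w: "w \<in> \<Omega>"
  shows "(\<Sum>B\<in>cells \<Omega> key. gain P B f w) = f w - P {v \<in> \<Omega>. key v = key w} f"
proof -
  let ?C = "{v \<in> \<Omega>. key v = key w}"
  have C: "?C \<in> cells \<Omega> key" using w unfolding cells_def by blast
  have fc: "finite (cells \<Omega> key)" using fin unfolding cells_def by simp
  have "(\<Sum>B\<in>cells \<Omega> key. gain P B f w) = gain P ?C f w + (\<Sum>B\<in>cells \<Omega> key - {?C}. gain P B f w)"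
    using sum.remove[OF fc C] .
  also have "(\<Sum>B\<in>cells \<Omega> key - {?C}. gain P B f w) = 0"
  proof (rule sum.neutral, rule ballI)
    fix B assume B: "B \<in> cells \<Omega> key - {?C}"
    then obtain w0 where w0: "w0 \<in> \<Omega>" "B = {v \<in> \<Omega>. key v = key w0}" by (auto elim: cells_memE)
    have "w \<notin> B"
    proof
      assume "w \<in> B"
      then have "key w = key w0" using w0 by auto
      then have "B = ?C" using w0 by auto
      then show False using B by auto
    qed
    then show "gain P B f w = 0" unfolding gain_def by simp
  qed
  finally show ?thesis using w unfolding gain_def by simp
qed

lemma walley_inst:
  assumes "walley_coherent L" "ja < length L" "Ba \<in> fst (L ! ja)"
  shows "\<exists>w \<in> Ba \<union> (\<Union>j<length L. \<Union>{B \<in> fst (L ! j). \<exists>v\<in>B. ffs j v \<noteq> 0}).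
          (\<Sum>j<length L. \<Sum>B\<in>fst (L ! j). gain (snd (L ! j)) B (ffs j) w)
            - gain (snd (L ! ja)) Ba fa w \<ge> 0"
  using assms unfolding walley_coherent_def by blast

definition sfac :: "(('o \<Rightarrow> real) \<Rightarrow> real) \<Rightarrow> 'o \<Rightarrow> real \<Rightarrow> real" where
  "sfac S o' c = (if 0 \<le> c then c * S (indicator {o'}) else c * upper S (indicator {o'}))"

lemma sfac_scale:
  assumes "coherent_lp A S"
  shows "S (\<lambda>u. c * indicator {o'} u) = sfac S o' c"
  unfolding sfac_def using coh_pos_scale[OF assms, of c] coh_neg_scale[OF assms, of c] by auto

lemma sum3: "(\<Sum>i<length [a, b, c]. F i) = F 0 + F (Suc 0) + (F (Suc (Suc 0)) :: real)"
  by (simp add: lessThan_Suc)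

context lvl
begin

lemma cand_lb:
  assumes cand: "ine_cand M j (Pk M (Suc j)) E" and y: "y \<in> st M j" and o: "o' \<in> out M j"
  shows "sfac (Sm M j y) o' (Pk M (Suc j) y g)
    \<le> E y (\<lambda>w. indicator {o'} (hd (snd w)) * g (tl (fst w), tl (snd w)))"
proof -
  let ?\<Omega> = "Omega M j"
  let ?F = "\<lambda>w. indicator {o'} (hd (snd w)) * g (tl (fst w), tl (snd w))"
  let ?c = "Pk M (Suc j) y g"
  define L where "L = [(cells (Omega M j) (\<lambda>w. hd (fst w)), \<lambda>B f. E (hd (fst (SOME w. w \<in> B))) f),
         (cells (Omega M j) (\<lambda>w. (hd (fst w), tl (fst w), tl (snd w))),
           \<lambda>B f. (let w = SOME w. w \<in> B in
                   Sm M j (hd (fst w)) (\<lambda>u. f (fst w, u # tl (snd w))))),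
         (cells (Omega M j) (\<lambda>w. (hd (fst w), hd (snd w))),
           \<lambda>B f. (let w = SOME w. w \<in> B in
                   Pk M (Suc j) (hd (fst w)) (\<lambda>v. f (hd (fst w) # fst v, hd (snd w) # snd v))))]"
  have W: "walley_coherent L" using cand unfolding ine_cand_def L_def by blast
  have Ecoh: "coherent_lp (cellset j z) (E z)" if "z \<in> st M j" for z
    using cand that unfolding ine_cand_def cellset_def by blast
  define f1 where "f1 w = (if hd (fst w) = y then ?c * indicator {o'} (hd (snd w)) else 0)" for w
  define f2 where "f2 w = (if hd (fst w) = y then ?F w else 0)" for w
  define fs where "fs i = (if i = 0 then (\<lambda>_. 0) else if i = Suc 0 then f1 else f2)" for i :: nat
  obtain w0 where w0: "w0 \<in> cellset j y" using cellset_ne[OF jj(1) less_imp_le[OF jj(2)] y] by blast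
  define B0 where "B0 = {v \<in> ?\<Omega>. hd (fst v) = hd (fst w0)}"
  have B0y: "B0 = cellset j y" using w0 unfolding B0_def cellset_def by auto
  have len: "0 < length L" unfolding L_def by simp
  have B0c: "B0 \<in> fst (L ! 0)" using w0 unfolding L_def B0_def cells_def cellset_def by auto
  obtain w where wm: "w \<in> B0 \<union> (\<Union>i<length L. \<Union>{B \<in> fst (L ! i). \<exists>v\<in>B. fs i v \<noteq> 0})"
    and wge: "(\<Sum>i<length L. \<Sum>B\<in>fst (L ! i). gain (snd (L ! i)) B (fs i) w) - gain (snd (L ! 0)) B0 ?F w \<ge> 0"
    using walley_inst[OF W len B0c, where ffs=fs and fa="?F"] by blast
  have w\<Omega>: "w \<in> ?\<Omega>" and wy: "hd (fst w) = y"
  proof -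
    have "w \<in> ?\<Omega> \<and> hd (fst w) = y"
    proof (cases "w \<in> B0")
      case True then show ?thesis using B0y unfolding cellset_def by auto
    next
      case False
      then obtain i B v where i: "i < length L" and B: "B \<in> fst (L ! i)" and v: "v \<in> B" "fs i v \<noteq> 0" and wB: "w \<in> B"
        using wm by auto
      have i12: "i = Suc 0 \<or> i = Suc (Suc 0)" using i v(2) unfolding fs_def L_def by (auto split: if_splits simp: less_Suc_eq)
      have vy: "hd (fst v) = y" using v(2) i12 unfolding fs_def f1_def f2_def by (auto split: if_splits)
      show ?thesis
      proof (cases "i = Suc 0")
        case True
        then obtain u0 where "B = {x \<in> ?\<Omega>. (hd (fst x), tl (fst x), tl (snd x)) = (hd (fst u0), tl (fst u0), tl (snd u0))}"
          using B unfolding L_def by (auto elim: cells_memE)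
        then show ?thesis using wB v vy by auto
      next
        case False
        then have "i = Suc (Suc 0)" using i12 by simp
        then obtain u0 where "B = {x \<in> ?\<Omega>. (hd (fst x), hd (snd x)) = (hd (fst u0), hd (snd u0))}"
          using B unfolding L_def by (auto elim: cells_memE)
        then show ?thesis using wB v vy by auto
      qed
    qed
    then show "w \<in> ?\<Omega>" "hd (fst w) = y" by auto
  qed
  have ws: "fst w \<noteq> []" "snd w \<noteq> []" "hd (snd w) \<in> out M j" "(tl (fst w), tl (snd w)) \<in> Omega M (Suc j)"
    using w\<Omega> Omega_mem_step[OF jj(2)] by auto
  have fin: "finite ?\<Omega>" using Omega_finite[OF jj(1)] .
  have g0: "(\<Sum>B\<in>fst (L ! 0). gain (snd (L ! 0)) B (fs 0) w) = 0"
  proof -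
    let ?C = "{v \<in> ?\<Omega>. hd (fst v) = hd (fst w)}"
    have "(\<Sum>B\<in>fst (L ! 0). gain (snd (L ! 0)) B (fs 0) w) = fs 0 w - E (hd (fst (SOME v. v \<in> ?C))) (fs 0)"
      unfolding L_def using cell_sum[OF fin w\<Omega>, where key = "\<lambda>w. hd (fst w)" and P = "\<lambda>B f. E (hd (fst (SOME w. w \<in> B))) f"] by simp
    moreover have "hd (fst (SOME v. v \<in> ?C)) = y" using some_mem[of w ?C] w\<Omega> wy by auto
    ultimately show ?thesis using coh_zero[OF Ecoh[OF y]] unfolding fs_def by simp
  qed
  have g1: "(\<Sum>B\<in>fst (L ! Suc 0). gain (snd (L ! Suc 0)) B (fs (Suc 0)) w)
      = ?c * indicator {o'} (hd (snd w)) - sfac (Sm M j y) o' ?c"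
  proof -
    let ?C = "{v \<in> ?\<Omega>. (hd (fst v), tl (fst v), tl (snd v)) = (hd (fst w), tl (fst w), tl (snd w))}"
    define r where "r = (SOME v. v \<in> ?C)"
    have rC: "r \<in> ?C" using some_mem[of w ?C] w\<Omega> unfolding r_def by auto
    have rs: "fst r \<noteq> []" using rC Omega_mem_step[OF jj(2)] by auto
    have k: "hd (fst r) = hd (fst w)" "tl (fst r) = tl (fst w)" using rC by auto
    have fr: "fst r = fst w" using k rs ws(1) by (metis list.collapse)
    have sr: "tl (snd r) = tl (snd w)" using rC by auto
    have "(\<Sum>B\<in>fst (L ! Suc 0). gain (snd (L ! Suc 0)) B (fs (Suc 0)) w)
        = f1 w - Sm M j (hd (fst r)) (\<lambda>u. f1 (fst r, u # tl (snd r)))"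
      unfolding L_def using cell_sum[OF fin w\<Omega>, where key = "\<lambda>w. (hd (fst w), tl (fst w), tl (snd w))"
        and P = "\<lambda>B f. (let w = SOME w. w \<in> B in Sm M j (hd (fst w)) (\<lambda>u. f (fst w, u # tl (snd w))))"]
      by (simp add: Let_def r_def fs_def)
    also have "(\<lambda>u. f1 (fst r, u # tl (snd r))) = (\<lambda>u. ?c * indicator {o'} u)"
      unfolding fr f1_def using wy by simp
    also have "hd (fst r) = y" using fr wy by simp
    finally show ?thesis using sfac_scale[OF Scoh[OF y]] wy unfolding f1_def by simp
  qed
  have g2: "(\<Sum>B\<in>fst (L ! Suc (Suc 0)). gain (snd (L ! Suc (Suc 0))) B (fs (Suc (Suc 0))) w)
      = ?F w - indicator {o'} (hd (snd w)) * ?c"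
  proof -
    let ?C = "{v \<in> ?\<Omega>. (hd (fst v), hd (snd v)) = (hd (fst w), hd (snd w))}"
    define r where "r = (SOME v. v \<in> ?C)"
    have rC: "r \<in> ?C" using some_mem[of w ?C] w\<Omega> unfolding r_def by auto
    have hr: "hd (fst r) = y" "hd (snd r) = hd (snd w)" using rC wy by auto
    have e1: "(\<Sum>B\<in>fst (L ! Suc (Suc 0)). gain (snd (L ! Suc (Suc 0))) B (fs (Suc (Suc 0))) w)
        = f2 w - Pk M (Suc j) (hd (fst r)) (\<lambda>v. f2 (hd (fst r) # fst v, hd (snd r) # snd v))"
      unfolding L_def using cell_sum[OF fin w\<Omega>, where key = "\<lambda>w. (hd (fst w), hd (snd w))"
        and P = "\<lambda>B f. (let w = SOME w. w \<in> B in Pk M (Suc j) (hd (fst w)) (\<lambda>v. f (hd (fst w) # fst v, hd (snd w) # snd v)))"]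
      by (simp add: Let_def r_def fs_def)
    have e2: "(\<lambda>v. f2 (hd (fst r) # fst v, hd (snd r) # snd v)) = (\<lambda>v. indicator {o'} (hd (snd w)) * g v)"
      unfolding hr f2_def by simp
    have e3: "Pk M (Suc j) y (\<lambda>v. indicator {o'} (hd (snd w)) * g v) = indicator {o'} (hd (snd w)) * ?c"
      using coh_pos_scale[OF P1coh[OF y], of "indicator {o'} (hd (snd w))" g] by simp
    have e4: "f2 w = ?F w" using wy unfolding f2_def by simp
    show ?thesis unfolding e1 e2 unfolding hr(1) e3 e4 ..
  qed
  have gg: "gain (snd (L ! 0)) B0 ?F w = ?F w - E y ?F"
  proof -
    have "hd (fst (SOME v. v \<in> B0)) = y" using some_mem[of w B0] w\<Omega> wy B0y unfolding cellset_def by auto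
    moreover have "w \<in> B0" using w\<Omega> wy B0y unfolding cellset_def by auto
    ultimately show ?thesis unfolding L_def gain_def by simp
  qed
  have "(\<Sum>i<length L. \<Sum>B\<in>fst (L ! i). gain (snd (L ! i)) B (fs i) w)
     = (\<Sum>B\<in>fst (L ! 0). gain (snd (L ! 0)) B (fs 0) w)
       + (\<Sum>B\<in>fst (L ! Suc 0). gain (snd (L ! Suc 0)) B (fs (Suc 0)) w)
       + (\<Sum>B\<in>fst (L ! Suc (Suc 0)). gain (snd (L ! Suc (Suc 0))) B (fs (Suc (Suc 0))) w)"
    unfolding L_def by (rule sum3)
  then show ?thesis using wge g0 g1 g2 gg by (simp add: algebra_simps)
qed

end

lemma lin_ind: "finite A \<Longrightarrow> a \<in> A \<Longrightarrow> lin A p (indicator {a}) = p a"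
proof -
  assume a: "finite A" "a \<in> A"
  have "lin A p (indicator {a}) = (\<Sum>x\<in>A. if x = a then p x else 0)"
    unfolding lin_def by (rule sum.cong) (auto simp: indicator_def)
  then show ?thesis using a by (simp add: sum.delta')
qed

context lvl
begin

lemma cands_ne: "{E. ine_cand M j (Pk M (Suc j)) E} \<noteq> {}" using SP_cand by blast

lemma Efun_inf: "Efun M j y f = Inf ((\<lambda>P. P f) ` {E y | E. ine_cand M j (Pk M (Suc j)) E})"
proof -
  have "{E y f | E. ine_cand M j (Pk M (Suc j)) E} = (\<lambda>P. P f) ` {E y | E. ine_cand M j (Pk M (Suc j)) E}"
    by auto
  then show ?thesis using Efun_step[OF jj(2)] by simp
qed

lemma Efun_coh: "y \<in> st M j \<Longrightarrow> coherent_lp (cellset j y) (Efun M j y)"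
proof -
  assume y: "y \<in> st M j"
  have "coherent_lp (cellset j y) (\<lambda>f. Inf ((\<lambda>P. P f) ` {E y | E. ine_cand M j (Pk M (Suc j)) E}))"
  proof (rule inf_coherent)
    show "{E y | E. ine_cand M j (Pk M (Suc j)) E} \<noteq> {}" using SP_cand by blast
    show "cellset j y \<noteq> {}" using cellset_ne[OF jj(1) less_imp_le[OF jj(2)] y] .
    show "finite (cellset j y)" using cellset_finite[OF jj(1)] .
    fix P assume "P \<in> {E y | E. ine_cand M j (Pk M (Suc j)) E}"
    then show "coherent_lp (cellset j y) P" using y unfolding ine_cand_def cellset_def by blast
  qed
  moreover have "Efun M j y = (\<lambda>f. Inf ((\<lambda>P. P f) ` {E y | E. ine_cand M j (Pk M (Suc j)) E}))"
    by (rule ext) (rule Efun_inf)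
  ultimately show ?thesis by simp
qed

lemma SP_val_le:
  assumes y: "y \<in> st M j" and o: "o' \<in> out M j"
  shows "SP j y (\<lambda>w. indicator {o'} (hd (snd w)) * g (tl (fst w), tl (snd w))) \<le> sfac (Sm M j y) o' (Pk M (Suc j) y g)"
proof -
  let ?c = "Pk M (Suc j) y g"
  obtain p where p: "p \<in> DP j y" "lin (Omega M (Suc j)) p g = ?c" using DP_ex[OF y] by blast
  show ?thesis
  proof (cases "0 \<le> ?c")
    case True
    obtain s where s: "s \<in> DS j y" "lin (out M j) s (indicator {o'}) = Sm M j y (indicator {o'})"
      using DS_ex[OF y] by blast
    have "s o' = Sm M j y (indicator {o'})" using s(2) lin_ind[OF oF o] by simp
    then show ?thesis using SP_le[OF y s(1) p(1), of "\<lambda>w. indicator {o'} (hd (snd w)) * g (tl (fst w), tl (snd w))"] spv_prod[OF y s(1) p(1) o, of g] p(2) True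
      unfolding sfac_def by (simp add: mult.commute)
  next
    case False
    obtain s where s: "s \<in> DS j y" "lin (out M j) s (\<lambda>x. - indicator {o'} x) = Sm M j y (\<lambda>x. - indicator {o'} x)"
      using DS_ex[OF y] by blast
    have "s o' = upper (Sm M j y) (indicator {o'})" using s(2) lin_neg_ind[OF oF o] unfolding upper_def by simp
    then show ?thesis using SP_le[OF y s(1) p(1), of "\<lambda>w. indicator {o'} (hd (snd w)) * g (tl (fst w), tl (snd w))"] spv_prod[OF y s(1) p(1) o, of g] p(2) False
      unfolding sfac_def by (simp add: mult.commute)
  qed
qed

lemma Efun_formula:
  assumes y: "y \<in> st M j" and o: "o' \<in> out M j"
  shows "Efun M j y (\<lambda>w. indicator {o'} (hd (snd w)) * g (tl (fst w), tl (snd w))) = sfac (Sm M j y) o' (Pk M (Suc j) y g)"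
proof -
  let ?F = "\<lambda>w. indicator {o'} (hd (snd w)) * g (tl (fst w), tl (snd w))"
  let ?K = "{E y | E. ine_cand M j (Pk M (Suc j)) E}"
  have lb: "sfac (Sm M j y) o' (Pk M (Suc j) y g) \<le> P ?F" if "P \<in> ?K" for P
    using that cand_lb[OF _ y o] by blast
  have bdd: "bdd_below ((\<lambda>P. P ?F) ` ?K)" using lb by (auto simp: bdd_below_def)
  have ne: "(\<lambda>P. P ?F) ` ?K \<noteq> {}" using SP_cand by blast
  show ?thesis unfolding Efun_inf
  proof (rule antisym)
    have "SP j y ?F \<in> (\<lambda>P. P ?F) ` ?K" using SP_cand by blast
    then have "Inf ((\<lambda>P. P ?F) ` ?K) \<le> SP j y ?F" using bdd by (rule cInf_lower)
    then show "Inf ((\<lambda>P. P ?F) ` ?K) \<le> sfac (Sm M j y) o' (Pk M (Suc j) y g)" using SP_val_le[OF y o, of g] by linarith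
    show "sfac (Sm M j y) o' (Pk M (Suc j) y g) \<le> Inf ((\<lambda>P. P ?F) ` ?K)" using ne lb by (intro cInf_greatest) auto
  qed
qed

lemma good_step: "good j"
  unfolding good_def
proof (intro conjI ballI)
  fix y assume y: "y \<in> st M j"
  show "coherent_lp (cellset j y) (Efun M j y)" using Efun_coh[OF y] .
  fix v assume v: "v \<in> cellset j y"
  then have v\<Omega>: "v \<in> Omega M j" and vy: "hd (fst v) = y" unfolding cellset_def by auto
  have vs: "hd (snd v) \<in> out M j" "(tl (fst v), tl (snd v)) \<in> Omega M (Suc j)" "fst v \<noteq> []" "snd v \<noteq> []"
    using v\<Omega> Omega_mem_step[OF jj(2)] by auto
  let ?u = "hd (snd v)" and ?ab = "(tl (fst v), tl (snd v))"
  let ?F = "\<lambda>w. indicator {?u} (hd (snd w)) * (\<lambda>x. - indicator {?ab} x) (tl (fst w), tl (snd w))"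
  have eqc: "- indicator {v} w = (?F w :: real)" if "w \<in> cellset j y" for w
  proof -
    have w: "fst w \<noteq> []" "snd w \<noteq> []" "hd (fst w) = y" using that Omega_mem_step[OF jj(2)] unfolding cellset_def by auto
    have "w = v \<longleftrightarrow> hd (snd w) = ?u \<and> (tl (fst w), tl (snd w)) = ?ab"
      using w vs vy by (cases w, cases v) (auto simp: list_eq_iff_nth_eq[of "fst _"] intro: list.expand)
    then show ?thesis by (auto simp: indicator_def)
  qed
  have "Efun M j y (\<lambda>w. - indicator {v} w) = Efun M j y ?F"
    by (rule coh_cong[OF Efun_coh[OF y] cellset_ne[OF jj(1) less_imp_le[OF jj(2)] y]]) (use eqc in auto)
  also have "\<dots> = sfac (Sm M j y) ?u (Pk M (Suc j) y (\<lambda>x. - indicator {?ab} x))"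
    by (rule Efun_formula[OF y vs(1)])
  finally have e: "Efun M j y (\<lambda>w. - indicator {v} w) = sfac (Sm M j y) ?u (Pk M (Suc j) y (\<lambda>x. - indicator {?ab} x))" .
  have c: "Pk M (Suc j) y (\<lambda>x. - indicator {?ab} x) < 0" using P1pos[OF y vs(2)] .
  have u: "upper (Sm M j y) (indicator {?u}) > 0" using posS'[OF jj(1) less_imp_le[OF jj(2)] y vs(1)] .
  show "Efun M j y (\<lambda>w. - indicator {v} w) < 0" unfolding e sfac_def using c u by (simp add: mult_neg_pos)
qed

end

context ctx
begin

lemma good_all: "1 \<le> j \<Longrightarrow> j \<le> n \<Longrightarrow> good j"
proof (induction "n - j" arbitrary: j)
  case 0
  then have "j = n" by simp
  then show ?case using good_last by simp
next
  case (Suc d)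
  then have j: "j < n" by simp
  have d: "d = n - Suc j" using Suc.hyps(2) by simp
  have gs: "good (Suc j)" using Suc.hyps(1)[OF d] j by simp
  interpret l: lvl M ob j using Suc.prems j gs by unfold_locales auto
  show ?case by (rule l.good_step)
qed

end

lemma ind_cons: "l \<noteq> [] \<Longrightarrow> (indicator {c # cs} l :: real) = indicator {c} (hd l) * indicator {cs} (tl l)"
  by (cases l) (auto simp: indicator_def)

context ctx
begin

definition pf :: "(nat \<Rightarrow> 'x \<Rightarrow> real) \<Rightarrow> (nat \<Rightarrow> 'x \<Rightarrow> 'x \<Rightarrow> real) \<Rightarrow> nat \<Rightarrow> 'x list \<Rightarrow> real" where
  "pf a b j zs = a j (zs ! 0) * (\<Prod>i\<in>{Suc j..n}. a i (zs ! (i - j)) * b i (zs ! (i - j - 1)) (zs ! (i - j)))"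

abbreviation "aU \<equiv> (\<lambda>i x. upper (Sm M i x) (indicator {ob i}))"
abbreviation "bU \<equiv> (\<lambda>i x y. upper (Qm M i x) (indicator {y}))"
abbreviation "aL \<equiv> (\<lambda>i x. Sm M i x (indicator {ob i}))"
abbreviation "bL \<equiv> (\<lambda>i x y. Qm M i x (indicator {y}))"

lemma alpha_pf: "alpha M ob j zs = pf aU bU j zs" unfolding alpha_def pf_def by simp
lemma beta_pf: "beta M ob j zs = pf aL bL j zs" unfolding beta_def pf_def by simp

lemma pf_Cons:
  assumes j: "j < n"
  shows "pf a b j (x # xs) = a j x * b (Suc j) x (xs ! 0) * pf a b (Suc j) xs"
proof -
  have I: "{Suc j..n} = insert (Suc j) {Suc (Suc j)..n}" using j by auto
  have R: "(\<Prod>i\<in>{Suc (Suc j)..n}. a i ((x # xs) ! (i - j)) * b i ((x # xs) ! (i - j - 1)) ((x # xs) ! (i - j)))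
      = (\<Prod>i\<in>{Suc (Suc j)..n}. a i (xs ! (i - Suc j)) * b i (xs ! (i - Suc j - 1)) (xs ! (i - Suc j)))"
  proof (rule prod.cong[OF refl])
    fix i assume "i \<in> {Suc (Suc j)..n}"
    then have "i - j = Suc (i - Suc j)" "i - j - 1 = Suc (i - Suc j - 1)" by auto
    then show "a i ((x # xs) ! (i - j)) * b i ((x # xs) ! (i - j - 1)) ((x # xs) ! (i - j))
      = a i (xs ! (i - Suc j)) * b i (xs ! (i - Suc j - 1)) (xs ! (i - Suc j))" by simp
  qed
  show ?thesis unfolding pf_def I by (simp add: R mult_ac)
qed

lemma pf_last: "pf a b n [x] = a n x" unfolding pf_def by simp

lemma ovec_Cons: "j \<le> n \<Longrightarrow> ovec M ob j = ob j # ovec M ob (Suc j)"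
  unfolding ovec_def by (cases "j = n") (auto simp: upt_conv_Cons)

lemma ovec_last: "ovec M ob n = [ob n]" unfolding ovec_def by simp

lemma Eprod:
  assumes "1 \<le> j" "j \<le> n" "xs \<in> xseq M j" "y \<in> st M j"
  shows "Efun M j y (\<lambda>w. indicator {ovec M ob j} (snd w) * indicator {xs} (fst w)) = (if hd xs = y then beta M ob j xs else 0)
     \<and> Efun M j y (\<lambda>w. - (indicator {ovec M ob j} (snd w) * indicator {xs} (fst w))) = (if hd xs = y then - alpha M ob j xs else 0)
     \<and> 0 \<le> beta M ob j xs \<and> 0 < alpha M ob j xs"
  using assms
proof (induction "n - j" arbitrary: j xs y)
  case 0
  then have jn: "j = n" by simp
  obtain x where x: "xs = [x]" "x \<in> st M n" using 0 jn xseq_last by auto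
  have n1: "1 \<le> n" using n_pos .
  have S: "coherent_lp (out M n) (Sm M n y)" using cohS'[OF n1 le_refl] 0 jn by simp
  have Sx: "coherent_lp (out M n) (Sm M n x)" using cohS'[OF n1 le_refl x(2)] .
  have ind: "(\<lambda>u. indicator {[ob n]} [u] :: real) = indicator {ob n}" by (auto simp: indicator_def fun_eq_iff)
  have ind2: "(\<lambda>u. - indicator {[ob n]} [u] :: real) = (\<lambda>u. - indicator {ob n} u)" by (auto simp: indicator_def fun_eq_iff)
  have e1: "Efun M j y (\<lambda>w. indicator {ovec M ob j} (snd w) * indicator {xs} (fst w)) = (if x = y then Sm M n y (indicator {ob n}) else 0)"
    by (cases "x = y") (simp_all add: jn Efun_last ovec_last x ind coh_zero[OF S])
  have e2: "Efun M j y (\<lambda>w. - (indicator {ovec M ob j} (snd w) * indicator {xs} (fst w))) = (if x = y then - upper (Sm M n y) (indicator {ob n}) else 0)"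
    by (cases "x = y") (simp_all add: jn Efun_last ovec_last x ind2 coh_zero[OF S] upper_def)
  have b: "beta M ob j xs = Sm M n x (indicator {ob n})" unfolding beta_pf jn x pf_last ..
  have a: "alpha M ob j xs = upper (Sm M n x) (indicator {ob n})" unfolding alpha_pf jn x pf_last ..
  have bn: "0 \<le> Sm M n x (indicator {ob n})" by (rule coh_nonneg[OF Sx outN[OF n1 le_refl]]) (auto simp: indicator_def)
  have ap: "0 < upper (Sm M n x) (indicator {ob n})" using posS'[OF n1 le_refl x(2) obI[OF n1 le_refl]] .
  show ?case using e1 e2 a b bn ap x by auto
next
  case (Suc d)
  then have j: "j < n" by simp
  have d: "d = n - Suc j" using Suc.hyps(2) by simp
  have gs: "good (Suc j)" using good_all[of "Suc j"] j Suc.prems by simp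
  interpret l: lvl M ob j using Suc.prems j gs by unfold_locales auto
  obtain x xs' where xs: "xs = x # xs'" using Suc.prems(3) xseq_ne[OF Suc.prems(3)] j by (cases xs) auto
  have x: "x \<in> st M j" and xs': "xs' \<in> xseq M (Suc j)" using Suc.prems(3) xseq_Cons[OF j] xs by auto
  have xs'ne: "xs' \<noteq> []" using xseq_ne[OF xs'] j by simp
  have hx': "hd xs' \<in> st M (Suc j)" using xs' xs'ne unfolding xseq_def by (auto simp: hd_conv_nth)
  have IH: "\<And>y'. y' \<in> st M (Suc j) \<Longrightarrow>
     Efun M (Suc j) y' (\<lambda>w. indicator {ovec M ob (Suc j)} (snd w) * indicator {xs'} (fst w)) = (if hd xs' = y' then beta M ob (Suc j) xs' else 0)
     \<and> Efun M (Suc j) y' (\<lambda>w. - (indicator {ovec M ob (Suc j)} (snd w) * indicator {xs'} (fst w))) = (if hd xs' = y' then - alpha M ob (Suc j) xs' else 0)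
     \<and> 0 \<le> beta M ob (Suc j) xs' \<and> 0 < alpha M ob (Suc j) xs'"
    using Suc.hyps(1)[OF d] j xs' by simp
  have bpos: "0 \<le> beta M ob (Suc j) xs'" and apos: "0 < alpha M ob (Suc j) xs'" using IH[OF hx'] by auto
  let ?b = "beta M ob (Suc j) xs'" and ?a = "alpha M ob (Suc j) xs'"
  have j1: "1 \<le> Suc j" "Suc j \<le> n" using j by auto
  have jn: "1 \<le> j" "j \<le> n" using Suc.prems j by auto
  have Sx: "coherent_lp (out M j) (Sm M j x)" using cohS'[OF jn x] .
  have Qx: "coherent_lp (st M (Suc j)) (Qm M (Suc j) x)" using cohQ'[OF j1, of x] x by simp
  define g1 where "g1 v = (indicator {ovec M ob (Suc j)} (snd v) * indicator {xs'} (fst v) :: real)" for v :: "'x list \<times> 'o list"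
  define g2 where "g2 v = (- (indicator {ovec M ob (Suc j)} (snd v) * indicator {xs'} (fst v)) :: real)" for v :: "'x list \<times> 'o list"
  have P1: "Pk M (Suc j) x g1 = ?b * Qm M (Suc j) x (indicator {hd xs'})"
  proof -
    have "Pk M (Suc j) x g1 = Qm M (Suc j) x (\<lambda>y'. ?b * indicator {hd xs'} y')"
      unfolding Pk_def g1_def by (rule coh_cong[OF Qx stN[OF j1]]) (use IH in \<open>auto simp: indicator_def\<close>)
    then show ?thesis using coh_pos_scale[OF Qx bpos] by simp
  qed
  have P2: "Pk M (Suc j) x g2 = - ?a * upper (Qm M (Suc j) x) (indicator {hd xs'})"
  proof -
    have "Pk M (Suc j) x g2 = Qm M (Suc j) x (\<lambda>y'. (- ?a) * indicator {hd xs'} y')"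
      unfolding Pk_def g2_def by (rule coh_cong[OF Qx stN[OF j1]]) (use IH in \<open>auto simp: indicator_def\<close>)
    then show ?thesis using coh_neg_scale[OF Qx, of "- ?a"] apos by simp
  qed
  have Qn: "0 \<le> Qm M (Suc j) x (indicator {hd xs'})" by (rule coh_nonneg[OF Qx stN[OF j1]]) (auto simp: indicator_def)
  have Qp: "0 < upper (Qm M (Suc j) x) (indicator {hd xs'})" using posQ'[OF j1, of x "hd xs'"] x hx' by simp
  have Sn: "0 \<le> Sm M j x (indicator {ob j})" by (rule coh_nonneg[OF Sx outN[OF jn]]) (auto simp: indicator_def)
  have Sp: "0 < upper (Sm M j x) (indicator {ob j})" using posS'[OF jn x obI[OF jn]] .
  have beq: "beta M ob j xs = Sm M j x (indicator {ob j}) * Qm M (Suc j) x (indicator {hd xs'}) * ?b"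
    unfolding beta_pf xs pf_Cons[OF j] using xs'ne by (simp add: hd_conv_nth)
  have aeq: "alpha M ob j xs = upper (Sm M j x) (indicator {ob j}) * upper (Qm M (Suc j) x) (indicator {hd xs'}) * ?a"
    unfolding alpha_pf xs pf_Cons[OF j] using xs'ne by (simp add: hd_conv_nth)
  have cellfacts: "fst w \<noteq> [] \<and> snd w \<noteq> [] \<and> hd (fst w) = y" if "w \<in> cellset j y" for w
    using that Omega_mem_step[OF j] unfolding cellset_def by auto
  have yst: "y \<in> st M j" using Suc.prems by simp
  show ?case
  proof (cases "x = y")
    case False
    have z1: "Efun M j y (\<lambda>w. indicator {ovec M ob j} (snd w) * indicator {xs} (fst w)) = 0"
      by (rule Efun_cell_zero[OF jn good_all[OF jn] yst]) (use cellfacts False xs in \<open>auto simp: ind_cons\<close>)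
    have z2: "Efun M j y (\<lambda>w. - (indicator {ovec M ob j} (snd w) * indicator {xs} (fst w))) = 0"
      by (rule Efun_cell_zero[OF jn good_all[OF jn] yst]) (use cellfacts False xs in \<open>auto simp: ind_cons\<close>)
    show ?thesis using z1 z2 False xs beq aeq Sn Qn bpos Sp Qp apos by simp
  next
    case True
    have Ec: "coherent_lp (cellset j y) (Efun M j y)" using l.Efun_coh[OF yst] .
    have c1: "Efun M j y (\<lambda>w. indicator {ovec M ob j} (snd w) * indicator {xs} (fst w))
       = Efun M j y (\<lambda>w. indicator {ob j} (hd (snd w)) * g1 (tl (fst w), tl (snd w)))"
      by (rule coh_cong[OF Ec cellset_ne[OF jn yst]])
        (use cellfacts True xs in \<open>auto simp: ind_cons ovec_Cons[OF jn(2)] g1_def\<close>)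
    have c2: "Efun M j y (\<lambda>w. - (indicator {ovec M ob j} (snd w) * indicator {xs} (fst w)))
       = Efun M j y (\<lambda>w. indicator {ob j} (hd (snd w)) * g2 (tl (fst w), tl (snd w)))"
      by (rule coh_cong[OF Ec cellset_ne[OF jn yst]])
        (use cellfacts True xs in \<open>auto simp: ind_cons ovec_Cons[OF jn(2)] g2_def\<close>)
    have e1: "Efun M j y (\<lambda>w. indicator {ovec M ob j} (snd w) * indicator {xs} (fst w)) = beta M ob j xs"
      unfolding c1 l.Efun_formula[OF yst obI[OF jn]] using True P1 beq bpos Qn
      by (simp add: sfac_def mult_ac)
    have e2: "Efun M j y (\<lambda>w. - (indicator {ovec M ob j} (snd w) * indicator {xs} (fst w))) = - alpha M ob j xs"
    proof -
      have "Pk M (Suc j) x g2 < 0" using P2 apos Qp by (simp add: mult_pos_pos)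
      then show ?thesis
        unfolding c2 l.Efun_formula[OF yst obI[OF jn]] using True P2 aeq by (simp add: sfac_def mult_ac)
    qed
    show ?thesis using e1 e2 True xs beq aeq Sn Qn bpos Sp Qp apos by (simp add: mult_pos_pos)
  qed
qed

end

lemma coh_add_upper:
  assumes "coherent_lp A Q"
  shows "Q (\<lambda>y. f y + g y) \<le> Q f + upper Q g"
proof -
  have "Q (\<lambda>y. (f y + g y) + - g y) \<ge> Q (\<lambda>y. f y + g y) + Q (\<lambda>y. - g y)" using cohD(3)[OF assms] .
  then show ?thesis unfolding upper_def by simp
qed

lemma tau_gen:
  assumes Q: "coherent_lp A Q" and A: "finite A" "A \<noteq> {}"
    and U: "upper Q (indicator {xh}) > 0" and b: "0 \<le> b" and a: "0 \<le> a"
    and T: "T = {t. 0 \<le> t \<and> Q (\<lambda>y. indicator {x} y - t * indicator {xh} y) \<le> 0}"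
  shows "Q (\<lambda>y. b * indicator {x} y - a * indicator {xh} y) \<le> 0 \<longleftrightarrow> b * Inf T \<le> a"
proof -
  let ?u = "upper Q (indicator {xh})"
  have Ux: "upper Q (indicator {x}) \<le> 1" by (rule coh_upper_le[OF Q A(2)]) (auto simp: indicator_def)
  have Uxh: "?u \<le> 1" by (rule coh_upper_le[OF Q A(2)]) (auto simp: indicator_def)
  have negs: "Q (\<lambda>y. - t * indicator {xh} y) = - t * ?u" if "0 \<le> t" for t
    using coh_neg_scale[OF Q, of "- t" "indicator {xh}"] that by simp
  have t0: "1 / ?u \<in> T"
  proof -
    have "Q (\<lambda>y. indicator {x} y + - (1 / ?u) * indicator {xh} y) \<le> Q (\<lambda>y. - (1 / ?u) * indicator {xh} y) + upper Q (indicator {x})"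
      using coh_add_upper[OF Q, of "\<lambda>y. - (1 / ?u) * indicator {xh} y" "indicator {x}"] by (simp add: add.commute)
    also have "\<dots> = - 1 + upper Q (indicator {x})" using negs[of "1 / ?u"] U by simp
    finally show ?thesis unfolding T using U Ux by simp
  qed
  have Tne: "T \<noteq> {}" using t0 by blast
  have Tbdd: "bdd_below T" unfolding T by (auto simp: bdd_below_def)
  define \<tau> where "\<tau> = Inf T"
  have tau0: "0 \<le> \<tau>" unfolding \<tau>_def using Tne by (intro cInf_greatest) (auto simp: T)
  have up: "t' \<in> T" if "t \<in> T" "t \<le> t'" for t t'
  proof -
    have "Q (\<lambda>y. indicator {x} y - t' * indicator {xh} y) \<le> Q (\<lambda>y. indicator {x} y - t * indicator {xh} y)"
      using that by (intro coh_mono[OF Q A(2)]) (auto simp: indicator_def)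
    then show ?thesis using that unfolding T by auto
  qed
  have tauT: "\<tau> \<in> T"
  proof (rule ccontr)
    assume nt: "\<tau> \<notin> T"
    define d where "d = Q (\<lambda>y. indicator {x} y - \<tau> * indicator {xh} y)"
    have d: "d > 0" using nt tau0 unfolding T d_def by auto
    obtain t where t: "t \<in> T" "t < \<tau> + d" using cInf_lessD[OF Tne, of "\<tau> + d"] d unfolding \<tau>_def by auto
    have tt: "\<tau> \<le> t" unfolding \<tau>_def using t(1) Tbdd by (rule cInf_lower)
    have "d \<le> Q (\<lambda>y. indicator {x} y - t * indicator {xh} y) + upper Q (\<lambda>y. (t - \<tau>) * indicator {xh} y)"
      using coh_add_upper[OF Q, of "\<lambda>y. indicator {x} y - t * indicator {xh} y" "\<lambda>y. (t - \<tau>) * indicator {xh} y"]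
      unfolding d_def by (simp add: algebra_simps)
    also have "upper Q (\<lambda>y. (t - \<tau>) * indicator {xh} y) = (t - \<tau>) * ?u" using upper_pos[OF Q, of "t - \<tau>"] tt by simp
    also have "Q (\<lambda>y. indicator {x} y - t * indicator {xh} y) \<le> 0" using t(1) unfolding T by simp
    finally have "d \<le> (t - \<tau>) * ?u" by simp
    also have "\<dots> \<le> (t - \<tau>)" using Uxh tt by (simp add: mult_left_le)
    finally show False using t(2) by simp
  qed
  show ?thesis
  proof (cases "b = 0")
    case True
    then show ?thesis using negs[OF a] U a by (simp add: mult_nonneg_nonneg)
  next
    case False
    then have bp: "b > 0" using b by simp
    have eq: "(\<lambda>y. b * indicator {x} y - a * indicator {xh} y) = (\<lambda>y. b * (indicator {x} y - (a / b) * indicator {xh} y))"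
      using bp by (auto simp: fun_eq_iff algebra_simps)
    have "Q (\<lambda>y. b * indicator {x} y - a * indicator {xh} y) \<le> 0 \<longleftrightarrow> Q (\<lambda>y. indicator {x} y - (a / b) * indicator {xh} y) \<le> 0"
      unfolding eq using coh_pos_scale[OF Q b] bp by (simp add: mult_le_0_iff)
    also have "\<dots> \<longleftrightarrow> a / b \<in> T" unfolding T using a bp by simp
    also have "\<dots> \<longleftrightarrow> \<tau> \<le> a / b"
    proof
      assume "a / b \<in> T" then show "\<tau> \<le> a / b" unfolding \<tau>_def using Tbdd by (rule cInf_lower)
    next
      assume "\<tau> \<le> a / b" then show "a / b \<in> T" using up[OF tauT] by blast
    qed
    also have "\<dots> \<longleftrightarrow> b * \<tau> \<le> a" using bp by (simp add: pos_le_divide_eq mult.commute)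
    finally show ?thesis unfolding \<tau>_def .
  qed
qed


context ctx
begin

definition gam :: "nat \<Rightarrow> 'x list \<Rightarrow> 'x list \<Rightarrow> 'x list \<times> 'o list \<Rightarrow> real" where
  "gam i x xh w = indicator {ovec M ob i} (snd w) * (indicator {x} (fst w) - indicator {xh} (fst w))"

lemma opt_gam: "opt M ob i z = {xh \<in> xseq M i. \<forall>x \<in> xseq M i. Pk M i z (gam i x xh) \<le> 0}"
  unfolding opt_def gam_def[abs_def] by simp

lemma cell_ind0: "w \<in> cellset j y \<Longrightarrow> hd l \<noteq> y \<Longrightarrow> j \<le> n \<Longrightarrow> (indicator {l} (fst w) :: real) = 0"
  unfolding cellset_def by (auto simp: indicator_def)

end

context lvl
begin

lemma gs_j: "good j" by (rule good_step)

lemma Efun_gam_neq: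
  assumes x: "x \<in> xseq M j" and xh: "xh \<in> xseq M j" and ne: "hd x \<noteq> hd xh" and y: "y \<in> st M j"
  shows "Efun M j y (gam j x xh) = beta M ob j x * indicator {hd x} y - alpha M ob j xh * indicator {hd xh} y"
proof -
  have jn: "1 \<le> j" "j \<le> n" using jj by auto
  have Ec: "coherent_lp (cellset j y) (Efun M j y)" using Efun_coh[OF y] .
  have cn: "cellset j y \<noteq> {}" using cellset_ne[OF jn y] .
  show ?thesis
  proof (cases "hd x = y")
    case True
    have "Efun M j y (gam j x xh) = Efun M j y (\<lambda>w. indicator {ovec M ob j} (snd w) * indicator {x} (fst w))"
      by (rule coh_cong[OF Ec cn]) (use cell_ind0[of _ j y xh] True ne jn in \<open>auto simp: gam_def\<close>)
    then show ?thesis using Eprod[OF jn x y] True ne by simp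
  next
    case F1: False
    show ?thesis
    proof (cases "hd xh = y")
      case True
      have "Efun M j y (gam j x xh) = Efun M j y (\<lambda>w. - (indicator {ovec M ob j} (snd w) * indicator {xh} (fst w)))"
        by (rule coh_cong[OF Ec cn]) (use cell_ind0[of _ j y x] True F1 jn in \<open>auto simp: gam_def\<close>)
      then show ?thesis using Eprod[OF jn xh y] True F1 by simp
    next
      case False
      have "Efun M j y (gam j x xh) = 0"
        by (rule Efun_cell_zero[OF jn gs_j y]) (use cell_ind0[of _ j y x] cell_ind0[of _ j y xh] False F1 jn in \<open>auto simp: gam_def\<close>)
      then show ?thesis using False F1 by simp
    qed
  qed
qed

lemma Efun_gam_eq:
  assumes y0: "y0 \<in> st M j" and y: "y \<in> st M j"
  shows "Efun M j y (gam j (y0 # x') (y0 # xh'))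
      = sfac (Sm M j y0) (ob j) (Pk M (Suc j) y0 (gam (Suc j) x' xh')) * indicator {y0} y"
proof -
  have jn: "1 \<le> j" "j \<le> n" using jj by auto
  have Ec: "coherent_lp (cellset j y) (Efun M j y)" using Efun_coh[OF y] .
  have cn: "cellset j y \<noteq> {}" using cellset_ne[OF jn y] .
  have cf: "fst w \<noteq> [] \<and> snd w \<noteq> [] \<and> hd (fst w) = y" if "w \<in> cellset j y" for w
    using that Omega_mem_step[OF jj(2)] unfolding cellset_def by auto
  show ?thesis
  proof (cases "y = y0")
    case True
    have "Efun M j y (gam j (y0 # x') (y0 # xh'))
        = Efun M j y (\<lambda>w. indicator {ob j} (hd (snd w)) * gam (Suc j) x' xh' (tl (fst w), tl (snd w)))"
      by (rule coh_cong[OF Ec cn]) (use cf True in \<open>auto simp: gam_def ind_cons ovec_Cons[OF jn(2)] algebra_simps\<close>)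
    then show ?thesis using Efun_formula[OF y obI[OF jn]] True by simp
  next
    case False
    have "Efun M j y (gam j (y0 # x') (y0 # xh')) = 0"
      by (rule Efun_cell_zero[OF jn gs_j y]) (use cell_ind0[of _ j y "y0 # x'"] cell_ind0[of _ j y "y0 # xh'"] False jn in \<open>auto simp: gam_def\<close>)
    then show ?thesis using False by simp
  qed
qed

end

lemma tau_ne:
  assumes Q: "coherent_lp A Q" and A: "finite A" "A \<noteq> {}"
    and U: "upper Q (indicator {xh}) > 0"
    and T: "T = {t. 0 \<le> t \<and> Q (\<lambda>y. indicator {x} y - t * indicator {xh} y) \<le> 0}"
  shows "0 \<le> Inf T"
proof -
  let ?u = "upper Q (indicator {xh})"
  have Ux: "upper Q (indicator {x}) \<le> 1" by (rule coh_upper_le[OF Q A(2)]) (auto simp: indicator_def)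
  have negs: "Q (\<lambda>y. - t * indicator {xh} y) = - t * ?u" if "0 \<le> t" for t
    using coh_neg_scale[OF Q, of "- t" "indicator {xh}"] that by simp
  have t0: "1 / ?u \<in> T"
  proof -
    have "Q (\<lambda>y. indicator {x} y + - (1 / ?u) * indicator {xh} y) \<le> Q (\<lambda>y. - (1 / ?u) * indicator {xh} y) + upper Q (indicator {x})"
      using coh_add_upper[OF Q, of "\<lambda>y. - (1 / ?u) * indicator {xh} y" "indicator {x}"] by (simp add: add.commute)
    also have "\<dots> = - 1 + upper Q (indicator {x})" using negs[of "1 / ?u"] U by simp
    finally show ?thesis unfolding T using U Ux by simp
  qed
  then have "T \<noteq> {}" by blast
  then show ?thesis by (rule cInf_greatest) (auto simp: T)
qed

lemma max_mult_le:
  fixes S :: "real set"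
  assumes "finite S" "S \<noteq> {}" "0 \<le> t"
  shows "Max S * t \<le> a \<longleftrightarrow> (\<forall>s\<in>S. s * t \<le> a)"
proof
  assume h: "Max S * t \<le> a"
  show "\<forall>s\<in>S. s * t \<le> a"
  proof
    fix s assume "s \<in> S"
    then have "s \<le> Max S" using assms(1) by simp
    then have "s * t \<le> Max S * t" using assms(3) by (rule mult_right_mono)
    then show "s * t \<le> a" using h by simp
  qed
next
  assume "\<forall>s\<in>S. s * t \<le> a"
  then show "Max S * t \<le> a" using Max_in[OF assms(1,2)] by blast
qed

locale lvlz = lvl M ob j for M :: "('x, 'o) ihmm" and ob :: "nat \<Rightarrow> 'o" and j :: nat +
  fixes z :: 'x
  assumes z: "z \<in> st M (j - 1)"
begin

lemma jn: "1 \<le> j" "j \<le> n" using jj by auto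

lemma Qz: "coherent_lp (st M j) (Qm M j z)" using cohQ'[OF jn z] .

lemma hd_st: "x \<in> xseq M j \<Longrightarrow> hd x \<in> st M j"
  using xseq_ne[of x j] jn unfolding xseq_def by (auto simp: hd_conv_nth)

lemma Pk_gam_neq:
  assumes x: "x \<in> xseq M j" and xh: "xh \<in> xseq M j" and ne: "hd x \<noteq> hd xh"
  shows "Pk M j z (gam j x xh) = Qm M j z (\<lambda>y. beta M ob j x * indicator {hd x} y - alpha M ob j xh * indicator {hd xh} y)"
  unfolding Pk_def[of M j z] by (rule coh_cong[OF Qz stN[OF jn]]) (simp add: Efun_gam_neq[OF x xh ne])

lemma Pk_gam_eq:
  assumes y0: "y0 \<in> st M j"
  shows "Pk M j z (gam j (y0 # x') (y0 # xh'))
     = Qm M j z (\<lambda>y. sfac (Sm M j y0) (ob j) (Pk M (Suc j) y0 (gam (Suc j) x' xh')) * indicator {y0} y)"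
  unfolding Pk_def[of M j z] by (rule coh_cong[OF Qz stN[OF jn]]) (simp add: Efun_gam_eq[OF y0])

lemma condB:
  assumes xh: "xh \<in> xseq M j"
  shows "(\<forall>x\<in>xseq M j. hd x \<noteq> hd xh \<longrightarrow> Pk M j z (gam j x xh) \<le> 0) \<longleftrightarrow> aopt1 M ob j z (hd xh) \<le> alpha M ob j xh"
proof -
  let ?y0 = "hd xh" and ?a = "alpha M ob j xh"
  have y0: "?y0 \<in> st M j" using hd_st[OF xh] .
  have apos: "0 < ?a" using Eprod[OF jn xh y0] by simp
  have U: "upper (Qm M j z) (indicator {?y0}) > 0" using posQ'[OF jn z y0] .
  have tau0: "0 \<le> tau M j z y ?y0" for y
    unfolding tau_def by (rule tau_ne[OF Qz stF[OF jn] stN[OF jn] U]) auto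
  have step1: "Pk M j z (gam j x xh) \<le> 0 \<longleftrightarrow> beta M ob j x * tau M j z (hd x) ?y0 \<le> ?a"
    if x: "x \<in> xseq M j" and ne: "hd x \<noteq> ?y0" for x
    unfolding Pk_gam_neq[OF x xh ne] tau_def
    by (rule tau_gen[OF Qz stF[OF jn] stN[OF jn] U]) (use Eprod[OF jn x hd_st[OF x]] apos in auto)
  define Bs where "Bs y = {beta M ob j zs | zs. zs \<in> xseq M j \<and> hd zs = y}" for y
  have Bfin: "finite (Bs y)" for y
  proof -
    have "Bs y \<subseteq> beta M ob j ` xseq M j" unfolding Bs_def by auto
    then show ?thesis using xseq_finite[OF jn(1)] finite_subset by blast
  qed
  have Bne: "Bs y \<noteq> {}" if "y \<in> st M j" for y
    using xseq_nonempty[OF jn that] unfolding Bs_def by fastforce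
  have bmaxe: "bmax M ob j y = Max (Bs y)" for y unfolding bmax_def Bs_def ..
  have "(\<forall>x\<in>xseq M j. hd x \<noteq> ?y0 \<longrightarrow> Pk M j z (gam j x xh) \<le> 0)
      \<longleftrightarrow> (\<forall>y\<in>st M j. y \<noteq> ?y0 \<longrightarrow> (\<forall>s\<in>Bs y. s * tau M j z y ?y0 \<le> ?a))"
  proof
    assume h: "\<forall>x\<in>xseq M j. hd x \<noteq> ?y0 \<longrightarrow> Pk M j z (gam j x xh) \<le> 0"
    show "\<forall>y\<in>st M j. y \<noteq> ?y0 \<longrightarrow> (\<forall>s\<in>Bs y. s * tau M j z y ?y0 \<le> ?a)"
    proof (intro ballI impI)
      fix y s assume "y \<in> st M j" "y \<noteq> ?y0" "s \<in> Bs y"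
      then obtain zs where "s = beta M ob j zs" "zs \<in> xseq M j" "hd zs = y" unfolding Bs_def by auto
      then show "s * tau M j z y ?y0 \<le> ?a" using h step1 \<open>y \<noteq> ?y0\<close> by auto
    qed
  next
    assume h: "\<forall>y\<in>st M j. y \<noteq> ?y0 \<longrightarrow> (\<forall>s\<in>Bs y. s * tau M j z y ?y0 \<le> ?a)"
    show "\<forall>x\<in>xseq M j. hd x \<noteq> ?y0 \<longrightarrow> Pk M j z (gam j x xh) \<le> 0"
    proof (intro ballI impI)
      fix x assume x: "x \<in> xseq M j" "hd x \<noteq> ?y0"
      have "beta M ob j x \<in> Bs (hd x)" unfolding Bs_def using x by auto
      then show "Pk M j z (gam j x xh) \<le> 0" using h hd_st[OF x(1)] x step1 by auto
    qed
  qed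
  also have "\<dots> \<longleftrightarrow> (\<forall>y\<in>st M j. y \<noteq> ?y0 \<longrightarrow> bmax M ob j y * tau M j z y ?y0 \<le> ?a)"
    using max_mult_le[OF Bfin Bne tau0] bmaxe by auto
  also have "\<dots> \<longleftrightarrow> aopt1 M ob j z ?y0 \<le> ?a"
  proof -
    have fin: "finite {bmax M ob j x * tau M j z x ?y0 | x. x \<in> st M j \<and> x \<noteq> ?y0}"
    proof -
      have "{bmax M ob j x * tau M j z x ?y0 | x. x \<in> st M j \<and> x \<noteq> ?y0} \<subseteq> (\<lambda>x. bmax M ob j x * tau M j z x ?y0) ` st M j"
        by auto
      then show ?thesis using stF[OF jn] finite_subset by blast
    qed
    show ?thesis unfolding aopt1_def using Max_le_iff[of "insert 0 _" ?a] fin apos by auto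
  qed
  finally show ?thesis .
qed

lemma condA:
  assumes y0: "y0 \<in> st M j" and xh': "xh' \<in> xseq M (Suc j)"
  shows "(\<forall>x'\<in>xseq M (Suc j). Pk M j z (gam j (y0 # x') (y0 # xh')) \<le> 0)
     \<longleftrightarrow> (y0 \<notin> Pos M ob j z \<or> xh' \<in> opt M ob (Suc j) y0)"
proof -
  let ?S = "Sm M j y0 (indicator {ob j})" and ?Q = "Qm M j z (indicator {y0})"
  have Sc: "coherent_lp (out M j) (Sm M j y0)" using cohS'[OF jn y0] .
  have Sn: "0 \<le> ?S" by (rule coh_nonneg[OF Sc outN[OF jn]]) (auto simp: indicator_def)
  have Su: "0 < upper (Sm M j y0) (indicator {ob j})" using posS'[OF jn y0 obI[OF jn]] .
  have Qn: "0 \<le> ?Q" by (rule coh_nonneg[OF Qz stN[OF jn]]) (auto simp: indicator_def)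
  have Qu: "0 < upper (Qm M j z) (indicator {y0})" using posQ'[OF jn z y0] .
  have Qc: "Qm M j z (\<lambda>y. c * indicator {y0} y) \<le> 0 \<longleftrightarrow> c \<le> 0 \<or> ?Q = 0" for c
  proof (cases "0 \<le> c")
    case True
    then show ?thesis using coh_pos_scale[OF Qz True, of "indicator {y0}"] Qn
      by (auto simp: mult_le_0_iff)
  next
    case False
    then show ?thesis using coh_neg_scale[OF Qz, of c "indicator {y0}"] Qu by (simp add: mult_le_0_iff)
  qed
  have Sc0: "sfac (Sm M j y0) (ob j) d \<le> 0 \<longleftrightarrow> d \<le> 0 \<or> ?S = 0" for d
    unfolding sfac_def using Sn Su by (auto simp: mult_le_0_iff)
  have "(\<forall>x'\<in>xseq M (Suc j). Pk M j z (gam j (y0 # x') (y0 # xh')) \<le> 0)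
     \<longleftrightarrow> (\<forall>x'\<in>xseq M (Suc j). Pk M (Suc j) y0 (gam (Suc j) x' xh') \<le> 0 \<or> ?S = 0 \<or> ?Q = 0)"
    unfolding Pk_gam_eq[OF y0] Qc Sc0 by blast
  also have "\<dots> \<longleftrightarrow> (?S = 0 \<or> ?Q = 0) \<or> xh' \<in> opt M ob (Suc j) y0"
    unfolding opt_gam using xh' by auto
  also have "\<dots> \<longleftrightarrow> (y0 \<notin> Pos M ob j z \<or> xh' \<in> opt M ob (Suc j) y0)"
    unfolding Pos_def using Sn Qn y0 by auto
  finally show ?thesis .
qed

lemma opt_char: "opt M ob j z = {xh \<in> Mog M ob j z. aopt1 M ob j z (hd xh) \<le> alpha M ob j xh}"
proof (intro set_eqI iffI)
  fix xh
  have mog: "xh \<in> Mog M ob j z \<longleftrightarrow> (\<exists>y0 xh'. xh = y0 # xh' \<and> y0 \<in> st M j \<and> xh' \<in> xseq M (Suc j) \<and>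
       (y0 \<notin> Pos M ob j z \<or> xh' \<in> opt M ob (Suc j) y0))"
    unfolding Mog_def by (auto simp: Pos_def opt_def)
  have split: "(\<forall>x\<in>xseq M j. Pk M j z (gam j x (y0 # xh')) \<le> 0) \<longleftrightarrow>
      (\<forall>x'\<in>xseq M (Suc j). Pk M j z (gam j (y0 # x') (y0 # xh')) \<le> 0) \<and>
      (\<forall>x\<in>xseq M j. hd x \<noteq> hd (y0 # xh') \<longrightarrow> Pk M j z (gam j x (y0 # xh')) \<le> 0)" if "y0 \<in> st M j" for y0 xh'
  proof -
    have "x \<in> xseq M j \<longleftrightarrow> (\<exists>y x'. x = y # x' \<and> y \<in> st M j \<and> x' \<in> xseq M (Suc j))" for x
      using xseq_Cons[OF jj(2)] xseq_ne[of x j] jn by (cases x) auto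
    then show ?thesis using that xseq_Cons[OF jj(2)] by (auto; metis list.sel(1))
  qed
  {
    assume "xh \<in> opt M ob j z"
    then have xh: "xh \<in> xseq M j" and all: "\<forall>x\<in>xseq M j. Pk M j z (gam j x xh) \<le> 0" unfolding opt_gam by auto
    obtain y0 xh' where e: "xh = y0 # xh'" using xseq_ne[OF xh jn(2)] by (cases xh) auto
    have y0: "y0 \<in> st M j" and xh': "xh' \<in> xseq M (Suc j)" using xh e xseq_Cons[OF jj(2)] by auto
    have "xh \<in> Mog M ob j z" unfolding mog using condA[OF y0 xh'] split[OF y0] all e y0 xh' by auto
    moreover have "aopt1 M ob j z (hd xh) \<le> alpha M ob j xh" using condB[OF xh] all by auto
    ultimately show "xh \<in> {xh \<in> Mog M ob j z. aopt1 M ob j z (hd xh) \<le> alpha M ob j xh}" by simp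
  next
    assume h: "xh \<in> {xh \<in> Mog M ob j z. aopt1 M ob j z (hd xh) \<le> alpha M ob j xh}"
    have hm: "xh \<in> Mog M ob j z" using h by simp
    then obtain y0 xh' where e: "xh = y0 # xh'" and y0: "y0 \<in> st M j" and xh': "xh' \<in> xseq M (Suc j)"
      and c: "y0 \<notin> Pos M ob j z \<or> xh' \<in> opt M ob (Suc j) y0" unfolding mog by blast
    have xh: "xh \<in> xseq M j" using e y0 xh' xseq_Cons[OF jj(2)] by auto
    have "\<forall>x\<in>xseq M j. Pk M j z (gam j x xh) \<le> 0"
      unfolding e split[OF y0] using condA[OF y0 xh'] c condB[OF xh] h e by auto
    then show "xh \<in> opt M ob j z" unfolding opt_gam using xh by auto
  }
qed

end

context lvlz
begin

definition D :: "nat \<Rightarrow> 'x list \<Rightarrow> real" where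
  "D l p = (\<Prod>s\<in>{Suc j..j + l}. aU (s - 1) (p ! (s - 1 - j)) * bU s (p ! (s - 1 - j)) (p ! (s - j)))"

lemma xseq_nth: "p \<in> xseq M j \<Longrightarrow> l \<le> n - j \<Longrightarrow> p ! l \<in> st M (j + l)"
proof -
  assume p: "p \<in> xseq M j" and l: "l \<le> n - j"
  have "length p = Suc n - j" using xseq_len[OF p] .
  then have "l < length p" using l jn by linarith
  then show ?thesis using p unfolding xseq_def by blast
qed

lemma D_pos:
  assumes p: "p \<in> xseq M j" and l: "l \<le> n - j"
  shows "0 < D l p"
  unfolding D_def
proof (rule prod_pos)
  fix s assume s: "s \<in> {Suc j..j + l}"
  have s1: "1 \<le> s" "s \<le> n" using s l jn by auto
  have a: "p ! (s - 1 - j) \<in> st M (s - 1)" using xseq_nth[OF p, of "s - 1 - j"] s l by auto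
  have b: "p ! (s - j) \<in> st M s" using xseq_nth[OF p, of "s - j"] s l by auto
  have s2: "1 \<le> s - 1" "s - 1 \<le> n" using s jn l by auto
  show "0 < aU (s - 1) (p ! (s - 1 - j)) * bU s (p ! (s - 1 - j)) (p ! (s - j))"
    using posS'[OF s2 a obI[OF s2]] posQ'[OF s1 a b] by simp
qed

lemma alpha_D:
  assumes p: "p \<in> xseq M j" and l: "l \<le> n - j"
  shows "alpha M ob j p = D l p * alpha M ob (j + l) (drop l p)"
  using l
proof (induction l)
  case 0
  then show ?case unfolding D_def by simp
next
  case (Suc l)
  have lp: "Suc l < length p" using xseq_len[OF p] Suc.prems jn by auto
  have dr: "drop l p = p ! l # drop (Suc l) p" using lp by (simp add: Cons_nth_drop_Suc)
  have dr0: "drop (Suc l) p ! 0 = p ! Suc l" using lp by simp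
  have jl: "j + l < n" using Suc.prems jn by auto
  have "alpha M ob (j + l) (drop l p) = aU (j + l) (p ! l) * bU (Suc (j + l)) (p ! l) (p ! Suc l) * alpha M ob (Suc (j + l)) (drop (Suc l) p)"
    unfolding alpha_pf dr pf_Cons[OF jl] dr0 ..
  moreover have "D (Suc l) p = D l p * (aU (j + l) (p ! l) * bU (Suc (j + l)) (p ! l) (p ! Suc l))"
  proof -
    have "D (Suc l) p = D l p * (aU (Suc (j + l) - 1) (p ! (Suc (j + l) - 1 - j)) * bU (Suc (j + l)) (p ! (Suc (j + l) - 1 - j)) (p ! (Suc (j + l) - j)))"
      unfolding D_def by simp
    moreover have "Suc (j + l) - 1 - j = l" "Suc (j + l) - j = Suc l" "Suc (j + l) - 1 = j + l" by auto
    ultimately show ?thesis by simp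
  qed
  ultimately show ?case using Suc.IH Suc.prems by (simp add: mult_ac)
qed

lemma aopt_take:
  assumes p: "p \<in> xseq M j" and l: "l \<le> n - j"
  shows "aopt M ob j z (take (Suc l) p) = aopt1 M ob j z (hd p) / D l p"
proof -
  have lp: "Suc l \<le> length p" using xseq_len[OF p] l jn by auto
  have pne: "p \<noteq> []" using lp by auto
  have len: "length (take (Suc l) p) = Suc l" using lp by simp
  have hd: "hd (take (Suc l) p) = hd p" using pne by (cases p) auto
  have iv: "{Suc j..<j + Suc l} = {Suc j..j + l}" by auto
  have "(\<Prod>s\<in>{Suc j..<j + length (take (Suc l) p)}.
        upper (Sm M (s - 1) (take (Suc l) p ! (s - 1 - j))) (indicator {ob (s - 1)}) *
        upper (Qm M s (take (Suc l) p ! (s - 1 - j))) (indicator {take (Suc l) p ! (s - j)})) = D l p"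
    unfolding len iv D_def by (rule prod.cong) auto
  then show ?thesis unfolding aopt_def hd by simp
qed

lemma amax_ge:
  assumes p: "p \<in> xseq M j" and l: "l \<le> n - j"
  shows "alpha M ob (j + l) (drop l p) \<le> amax M ob (j + l) (p ! l)"
proof -
  have lp: "l < length p" using xseq_len[OF p] l jn by auto
  have dx: "drop l p \<in> xseq M (j + l)"
  proof -
    have "length (drop l p) = Suc n - (j + l)" using xseq_len[OF p] lp by simp
    moreover have "\<forall>i<length (drop l p). drop l p ! i \<in> st M (j + l + i)"
      using p unfolding xseq_def by (auto simp: add.assoc)
    ultimately show ?thesis unfolding xseq_def by simp
  qed
  have hd: "hd (drop l p) = p ! l" using lp by (simp add: hd_drop_conv_nth)
  have fin: "finite {alpha M ob (j + l) zs | zs. zs \<in> xseq M (j + l) \<and> hd zs = p ! l}"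
  proof -
    have "{alpha M ob (j + l) zs | zs. zs \<in> xseq M (j + l) \<and> hd zs = p ! l} \<subseteq> alpha M ob (j + l) ` xseq M (j + l)" by auto
    then show ?thesis using xseq_finite[of "j + l"] jn finite_subset by auto
  qed
  show ?thesis unfolding amax_def using dx hd fin by (intro Max_ge) auto
qed

lemma amax_last:
  assumes p: "p \<in> xseq M j"
  shows "amax M ob n (p ! (n - j)) = alpha M ob n (drop (n - j) p)"
proof -
  have lp: "length p = Suc (n - j)" using xseq_len[OF p] jn by auto
  have dr: "drop (n - j) p = [p ! (n - j)]"
  proof -
    have "n - j < length p" using lp by simp
    then have "drop (n - j) p = p ! (n - j) # drop (Suc (n - j)) p" by (rule Cons_nth_drop_Suc[symmetric])
    moreover have "drop (Suc (n - j)) p = []" using lp by simp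
    ultimately show ?thesis by simp
  qed
  have x: "p ! (n - j) \<in> st M n" using xseq_nth[OF p, of "n - j"] jn by simp
  have "{alpha M ob n zs | zs. zs \<in> xseq M n \<and> hd zs = p ! (n - j)} = {alpha M ob n [p ! (n - j)]}"
    using x xseq_last by auto
  then show ?thesis unfolding amax_def dr by simp
qed

lemma cond_equiv:
  assumes p: "p \<in> xseq M j"
  shows "(\<forall>l\<le>n - j. aopt M ob j z (take (Suc l) p) \<le> amax M ob (j + l) (p ! l)) \<longleftrightarrow> aopt1 M ob j z (hd p) \<le> alpha M ob j p"
proof
  assume h: "\<forall>l\<le>n - j. aopt M ob j z (take (Suc l) p) \<le> amax M ob (j + l) (p ! l)"
  have "aopt1 M ob j z (hd p) / D (n - j) p \<le> alpha M ob n (drop (n - j) p)"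
    using h[rule_format, of "n - j"] aopt_take[OF p, of "n - j"] amax_last[OF p] jn by simp
  then have "aopt1 M ob j z (hd p) \<le> D (n - j) p * alpha M ob n (drop (n - j) p)"
    using D_pos[OF p, of "n - j"] by (simp add: divide_le_eq mult.commute)
  then show "aopt1 M ob j z (hd p) \<le> alpha M ob j p" using alpha_D[OF p, of "n - j"] jn by simp
next
  assume h: "aopt1 M ob j z (hd p) \<le> alpha M ob j p"
  show "\<forall>l\<le>n - j. aopt M ob j z (take (Suc l) p) \<le> amax M ob (j + l) (p ! l)"
  proof (intro allI impI)
    fix l assume l: "l \<le> n - j"
    have "D l p * alpha M ob (j + l) (drop l p) \<le> D l p * amax M ob (j + l) (p ! l)"
      using amax_ge[OF p l] D_pos[OF p l] by (simp add: mult_left_mono)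
    then have "aopt1 M ob j z (hd p) \<le> D l p * amax M ob (j + l) (p ! l)"
      using h alpha_D[OF p l] by simp
    then show "aopt M ob j z (take (Suc l) p) \<le> amax M ob (j + l) (p ! l)"
      unfolding aopt_take[OF p l] using D_pos[OF p l] by (simp add: divide_le_eq mult.commute)
  qed
qed

lemma Mog_xseq: "Mog M ob j z \<subseteq> xseq M j"
  unfolding Mog_def opt_def Pos_def using xseq_Cons[OF jj(2)] by auto

lemma kept_char:
  "i \<le> n - j \<Longrightarrow> kept M ob j z i = {p. length p = Suc i \<and> (\<forall>l<Suc i. p ! l \<in> st M (j + l)) \<and>
      (0 < i \<longrightarrow> (\<exists>m\<in>Mog M ob j z. take (Suc i) m = p)) \<and>
      (\<forall>l<Suc i. aopt M ob j z (take (Suc l) p) \<le> amax M ob (j + l) (p ! l))}"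
proof (induction i)
  case 0
  show ?case
  proof (intro set_eqI iffI)
    fix p assume "p \<in> kept M ob j z 0"
    then show "p \<in> {p. length p = Suc 0 \<and> (\<forall>l<Suc 0. p ! l \<in> st M (j + l)) \<and>
      (0 < (0::nat) \<longrightarrow> (\<exists>m\<in>Mog M ob j z. take (Suc 0) m = p)) \<and>
      (\<forall>l<Suc 0. aopt M ob j z (take (Suc l) p) \<le> amax M ob (j + l) (p ! l))}" by auto
  next
    fix p assume "p \<in> {p. length p = Suc 0 \<and> (\<forall>l<Suc 0. p ! l \<in> st M (j + l)) \<and>
      (0 < (0::nat) \<longrightarrow> (\<exists>m\<in>Mog M ob j z. take (Suc 0) m = p)) \<and>
      (\<forall>l<Suc 0. aopt M ob j z (take (Suc l) p) \<le> amax M ob (j + l) (p ! l))}"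
    then show "p \<in> kept M ob j z 0" by (cases p) auto
  qed
next
  case (Suc i)
  have IH: "kept M ob j z i = {p. length p = Suc i \<and> (\<forall>l<Suc i. p ! l \<in> st M (j + l)) \<and>
      (0 < i \<longrightarrow> (\<exists>m\<in>Mog M ob j z. take (Suc i) m = p)) \<and>
      (\<forall>l<Suc i. aopt M ob j z (take (Suc l) p) \<le> amax M ob (j + l) (p ! l))}" using Suc by simp
  show ?case
  proof (intro set_eqI iffI)
    fix q assume "q \<in> kept M ob j z (Suc i)"
    then obtain p x where q: "q = p @ [x]" and pk: "p \<in> kept M ob j z i" and x: "x \<in> st M (j + Suc i)"
      and m: "\<exists>m\<in>Mog M ob j z. take (length (p @ [x])) m = p @ [x]"
      and c: "aopt M ob j z (p @ [x]) \<le> amax M ob (j + Suc i) x" by auto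
    have lp: "length p = Suc i" and pst: "\<forall>l<Suc i. p ! l \<in> st M (j + l)"
      and pc: "\<forall>l<Suc i. aopt M ob j z (take (Suc l) p) \<le> amax M ob (j + l) (p ! l)"
      using pk IH by auto
    have A: "\<forall>l<Suc (Suc i). q ! l \<in> st M (j + l)"
      using pst x lp q by (auto simp: nth_append less_Suc_eq)
    have B: "\<forall>l<Suc (Suc i). aopt M ob j z (take (Suc l) q) \<le> amax M ob (j + l) (q ! l)"
      using pc c lp q by (auto simp: nth_append less_Suc_eq)
    show "q \<in> {p. length p = Suc (Suc i) \<and> (\<forall>l<Suc (Suc i). p ! l \<in> st M (j + l)) \<and>
      (0 < Suc i \<longrightarrow> (\<exists>m\<in>Mog M ob j z. take (Suc (Suc i)) m = p)) \<and>
      (\<forall>l<Suc (Suc i). aopt M ob j z (take (Suc l) p) \<le> amax M ob (j + l) (p ! l))}"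
      using A B m lp q by auto
  next
    fix q assume "q \<in> {p. length p = Suc (Suc i) \<and> (\<forall>l<Suc (Suc i). p ! l \<in> st M (j + l)) \<and>
      (0 < Suc i \<longrightarrow> (\<exists>m\<in>Mog M ob j z. take (Suc (Suc i)) m = p)) \<and>
      (\<forall>l<Suc (Suc i). aopt M ob j z (take (Suc l) p) \<le> amax M ob (j + l) (p ! l))}"
    then have lq: "length q = Suc (Suc i)" and qst: "\<forall>l<Suc (Suc i). q ! l \<in> st M (j + l)"
      and m: "\<exists>m\<in>Mog M ob j z. take (Suc (Suc i)) m = q"
      and qc: "\<forall>l<Suc (Suc i). aopt M ob j z (take (Suc l) q) \<le> amax M ob (j + l) (q ! l)" by auto
    define p where "p = butlast q"
    define x where "x = last q"
    have "q \<noteq> []" using lq by auto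
    then have q: "q = p @ [x]" unfolding p_def x_def by simp
    have lp: "length p = Suc i" using lq unfolding p_def by simp
    have xq: "x = q ! Suc i" using q lp by (simp add: nth_append)
    have pk: "p \<in> kept M ob j z i"
    proof -
      have "\<forall>l<Suc i. p ! l \<in> st M (j + l)"
      proof (intro allI impI)
        fix l assume l: "l < Suc i"
        then have "q ! l = p ! l" using q lp by (simp add: nth_append)
        moreover have "l < Suc (Suc i)" using l by simp
        then have "q ! l \<in> st M (j + l)" using qst by blast
        ultimately show "p ! l \<in> st M (j + l)" by simp
      qed
      moreover have "0 < i \<longrightarrow> (\<exists>m\<in>Mog M ob j z. take (Suc i) m = p)"
      proof
        obtain m where "m \<in> Mog M ob j z" "take (Suc (Suc i)) m = q" using m by blast
        then have "take (Suc i) (take (Suc (Suc i)) m) = take (Suc i) q" by simp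
        then have "take (Suc i) m = p" using q lp by (simp add: min_def)
        then show "\<exists>m\<in>Mog M ob j z. take (Suc i) m = p" using \<open>m \<in> Mog M ob j z\<close> by blast
      qed
      moreover have "\<forall>l<Suc i. aopt M ob j z (take (Suc l) p) \<le> amax M ob (j + l) (p ! l)"
      proof (intro allI impI)
        fix l assume l: "l < Suc i"
        have "take (Suc l) q = take (Suc l) p" "q ! l = p ! l" using q lp l by (auto simp: nth_append)
        moreover have "l < Suc (Suc i)" using l by simp
        then have "aopt M ob j z (take (Suc l) q) \<le> amax M ob (j + l) (q ! l)" using qc by blast
        ultimately show "aopt M ob j z (take (Suc l) p) \<le> amax M ob (j + l) (p ! l)" by simp
      qed
      ultimately show ?thesis using IH lp by simp
    qed
    have x: "x \<in> st M (j + Suc i)" using qst[rule_format, of "Suc i"] xq by simp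
    have c0: "aopt M ob j z (take (Suc (Suc i)) q) \<le> amax M ob (j + Suc i) (q ! Suc i)" using qc by blast
    have tq: "take (Suc (Suc i)) q = q" using lq by simp
    have c1: "aopt M ob j z q \<le> amax M ob (j + Suc i) x" using c0 tq xq by simp
    have c: "aopt M ob j z (p @ [x]) \<le> amax M ob (j + Suc i) x" using c1 unfolding q .
    have mm: "\<exists>m\<in>Mog M ob j z. take (length (p @ [x])) m = p @ [x]" using m q lp by simp
    show "q \<in> kept M ob j z (Suc i)" unfolding kept.simps using pk x c mm q by blast
  qed
qed

lemma tree_char: "tree_out M ob j z = {p \<in> Mog M ob j z. aopt1 M ob j z (hd p) \<le> alpha M ob j p}"
proof -
  have pos: "0 < n - j" using jj by simp
  have "tree_out M ob j z = {p. length p = Suc (n - j) \<and> (\<forall>l<Suc (n - j). p ! l \<in> st M (j + l)) \<and>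
      (\<exists>m\<in>Mog M ob j z. take (Suc (n - j)) m = p) \<and>
      (\<forall>l<Suc (n - j). aopt M ob j z (take (Suc l) p) \<le> amax M ob (j + l) (p ! l))}"
    unfolding tree_out_def using kept_char[of "n - j"] pos by simp
  also have "\<dots> = {p \<in> Mog M ob j z. \<forall>l\<le>n - j. aopt M ob j z (take (Suc l) p) \<le> amax M ob (j + l) (p ! l)}"
  proof (intro set_eqI iffI)
    fix p assume "p \<in> {p. length p = Suc (n - j) \<and> (\<forall>l<Suc (n - j). p ! l \<in> st M (j + l)) \<and>
      (\<exists>m\<in>Mog M ob j z. take (Suc (n - j)) m = p) \<and>
      (\<forall>l<Suc (n - j). aopt M ob j z (take (Suc l) p) \<le> amax M ob (j + l) (p ! l))}"
    then obtain m where m: "m \<in> Mog M ob j z" "take (Suc (n - j)) m = p"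
      and c: "\<forall>l<Suc (n - j). aopt M ob j z (take (Suc l) p) \<le> amax M ob (j + l) (p ! l)" by auto
    have "length m = Suc (n - j)" using Mog_xseq m(1) xseq_len jn by fastforce
    then have "m = p" using m(2) by simp
    then show "p \<in> {p \<in> Mog M ob j z. \<forall>l\<le>n - j. aopt M ob j z (take (Suc l) p) \<le> amax M ob (j + l) (p ! l)}"
      using m(1) c by (auto simp: less_Suc_eq_le)
  next
    fix p assume h: "p \<in> {p \<in> Mog M ob j z. \<forall>l\<le>n - j. aopt M ob j z (take (Suc l) p) \<le> amax M ob (j + l) (p ! l)}"
    then have pm: "p \<in> Mog M ob j z" by simp
    then have px: "p \<in> xseq M j" using Mog_xseq by blast
    have lp: "length p = Suc (n - j)" using xseq_len[OF px] jn by simp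
    have "\<forall>l<Suc (n - j). p ! l \<in> st M (j + l)" using px lp unfolding xseq_def by auto
    then show "p \<in> {p. length p = Suc (n - j) \<and> (\<forall>l<Suc (n - j). p ! l \<in> st M (j + l)) \<and>
      (\<exists>m\<in>Mog M ob j z. take (Suc (n - j)) m = p) \<and>
      (\<forall>l<Suc (n - j). aopt M ob j z (take (Suc l) p) \<le> amax M ob (j + l) (p ! l))}"
    proof -
      have "take (Suc (n - j)) p = p" using lp by simp
      then have "\<exists>m\<in>Mog M ob j z. take (Suc (n - j)) m = p" using pm by blast
      then show ?thesis using h pm lp \<open>\<forall>l<Suc (n - j). p ! l \<in> st M (j + l)\<close> by (auto simp: less_Suc_eq_le)
    qed
  qed
  also have "\<dots> = {p \<in> Mog M ob j z. aopt1 M ob j z (hd p) \<le> alpha M ob j p}"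
    using cond_equiv Mog_xseq by blast
  finally show ?thesis .
qed

lemma main: "tree_out M ob j z = opt M ob j z"
  unfolding tree_char opt_char ..

end

theorem theorem3:
  fixes M :: "('x, 'o) ihmm" and ob :: "nat \<Rightarrow> 'o" and x0 :: 'x
    and k :: nat and z :: 'x
  assumes n_pos: "len M \<ge> 1"
    and X0: "st M 0 = {x0}"
    and finX: "\<forall>i\<in>{1..len M}. finite (st M i) \<and> st M i \<noteq> {}"
    and finO: "\<forall>i\<in>{1..len M}. finite (out M i) \<and> out M i \<noteq> {}"
    and obs: "\<forall>i\<in>{1..len M}. ob i \<in> out M i"
    and cohQ: "\<forall>i\<in>{1..len M}. \<forall>y\<in>st M (i - 1). coherent_lp (st M i) (Qm M i y)"
    and cohS: "\<forall>i\<in>{1..len M}. \<forall>y\<in>st M i. coherent_lp (out M i) (Sm M i y)"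
    and posQ: "\<forall>i\<in>{1..len M}. \<forall>y\<in>st M (i - 1). \<forall>x\<in>st M i.
                 upper (Qm M i y) (indicator {x}) > 0"
    and posS: "\<forall>i\<in>{1..len M}. \<forall>y\<in>st M i. \<forall>u\<in>out M i.
                 upper (Sm M i y) (indicator {u}) > 0"
    and k: "1 \<le> k" "k < len M"
    and z: "z \<in> st M (k - 1)"
  shows "tree_out M ob k z = opt M ob k z"
proof -
  interpret c: ctx M ob
    using n_pos finX finO obs cohQ cohS posQ posS by unfold_locales
  have gs: "c.good (Suc k)" using c.good_all[of "Suc k"] k by simp
  interpret l: lvlz M ob k z
    using n_pos finX finO obs cohQ cohS posQ posS k gs z by unfold_locales
  show ?thesis by (rule l.main)
qed

end
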